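(* Let $\mathcal T$ be a set of $k>1$ binary trees over the same label set $L$, and let $n=|L\setminus\{\rho\}|$. Then $$\min_{\sigma}\ \hat d_\sigma(\mathcal T)\;=\;m(\mathcal T)\;=\;|\mathrm{MAAF}(\mathcal T)|-1,$$ where the minimum ranges over all leaf orderings $\sigma:L\setminus\{\rho\}\to\{0,\dots,n-1\}$. That is, if $\sigma^*$ is a leaf ordering minimizing $\hat d_\sigma(\mathcal T)$, then $\hat d_{\sigma^*}(\mathcal T)$ equals the size of a maximum acyclic agreement forest of $\mathcal T$ minus one.
   Context: Trees. Fix a finite label set $L$ containing a distinguished label $\rho$, and let $n=|L\setminus\{\rho\}|$. A (planted, binary phylogenetic) tree $T$ over $L$ is a rooted tree whose top vertex is labeled $\rho$ and has exactly one child $r(T)$ (the root), in which every other non-leaf vertex has exactly two children, and whose leaves are bijectively labeled by $L\setminus\{\rho\}$; vertices are identified with their labels. For a vertex $v$, $T_v$ is the subtree rooted at $v$ and $cl(v)=L(T_v)$ is its cluster ($L(\cdot)$ denotes the set of labels of a tree). For $S\subseteq L$, $T(S)$ is the smallest subtree of $T$ containing all vertices labeled by $S$, and $T|_S$ is obtained from $T(S)$ by suppressing all unlabeled vertices with fewer than two children. OLA vectors. A leaf ordering is a bijection $\sigma:L\setminus\{\rho\}\to\{0,\dots,n-1\}$; write $l_i=\sigma^{-1}(i)$. For a binary tree $T$ whose non-$\rho$ labels lie in $L\setminus\{\rho\}$ and a vertex $v\ne\rho$, let $\mu(v)=\min\{\sigma(l): l\in L(T_v)\setminus\{\rho\}\}$;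 each leaf $l$ gets index $\sigma(l)$, and each internal vertex $v$ (not a leaf, not $\rho$) with children $v_1,v_2$ gets index $\sigma(v):=-\max\{\mu(v_1),\mu(v_2)\}$. Let $T^i:=T|_{\{\rho,l_0,\dots,l_i\}}$. For $1\le i\le n-1$ let $v_i$ be the sibling of $l_i$ in $T^i$, and define $OLA(T,\sigma)_i:=\sigma(v_i)$ (index computed in $T^i$). This gives $OLA(T,\sigma)\in\mathbb Z^{n-1}$. Distances. For a finite set $\mathcal T$ of at least two binary trees over $L$ and a leaf ordering $\sigma$, the Hamming OLA distance $d_\sigma(\mathcal T)$ is the number of indices $i\in\{1,\dots,n-1\}$ at which not all vectors $OLA(T,\sigma)$, $T\in\mathcal T$, agree. The set $M\subseteq\{1,\dots,n-1\}$ of mismatched indices is built by processing $i=1,\dots,n-1$ in increasing order: $i$ is put in $M$ iff either there are $T,T'\in\mathcal T$ with $OLA(T,\sigma)_i\ne OLA(T',\sigma)_i$, or all $OLA(T,\sigma)_i$ ($T\in\mathcal T$) equal a common value $-j$ with $j$ already in $M$. The corrected OLA distance is $\hat d_\sigma(\mathcal T):=|M|$. Agreement forests. A forest $\mathcal F=\{C_1,\dots,C_k\}$ of trees with pairwise disjoint label sets agrees with a tree $T$ over $L$ if (i) for each $C_i$, $T|_{L(C_i)}$ is isomorphic to $C_i$ (label-preserving); (ii) the subtrees $T(L(C_i))$ are pairwise vertex-disjoint; (iii) $\bigcup_i L(C_i)=L$. $\mathcal F$ is an agreement forest for a set $\mathcal T$ of trees if it agrees with every $T\in\mathcal T$. The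 inheritance graph $G(\mathcal T,\mathcal F)$ is the directed graph on vertex set $\mathcal F$ with an edge $(C_i,C_j)$, $i\neq j$, iff some $T\in\mathcal T$ contains a directed (root-to-leaf direction) path from the root of $T(L(C_i))$ to the root of $T(L(C_j))$. $\mathcal F$ is an acyclic agreement forest (AAF) if additionally $G(\mathcal T,\mathcal F)$ has no directed cycle; a maximum acyclic agreement forest $\mathrm{MAAF}(\mathcal T)$ is an AAF with the minimum possible number of components. The reticulation number is $m(\mathcal T):=|\mathrm{MAAF}(\mathcal T)|-1$. *)

theory Defs
  imports Main
begin

text \<open>A rooted binary tree with labelled leaves and unlabelled internal vertices.
Children are unordered: isomorphism (biso) allows swapping them.\<close>

datatype 'a btree = Leaf 'a | Node "'a btree" "'a btree"

fun leaves :: "'a btree \<Rightarrow> 'a list" where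
  "leaves (Leaf a) = [a]"
| "leaves (Node l r) = leaves l @ leaves r"

text \<open>All subtrees (= vertices, since leaves are distinct in a tree).\<close>
fun subtrees :: "'a btree \<Rightarrow> 'a btree set" where
  "subtrees (Leaf a) = {Leaf a}"
| "subtrees (Node l r) = insert (Node l r) (subtrees l \<union> subtrees r)"

fun biso :: "'a btree \<Rightarrow> 'a btree \<Rightarrow> bool" where
  "biso (Leaf a) (Leaf b) = (a = b)"
| "biso (Node l r) (Node l' r') = ((biso l l' \<and> biso r r') \<or> (biso l r' \<and> biso r l'))"
| "biso _ _ = False"

fun restrict :: "'a set \<Rightarrow> 'a btree \<Rightarrow> 'a btree option" where
  "restrict S (Leaf a) = (if a \<in> S then Some (Leaf a) else None)"
| "restrict S (Node l r) =
     (case restrict S l of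
        None \<Rightarrow> restrict S r
      | Some x \<Rightarrow> (case restrict S r of None \<Rightarrow> Some x | Some y \<Rightarrow> Some (Node x y)))"

text \<open>A planted binary phylogenetic tree T over L is represented by the binary tree t = T_{r(T)}
rooted at r(T); the top vertex labelled \<rho> (whose only child is r(T)) is implicit.\<close>

definition is_tree :: "'a \<Rightarrow> 'a set \<Rightarrow> 'a btree \<Rightarrow> bool" where
  "is_tree \<rho> L t \<longleftrightarrow> distinct (leaves t) \<and> set (leaves t) = L - {\<rho>}"

text \<open>Vertices of the planted tree: None is the top vertex \<rho>, Some s the root of subtree s.\<close>
definition pverts :: "'a btree \<Rightarrow> 'a btree option set" where
  "pverts t = insert None (Some ` subtrees t)"

fun panc :: "'a btree option \<Rightarrow> 'a btree option \<Rightarrow> bool" where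
  "panc None v = True"
| "panc (Some a) None = False"
| "panc (Some a) (Some b) = (b \<in> subtrees a)"

definition lvert :: "'a \<Rightarrow> 'a \<Rightarrow> 'a btree option" where
  "lvert \<rho> x = (if x = \<rho> then None else Some (Leaf x))"

text \<open>Vertex set of T(S), the smallest subtree containing the vertices labelled by S:
the vertices lying below the lowest common ancestor of S and above some vertex of S.\<close>
definition span :: "'a \<Rightarrow> 'a btree \<Rightarrow> 'a set \<Rightarrow> 'a btree option set" where
  "span \<rho> t S = {v \<in> pverts t. (\<exists>x\<in>S. panc v (lvert \<rho> x)) \<and>
       (\<forall>w\<in>pverts t. (\<forall>x\<in>S. panc w (lvert \<rho> x)) \<longrightarrow> panc w v)}"

definition sroot :: "'a \<Rightarrow> 'a btree \<Rightarrow> 'a set \<Rightarrow> 'a btree option" where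
  "sroot \<rho> t S = (THE v. v \<in> pverts t \<and> (\<forall>x\<in>S. panc v (lvert \<rho> x)) \<and>
       (\<forall>w\<in>pverts t. (\<forall>x\<in>S. panc w (lvert \<rho> x)) \<longrightarrow> panc w v))"

text \<open>A component is either an ordinary rooted binary tree (not containing \<rho>), or a tree
whose top vertex is \<rho> with at most one child subtree (Planted None is the single vertex \<rho>).\<close>
datatype 'a ftree = Unplanted "'a btree" | Planted "'a btree option"

fun flabels :: "'a \<Rightarrow> 'a ftree \<Rightarrow> 'a set" where
  "flabels \<rho> (Unplanted c) = set (leaves c)"
| "flabels \<rho> (Planted None) = {\<rho>}"
| "flabels \<rho> (Planted (Some c)) = insert \<rho> (set (leaves c))"

fun fwf :: "'a \<Rightarrow> 'a ftree \<Rightarrow> bool" where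
  "fwf \<rho> (Unplanted c) = (distinct (leaves c) \<and> \<rho> \<notin> set (leaves c))"
| "fwf \<rho> (Planted None) = True"
| "fwf \<rho> (Planted (Some c)) = (distinct (leaves c) \<and> \<rho> \<notin> set (leaves c))"

fun fiso :: "'a ftree \<Rightarrow> 'a ftree \<Rightarrow> bool" where
  "fiso (Unplanted a) (Unplanted b) = biso a b"
| "fiso (Planted None) (Planted None) = True"
| "fiso (Planted (Some a)) (Planted (Some b)) = biso a b"
| "fiso _ _ = False"

definition prestrict :: "'a \<Rightarrow> 'a set \<Rightarrow> 'a btree \<Rightarrow> 'a ftree option" where
  "prestrict \<rho> S t =
     (if \<rho> \<in> S then Some (Planted (restrict S t)) else map_option Unplanted (restrict S t))"

definition is_forest :: "'a \<Rightarrow> 'a ftree set \<Rightarrow> bool" where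
  "is_forest \<rho> F \<longleftrightarrow> finite F \<and> (\<forall>C\<in>F. fwf \<rho> C) \<and>
     (\<forall>C\<in>F. \<forall>C'\<in>F. C \<noteq> C' \<longrightarrow> flabels \<rho> C \<inter> flabels \<rho> C' = {})"

definition agrees_with :: "'a \<Rightarrow> 'a set \<Rightarrow> 'a ftree set \<Rightarrow> 'a btree \<Rightarrow> bool" where
  "agrees_with \<rho> L F t \<longleftrightarrow>
     (\<forall>C\<in>F. \<exists>X. prestrict \<rho> (flabels \<rho> C) t = Some X \<and> fiso X C) \<and>
     (\<forall>C\<in>F. \<forall>C'\<in>F. C \<noteq> C' \<longrightarrow> span \<rho> t (flabels \<rho> C) \<inter> span \<rho> t (flabels \<rho> C') = {}) \<and>
     (\<Union>C\<in>F. flabels \<rho> C) = L"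

definition agreement_forest :: "'a \<Rightarrow> 'a set \<Rightarrow> 'a btree set \<Rightarrow> 'a ftree set \<Rightarrow> bool" where
  "agreement_forest \<rho> L Ts F \<longleftrightarrow> is_forest \<rho> F \<and> (\<forall>t\<in>Ts. agrees_with \<rho> L F t)"

definition inheritance_graph :: "'a \<Rightarrow> 'a btree set \<Rightarrow> 'a ftree set \<Rightarrow> ('a ftree \<times> 'a ftree) set" where
  "inheritance_graph \<rho> Ts F = {(C, C'). C \<in> F \<and> C' \<in> F \<and> C \<noteq> C' \<and>
     (\<exists>t\<in>Ts. panc (sroot \<rho> t (flabels \<rho> C)) (sroot \<rho> t (flabels \<rho> C')))}"

definition acyclic_agreement_forest :: "'a \<Rightarrow> 'a set \<Rightarrow> 'a btree set \<Rightarrow> 'a ftree set \<Rightarrow> bool" where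
  "acyclic_agreement_forest \<rho> L Ts F \<longleftrightarrow>
     agreement_forest \<rho> L Ts F \<and> acyclic (inheritance_graph \<rho> Ts F)"

definition reticulation_number :: "'a \<Rightarrow> 'a set \<Rightarrow> 'a btree set \<Rightarrow> nat" where
  "reticulation_number \<rho> L Ts = Min {card F | F. acyclic_agreement_forest \<rho> L Ts F} - 1"

definition leaf_ordering :: "'a \<Rightarrow> 'a set \<Rightarrow> ('a \<Rightarrow> nat) \<Rightarrow> bool" where
  "leaf_ordering \<rho> L \<sigma> \<longleftrightarrow> bij_betw \<sigma> (L - {\<rho>}) {0..<card (L - {\<rho>})}"

definition lo :: "'a \<Rightarrow> 'a set \<Rightarrow> ('a \<Rightarrow> nat) \<Rightarrow> nat \<Rightarrow> 'a" where
  "lo \<rho> L \<sigma> i = inv_into (L - {\<rho>}) \<sigma> i"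

fun sibling :: "'a \<Rightarrow> 'a btree \<Rightarrow> 'a btree option" where
  "sibling x (Leaf a) = None"
| "sibling x (Node a b) =
     (if a = Leaf x then Some b else if b = Leaf x then Some a
      else (case sibling x a of Some s \<Rightarrow> Some s | None \<Rightarrow> sibling x b))"

definition mu :: "('a \<Rightarrow> nat) \<Rightarrow> 'a btree \<Rightarrow> nat" where
  "mu \<sigma> t = Min (\<sigma> ` set (leaves t))"

fun oidx :: "('a \<Rightarrow> nat) \<Rightarrow> 'a btree \<Rightarrow> int" where
  "oidx \<sigma> (Leaf l) = int (\<sigma> l)"
| "oidx \<sigma> (Node a b) = - int (max (mu \<sigma> a) (mu \<sigma> b))"

text \<open>OLA(T,\<sigma>)_i = index of the sibling of l_i in T^i = T|_{\<rho>,l_0..l_i} (for 1 \<le> i \<le> n-1;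
the \<rho>-part of T^i is implicit, the sibling lies in the root subtree).\<close>
definition ola :: "'a \<Rightarrow> 'a set \<Rightarrow> ('a \<Rightarrow> nat) \<Rightarrow> 'a btree \<Rightarrow> nat \<Rightarrow> int" where
  "ola \<rho> L \<sigma> t i =
     oidx \<sigma> (the (sibling (lo \<rho> L \<sigma> i) (the (restrict (lo \<rho> L \<sigma> ` {0..i}) t))))"

text \<open>mismatch_upto i = M \<inter> {1..i}, built in increasing order of indices.\<close>
fun mismatch_upto :: "'a \<Rightarrow> 'a set \<Rightarrow> 'a btree set \<Rightarrow> ('a \<Rightarrow> nat) \<Rightarrow> nat \<Rightarrow> nat set" where
  "mismatch_upto \<rho> L Ts \<sigma> 0 = {}"
| "mismatch_upto \<rho> L Ts \<sigma> (Suc i) =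
     (if (\<exists>t\<in>Ts. \<exists>t'\<in>Ts. ola \<rho> L \<sigma> t (Suc i) \<noteq> ola \<rho> L \<sigma> t' (Suc i)) \<or>
         (\<exists>j\<in>mismatch_upto \<rho> L Ts \<sigma> i. \<forall>t\<in>Ts. ola \<rho> L \<sigma> t (Suc i) = - int j)
      then insert (Suc i) (mismatch_upto \<rho> L Ts \<sigma> i)
      else mismatch_upto \<rho> L Ts \<sigma> i)"

definition corrected_ola_dist :: "'a \<Rightarrow> 'a set \<Rightarrow> 'a btree set \<Rightarrow> ('a \<Rightarrow> nat) \<Rightarrow> nat" where
  "corrected_ola_dist \<rho> L Ts \<sigma> = card (mismatch_upto \<rho> L Ts \<sigma> (card (L - {\<rho>}) - 1))"

end

theory Submission
  imports Defs
begin


abbreviation cl :: "'a btree \<Rightarrow> 'a set" where "cl w \<equiv> set (leaves w)"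

lemma leaves_ne: "leaves t \<noteq> []"
  by (induction t) auto

lemma cl_ne: "cl t \<noteq> {}"
  using leaves_ne by (metis set_empty)

lemma self_subtree[simp]: "t \<in> subtrees t"
  by (cases t) auto

lemma subtrees_trans: "w \<in> subtrees v \<Longrightarrow> v \<in> subtrees t \<Longrightarrow> w \<in> subtrees t"
  by (induction t) auto

lemma subtree_cl: "w \<in> subtrees t \<Longrightarrow> cl w \<subseteq> cl t"
  by (induction t) auto

lemma subtree_len: "w \<in> subtrees t \<Longrightarrow> w \<noteq> t \<Longrightarrow> length (leaves w) < length (leaves t)"
proof (induction t)
  case (Leaf x) then show ?case by simp
next
  case (Node l r)
  have "length (leaves l) \<ge> 1" "length (leaves r) \<ge> 1" using leaves_ne
    by (simp_all add: Suc_le_eq)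
  show ?case
  proof (cases "w = Node l r")
    case True then show ?thesis using Node.prems by simp
  next
    case False
    then have "w \<in> subtrees l \<or> w \<in> subtrees r" using Node.prems by simp
    then show ?thesis
    proof
      assume a: "w \<in> subtrees l"
      have "length (leaves w) \<le> length (leaves l)"
        using Node.IH(1)[OF a] by (cases "w = l") auto
      then show ?thesis using \<open>length (leaves r) \<ge> 1\<close> by simp
    next
      assume a: "w \<in> subtrees r"
      have "length (leaves w) \<le> length (leaves r)"
        using Node.IH(2)[OF a] by (cases "w = r") auto
      then show ?thesis using \<open>length (leaves l) \<ge> 1\<close> by simp
    qed
  qed
qed

lemma subtree_antisym: "w \<in> subtrees v \<Longrightarrow> v \<in> subtrees w \<Longrightarrow> w = v"
  using subtree_len by (metis order.asym)

lemma finite_subtrees: "finite (subtrees t)"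
  by (induction t) auto

lemma distinct_subtree: "distinct (leaves t) \<Longrightarrow> w \<in> subtrees t \<Longrightarrow> distinct (leaves w)"
  by (induction t) auto

lemma leaf_in_subtrees: "x \<in> cl t \<longleftrightarrow> Leaf x \<in> subtrees t"
  by (induction t) auto

lemma laminar:
  "distinct (leaves t) \<Longrightarrow> w1 \<in> subtrees t \<Longrightarrow> w2 \<in> subtrees t \<Longrightarrow> cl w1 \<inter> cl w2 \<noteq> {}
   \<Longrightarrow> w1 \<in> subtrees w2 \<or> w2 \<in> subtrees w1"
proof (induction t)
  case (Leaf x) then show ?case by simp
next
  case (Node l r)
  have dl: "distinct (leaves l)" and dr: "distinct (leaves r)" and dj: "cl l \<inter> cl r = {}"
    using Node.prems(1) by auto
  show ?case
  proof (cases "w1 = Node l r \<or> w2 = Node l r")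
    case True then show ?thesis using Node.prems by auto
  next
    case False
    then have "w1 \<in> subtrees l \<union> subtrees r" "w2 \<in> subtrees l \<union> subtrees r" using Node.prems by auto
    moreover have "\<not> (w1 \<in> subtrees l \<and> w2 \<in> subtrees r)"
      using dj Node.prems(4) subtree_cl[of w1 l] subtree_cl[of w2 r] by blast
    moreover have "\<not> (w1 \<in> subtrees r \<and> w2 \<in> subtrees l)"
      using dj Node.prems(4) subtree_cl[of w1 r] subtree_cl[of w2 l] by blast
    ultimately show ?thesis
      using Node.IH(1)[OF dl _ _ Node.prems(4)] Node.IH(2)[OF dr _ _ Node.prems(4)] by blast
  qed
qed

lemma cl_sub_subtree:
  assumes "distinct (leaves t)" "w1 \<in> subtrees t" "w2 \<in> subtrees t" "cl w1 \<subseteq> cl w2"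
  shows "w1 \<in> subtrees w2"
proof -
  obtain y where "y \<in> cl w1" using leaves_ne[of w1] by (cases "leaves w1") auto
  then have "cl w1 \<inter> cl w2 \<noteq> {}" using assms(4) by auto
  then have "w1 \<in> subtrees w2 \<or> w2 \<in> subtrees w1" using laminar assms by blast
  moreover have "w2 \<in> subtrees w1 \<Longrightarrow> w1 = w2"
  proof -
    assume a: "w2 \<in> subtrees w1"
    have d1: "distinct (leaves w1)" using distinct_subtree assms by blast
    have "cl w1 = cl w2" using subtree_cl[OF a] assms(4) by blast
    show "w1 = w2"
    proof (rule ccontr)
      assume "w1 \<noteq> w2"
      then have "w2 \<noteq> w1" by simp
      have "length (leaves w2) < length (leaves w1)" using subtree_len a \<open>w2 \<noteq> w1\<close> by blast
      moreover have "distinct (leaves w2)" using d1 a distinct_subtree by blast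
      ultimately show False using d1 \<open>cl w1 = cl w2\<close>
        by (metis distinct_card less_irrefl)
    qed
  qed
  ultimately show ?thesis by auto
qed

section \<open>restrict\<close>

lemma restrict_None: "restrict S t = None \<longleftrightarrow> cl t \<inter> S = {}"
  by (induction t) (auto split: option.splits)

lemma restrict_leaves: "restrict S t = Some u \<Longrightarrow> leaves u = filter (\<lambda>x. x \<in> S) (leaves t)"
proof (induction t arbitrary: u)
  case (Leaf x) then show ?case by (auto split: if_splits)
next
  case (Node l r)
  show ?case
  proof (cases "restrict S l")
    case None
    then have "filter (\<lambda>x. x \<in> S) (leaves l) = []" using restrict_None[of S l]
      by (simp add: filter_empty_conv disjoint_iff)
    then show ?thesis using Node None by simp
  next
    case (Some a)
    show ?thesis
    proof (cases "restrict S r")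
      case None
      then have "filter (\<lambda>x. x \<in> S) (leaves r) = []" using restrict_None[of S r]
        by (simp add: filter_empty_conv disjoint_iff)
      then show ?thesis using Node Some None by simp
    next
      case (Some b)
      then show ?thesis using Node \<open>restrict S l = Some a\<close> by auto
    qed
  qed
qed

lemma restrict_cl: "restrict S t = Some u \<Longrightarrow> cl u = cl t \<inter> S"
  using restrict_leaves by fastforce

lemma restrict_distinct: "restrict S t = Some u \<Longrightarrow> distinct (leaves t) \<Longrightarrow> distinct (leaves u)"
  using restrict_leaves by fastforce

lemma restrict_all: "cl t \<subseteq> S \<Longrightarrow> restrict S t = Some t"
  by (induction t) auto

lemma restrict_single: "distinct (leaves t) \<Longrightarrow> cl t \<inter> S = {x} \<Longrightarrow> restrict S t = Some (Leaf x)"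
proof (induction t)
  case (Leaf y)
  then have "y = x" "y \<in> S" by (simp_all add: Int_insert_left split: if_splits)
  then show ?case by simp
next
  case (Node l r)
  have dj: "cl l \<inter> cl r = {}" using Node.prems by auto
  show ?case
  proof (cases "x \<in> cl l")
    case True
    then have "cl l \<inter> S = {x}" "cl r \<inter> S = {}" using Node.prems dj by auto
    then show ?thesis using Node.IH(1) Node.prems restrict_None[of S r] by auto
  next
    case False
    then have "cl r \<inter> S = {x}" "cl l \<inter> S = {}" using Node.prems dj by auto
    then show ?thesis using Node.IH(2) Node.prems restrict_None[of S l] by auto
  qed
qed

lemma restrict_Node:
  "restrict S t = Some (Node u1 u2) \<Longrightarrow>
   \<exists>wa wb. Node wa wb \<in> subtrees t \<and> restrict S wa = Some u1 \<and> restrict S wb = Some u2 \<and>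
     cl t \<inter> S \<subseteq> cl (Node wa wb)"
proof (induction t)
  case (Leaf x) then show ?case by (auto split: if_splits)
next
  case (Node l r)
  show ?case
  proof (cases "restrict S l")
    case None
    then have "cl l \<inter> S = {}" by (metis restrict_None)
    then show ?thesis using Node.IH(2) Node.prems None by fastforce
  next
    case (Some a)
    show ?thesis
    proof (cases "restrict S r")
      case None
      then have "cl r \<inter> S = {}" by (metis restrict_None)
      then show ?thesis using Node.IH(1) Node.prems None Some by fastforce
    next
      case (Some b)
      then show ?thesis using Node.prems \<open>restrict S l = Some a\<close> by auto
    qed
  qed
qed

lemma restrict_sub:
  "distinct (leaves t) \<Longrightarrow> w \<in> subtrees t \<Longrightarrow> cl t \<inter> K \<subseteq> cl w \<Longrightarrow> restrict K t = restrict K w"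
proof (induction t)
  case (Leaf x) then show ?case by auto
next
  case (Node l r)
  have dj: "cl l \<inter> cl r = {}" and dl: "distinct (leaves l)" and dr: "distinct (leaves r)"
    using Node.prems by auto
  show ?case
  proof (cases "w = Node l r")
    case True then show ?thesis by simp
  next
    case False
    then have "w \<in> subtrees l \<or> w \<in> subtrees r" using Node.prems by auto
    then show ?thesis
    proof
      assume a: "w \<in> subtrees l"
      then have "cl r \<inter> K = {}" using subtree_cl[OF a] dj Node.prems(3) by auto
      then have "restrict K r = None" by (metis restrict_None)
      moreover have "restrict K l = restrict K w"
        using Node.IH(1)[OF dl a] Node.prems(3) by auto
      ultimately show ?thesis by (simp split: option.splits)
    next
      assume a: "w \<in> subtrees r"
      then have "cl l \<inter> K = {}" using subtree_cl[OF a] dj Node.prems(3) by auto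
      then have "restrict K l = None" by (metis restrict_None)
      moreover have "restrict K r = restrict K w"
        using Node.IH(2)[OF dr a] Node.prems(3) by auto
      ultimately show ?thesis by (simp split: option.splits)
    qed
  qed
qed

lemma restrict_restrict:
  "restrict S t = Some u \<Longrightarrow> restrict S' u = restrict (S \<inter> S') t"
proof (induction t arbitrary: u)
  case (Leaf x) then show ?case by (auto split: if_splits)
next
  case (Node l r)
  show ?case
  proof (cases "restrict S l")
    case None
    then have "cl l \<inter> S = {}" by (metis restrict_None)
    then have "cl l \<inter> (S \<inter> S') = {}" by blast
    then have "restrict (S \<inter> S') l = None" by (metis restrict_None)
    then show ?thesis using Node None by simp
  next
    case (Some a)
    show ?thesis
    proof (cases "restrict S r")
      case None
      then have "cl r \<inter> S = {}" by (metis restrict_None)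
      then have "cl r \<inter> (S \<inter> S') = {}" by blast
      then have "restrict (S \<inter> S') r = None" by (metis restrict_None)
      then show ?thesis using Node None Some by (simp split: option.splits)
    next
      case (Some b)
      then show ?thesis using Node \<open>restrict S l = Some a\<close> by (auto split: option.splits)
    qed
  qed
qed

lemma restrict_subtrees:
  "restrict S t = Some u \<Longrightarrow> v \<in> subtrees u \<Longrightarrow> \<exists>w\<in>subtrees t. restrict S w = Some v"
proof (induction t arbitrary: u)
  case (Leaf x) then show ?case by (auto split: if_splits)
next
  case (Node l r)
  show ?case
  proof (cases "restrict S l")
    case None
    then show ?thesis using Node by fastforce
  next
    case (Some a)
    show ?thesis
    proof (cases "restrict S r")
      case None
      then show ?thesis using Node Some by fastforce
    next
      case (Some b)
      then have "u = Node a b" using Node.prems \<open>restrict S l = Some a\<close> by simp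
      then have "v = u \<or> v \<in> subtrees a \<or> v \<in> subtrees b" using Node.prems by auto
      then show ?thesis
        using Node.IH \<open>restrict S l = Some a\<close> Some Node.prems(1) by fastforce
    qed
  qed
qed

section \<open>biso\<close>

lemma biso_refl[simp]: "biso t t"
  by (induction t) auto

lemma biso_sym: "biso a b \<Longrightarrow> biso b a"
  by (induction a b rule: biso.induct) auto

lemma biso_trans: "biso a b \<Longrightarrow> biso b c \<Longrightarrow> biso a c"
proof (induction a b arbitrary: c rule: biso.induct)
  case (1 a b) then show ?case by (cases c) auto
next
  case (2 l r l' r')
  obtain l'' r'' where c: "c = Node l'' r''" using "2.prems"(2) by (cases c) auto
  have h: "(biso l' l'' \<and> biso r' r'') \<or> (biso l' r'' \<and> biso r' l'')" using "2.prems" c by simp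
  have h0: "(biso l l' \<and> biso r r') \<or> (biso l r' \<and> biso r l')" using "2.prems"(1) by simp
  from h0 h show ?case
  proof (elim disjE conjE)
    assume "biso l l'" "biso r r'" "biso l' l''" "biso r' r''"
    then show ?thesis using "2.IH"(1,2) c by auto
  next
    assume "biso l l'" "biso r r'" "biso l' r''" "biso r' l''"
    then show ?thesis using "2.IH"(1,2) c by auto
  next
    assume "biso l r'" "biso r l'" "biso l' l''" "biso r' r''"
    then show ?thesis using "2.IH"(3,4) c by auto
  next
    assume "biso l r'" "biso r l'" "biso l' r''" "biso r' l''"
    then show ?thesis using "2.IH"(3,4) c by auto
  qed
qed auto

lemma biso_cl: "biso a b \<Longrightarrow> cl a = cl b"
  by (induction a b rule: biso.induct) auto

lemma biso_len: "biso a b \<Longrightarrow> length (leaves a) = length (leaves b)"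
  by (induction a b rule: biso.induct) auto

lemma biso_distinct: "biso a b \<Longrightarrow> distinct (leaves a) \<Longrightarrow> distinct (leaves b)"
  using biso_len biso_cl by (metis card_distinct distinct_card)

lemma biso_mu: "biso a b \<Longrightarrow> mu \<sigma> a = mu \<sigma> b"
  unfolding mu_def using biso_cl by metis

lemma biso_oidx: "biso a b \<Longrightarrow> oidx \<sigma> a = oidx \<sigma> b"
  by (induction a b rule: biso.induct) (auto simp: biso_mu)

lemma biso_subtree: "biso u v \<Longrightarrow> z \<in> subtrees u \<Longrightarrow> \<exists>z'\<in>subtrees v. biso z z'"
proof (induction u v rule: biso.induct)
  case (1 a b) then show ?case by auto
next
  case (2 l r l' r')
  have h0: "(biso l l' \<and> biso r r') \<or> (biso l r' \<and> biso r l')" using "2.prems"(1) by simp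
  have "z = Node l r \<or> z \<in> subtrees l \<or> z \<in> subtrees r" using "2.prems"(2) by auto
  then show ?case
  proof (elim disjE)
    assume "z = Node l r" then show ?thesis using "2.prems"(1) by (intro bexI[of _ "Node l' r'"]) auto
  next
    assume z: "z \<in> subtrees l"
    from h0 show ?thesis
    proof
      assume "biso l l' \<and> biso r r'"
      then show ?thesis using "2.IH"(1)[OF _ z] by auto
    next
      assume "biso l r' \<and> biso r l'"
      then show ?thesis using "2.IH"(3)[OF _ z] by auto
    qed
  next
    assume z: "z \<in> subtrees r"
    from h0 show ?thesis
    proof
      assume "biso l l' \<and> biso r r'"
      then show ?thesis using "2.IH"(2)[OF _ z] by auto
    next
      assume "biso l r' \<and> biso r l'"
      then show ?thesis using "2.IH"(4)[OF _ z] by auto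
    qed
  qed
qed auto

definition comb :: "'a btree option \<Rightarrow> 'a btree option \<Rightarrow> 'a btree option" where
  "comb x y = (case x of None \<Rightarrow> y | Some a \<Rightarrow> (case y of None \<Rightarrow> Some a | Some b \<Rightarrow> Some (Node a b)))"

lemma restrict_Node_comb: "restrict S (Node l r) = comb (restrict S l) (restrict S r)"
  by (simp add: comb_def)

lemma comb_rel1: "rel_option biso x x' \<Longrightarrow> rel_option biso y y' \<Longrightarrow> rel_option biso (comb x y) (comb x' y')"
  by (cases x; cases x'; cases y; cases y') (auto simp: comb_def)

lemma comb_rel2: "rel_option biso x y' \<Longrightarrow> rel_option biso y x' \<Longrightarrow> rel_option biso (comb x y) (comb x' y')"
  by (cases x; cases x'; cases y; cases y') (auto simp: comb_def)

lemma biso_restrict_rel: "biso u1 u2 \<Longrightarrow> rel_option biso (restrict S u1) (restrict S u2)"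
proof (induction u1 u2 rule: biso.induct)
  case (1 a b) then show ?case by auto
next
  case (2 l r l' r')
  have h0: "(biso l l' \<and> biso r r') \<or> (biso l r' \<and> biso r l')" using "2.prems"(1) by simp
  from h0 show ?case
  proof
    assume "biso l l' \<and> biso r r'"
    then show ?thesis using "2.IH"(1,2) comb_rel1 restrict_Node_comb by metis
  next
    assume "biso l r' \<and> biso r l'"
    then show ?thesis using "2.IH"(3,4) comb_rel2 restrict_Node_comb by metis
  qed
qed auto

lemma biso_restrict:
  "biso u1 u2 \<Longrightarrow> (restrict S u1 = None \<longleftrightarrow> restrict S u2 = None) \<and>
     (\<forall>a b. restrict S u1 = Some a \<longrightarrow> restrict S u2 = Some b \<longrightarrow> biso a b)"
  using biso_restrict_rel[of u1 u2 S] by (cases "restrict S u1"; cases "restrict S u2") auto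


lemma restrict_cong: "cl t \<inter> S = cl t \<inter> S' \<Longrightarrow> restrict S t = restrict S' t"
proof (induction t)
  case (Leaf x) then show ?case by auto
next
  case (Node l r)
  have "cl l \<inter> S = cl l \<inter> S'" "cl r \<inter> S = cl r \<inter> S'" using Node.prems by auto
  then have "restrict S l = restrict S' l" "restrict S r = restrict S' r" using Node.IH by blast+
  then show ?case by (simp only: restrict.simps)
qed

section \<open>sibling\<close>

lemma sibling_None_iff: "sibling x u = None \<longleftrightarrow> (x \<notin> cl u \<or> u = Leaf x)"
proof (induction u)
  case (Leaf y) then show ?case by auto
next
  case (Node l r)
  then show ?case by (auto split: option.splits)
qed

lemma sibling_biso:
  "biso u1 u2 \<Longrightarrow> distinct (leaves u1) \<Longrightarrow> sibling x u1 = Some s1 \<Longrightarrow>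
   \<exists>s2. sibling x u2 = Some s2 \<and> biso s1 s2"
proof (induction u1 u2 arbitrary: s1 rule: biso.induct)
  case (2 l r l' r')
  have dl: "distinct (leaves l)" and dr: "distinct (leaves r)" and dj: "cl l \<inter> cl r = {}"
    using "2.prems" by auto
  have cll: "cl l' = cl l" "cl r' = cl r" if "biso l l'" "biso r r'" using biso_cl that by metis+
  have clx: "cl l' = cl r" "cl r' = cl l" if "biso l r'" "biso r l'" using biso_cl that by metis+
  have leafiso: "biso a b \<Longrightarrow> (a = Leaf x \<longleftrightarrow> b = Leaf x)" for a b
    by (cases a; cases b) auto
  have h0: "(biso l l' \<and> biso r r') \<or> (biso l r' \<and> biso r l')" using "2.prems"(1) by simp
  from h0 show ?case
  proof
    assume bb: "biso l l' \<and> biso r r'"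
    show ?thesis
    proof (cases "l = Leaf x")
      case True
      then show ?thesis using "2.prems" bb leafiso by auto
    next
      case F1: False
      show ?thesis
      proof (cases "r = Leaf x")
        case True
        then show ?thesis using "2.prems" bb leafiso F1 by auto
      next
        case F2: False
        have l'x: "l' \<noteq> Leaf x" "r' \<noteq> Leaf x" using F1 F2 bb leafiso by auto
        show ?thesis
        proof (cases "sibling x l")
          case (Some s)
          then have "s1 = s" using "2.prems" F1 F2 by simp
          then obtain s2 where "sibling x l' = Some s2" "biso s s2"
            using "2.IH"(1)[OF _ dl Some] bb by blast
          then show ?thesis using l'x \<open>s1 = s\<close> by auto
        next
          case None
          then have "sibling x r = Some s1" using "2.prems" F1 F2 by simp
          then obtain s2 where "sibling x r' = Some s2" "biso s1 s2"
            using "2.IH"(2)[OF _ dr] bb by blast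
          moreover have "sibling x l' = None" using None sibling_None_iff cll bb l'x F1 by metis
          ultimately show ?thesis using l'x by auto
        qed
      qed
    qed
  next
    assume bb: "biso l r' \<and> biso r l'"
    show ?thesis
    proof (cases "l = Leaf x")
      case True
      then have "r \<noteq> Leaf x" using dj by auto
      then have "l' \<noteq> Leaf x" "r' = Leaf x" using bb leafiso True by auto
      then show ?thesis using "2.prems" bb True by auto
    next
      case F1: False
      show ?thesis
      proof (cases "r = Leaf x")
        case True
        then show ?thesis using "2.prems" bb leafiso F1 by auto
      next
        case F2: False
        have l'x: "l' \<noteq> Leaf x" "r' \<noteq> Leaf x" using F1 F2 bb leafiso by auto
        show ?thesis
        proof (cases "sibling x l")
          case (Some s)
          then have "s1 = s" using "2.prems" F1 F2 by simp
          then obtain s2 where "sibling x r' = Some s2" "biso s s2"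
            using "2.IH"(3)[OF _ dl Some] bb by blast
          moreover have "x \<in> cl l" using Some sibling_None_iff[of x l] by auto
          then have "x \<notin> cl l'" using clx bb dj by blast
          then have "sibling x l' = None" using sibling_None_iff by metis
          ultimately show ?thesis using l'x \<open>s1 = s\<close> by auto
        next
          case None
          then have "sibling x r = Some s1" using "2.prems" F1 F2 by simp
          then obtain s2 where "sibling x l' = Some s2" "biso s1 s2"
            using "2.IH"(4)[OF _ dr] bb by blast
          then show ?thesis using l'x by auto
        qed
      qed
    qed
  qed
qed auto

lemma sib_char:
  assumes "distinct (leaves t)" "x \<in> cl t" "x \<in> S" "cl t \<inter> (S - {x}) \<noteq> {}"
  shows "\<exists>A a b. A \<in> subtrees t \<and> (A = Node a b \<or> A = Node b a) \<and> x \<in> cl a \<and> cl a \<inter> S = {x} \<and>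
     cl b \<inter> S \<noteq> {} \<and> sibling x (the (restrict S t)) = restrict S b \<and>
     (\<forall>w\<in>subtrees t. x \<in> cl w \<and> cl w \<inter> (S - {x}) \<noteq> {} \<longrightarrow> A \<in> subtrees w)"
  using assms
proof (induction t)
  case (Leaf y) then show ?case by auto
next
  case (Node l r)
  have dl: "distinct (leaves l)" and dr: "distinct (leaves r)" and dj: "cl l \<inter> cl r = {}"
    using Node.prems by auto
  show ?case
  proof (cases "x \<in> cl l")
    case xl: True
    then have xr: "x \<notin> cl r" using dj by auto
    have rS: "restrict S r = None \<or> (\<exists>v. restrict S r = Some v \<and> v \<noteq> Leaf x \<and> x \<notin> cl v)"
      using xr restrict_cl by (cases "restrict S r") fastforce+
    show ?thesis
    proof (cases "cl l \<inter> (S - {x}) = {}")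
      case True
      then have lS: "cl l \<inter> S = {x}" using xl Node.prems(3) by blast
      then have rl: "restrict S l = Some (Leaf x)" using restrict_single[OF dl] by blast
      have "cl r \<inter> S \<noteq> {}" using True Node.prems(4) xr by auto
      then obtain v where rv: "restrict S r = Some v" using restrict_None by (metis not_Some_eq)
      have "sibling x (the (restrict S (Node l r))) = restrict S r" using rl rv by simp
      moreover have "\<forall>w\<in>subtrees (Node l r). x \<in> cl w \<and> cl w \<inter> (S - {x}) \<noteq> {} \<longrightarrow> Node l r \<in> subtrees w"
      proof (intro ballI impI)
        fix w assume w: "w \<in> subtrees (Node l r)" "x \<in> cl w \<and> cl w \<inter> (S - {x}) \<noteq> {}"
        have "w \<notin> subtrees l" using subtree_cl True w(2) by blast
        moreover have "w \<notin> subtrees r" using subtree_cl xr w(2) by blast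
        ultimately show "Node l r \<in> subtrees w" using w(1) by auto
      qed
      ultimately show ?thesis using xl lS \<open>cl r \<inter> S \<noteq> {}\<close>
        by (intro exI[of _ "Node l r"] exI[of _ l] exI[of _ r]) auto
    next
      case False
      obtain A a b where IH: "A \<in> subtrees l" "A = Node a b \<or> A = Node b a" "x \<in> cl a" "cl a \<inter> S = {x}"
        "cl b \<inter> S \<noteq> {}" "sibling x (the (restrict S l)) = restrict S b"
        "\<forall>w\<in>subtrees l. x \<in> cl w \<and> cl w \<inter> (S - {x}) \<noteq> {} \<longrightarrow> A \<in> subtrees w"
        using Node.IH(1)[OF dl xl Node.prems(3) False] by blast
      obtain u where ru: "restrict S l = Some u" using False restrict_None by (metis Diff_subset disjoint_iff not_Some_eq subsetD)
      have "cl u = cl l \<inter> S" using restrict_cl ru by blast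
      then have ux: "u \<noteq> Leaf x" using False by auto
      have "x \<in> cl u" using \<open>cl u = cl l \<inter> S\<close> xl Node.prems(3) by blast
      then have "sibling x u \<noteq> None" unfolding sibling_None_iff using ux by simp
      have sib: "sibling x (the (restrict S (Node l r))) = restrict S b"
        using rS
      proof
        assume "restrict S r = None"
        then show ?thesis using ru IH(6) by simp
      next
        assume "\<exists>v. restrict S r = Some v \<and> v \<noteq> Leaf x \<and> x \<notin> cl v"
        then obtain v where "restrict S r = Some v" "v \<noteq> Leaf x" by blast
        then show ?thesis using ru IH(6) ux \<open>sibling x u \<noteq> None\<close> by (auto split: option.splits)
      qed
      have "\<forall>w\<in>subtrees (Node l r). x \<in> cl w \<and> cl w \<inter> (S - {x}) \<noteq> {} \<longrightarrow> A \<in> subtrees w"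
      proof (intro ballI impI)
        fix w assume w: "w \<in> subtrees (Node l r)" "x \<in> cl w \<and> cl w \<inter> (S - {x}) \<noteq> {}"
        have "w \<notin> subtrees r" using subtree_cl xr w(2) by blast
        then have "w = Node l r \<or> w \<in> subtrees l" using w(1) by auto
        then show "A \<in> subtrees w"
        proof
          assume "w = Node l r" then show ?thesis using IH(1) by auto
        qed (use IH(7) w(2) in blast)
      qed
      then show ?thesis using IH sib by (intro exI[of _ A] exI[of _ a] exI[of _ b]) auto
    qed
  next
    case xr: False
    then have xr: "x \<in> cl r" using Node.prems(2) by auto
    have xl: "x \<notin> cl l" using xr dj by auto
    have lS: "restrict S l = None \<or> (\<exists>v. restrict S l = Some v \<and> v \<noteq> Leaf x \<and> x \<notin> cl v)"
      using xl restrict_cl by (cases "restrict S l") fastforce+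
    show ?thesis
    proof (cases "cl r \<inter> (S - {x}) = {}")
      case True
      then have rS: "cl r \<inter> S = {x}" using xr Node.prems(3) by blast
      then have rr: "restrict S r = Some (Leaf x)" using restrict_single[OF dr] by blast
      have "cl l \<inter> S \<noteq> {}" using True Node.prems(4) xl by auto
      then obtain v where lv: "restrict S l = Some v" using restrict_None by (metis not_Some_eq)
      have "v \<noteq> Leaf x" using lv restrict_cl xl by fastforce
      then have "sibling x (the (restrict S (Node l r))) = restrict S l" using rr lv by simp
      moreover have "\<forall>w\<in>subtrees (Node l r). x \<in> cl w \<and> cl w \<inter> (S - {x}) \<noteq> {} \<longrightarrow> Node l r \<in> subtrees w"
      proof (intro ballI impI)
        fix w assume w: "w \<in> subtrees (Node l r)" "x \<in> cl w \<and> cl w \<inter> (S - {x}) \<noteq> {}"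
        have "w \<notin> subtrees r" using subtree_cl True w(2) by blast
        moreover have "w \<notin> subtrees l" using subtree_cl xl w(2) by blast
        ultimately show "Node l r \<in> subtrees w" using w(1) by auto
      qed
      ultimately show ?thesis using xr rS \<open>cl l \<inter> S \<noteq> {}\<close>
        by (intro exI[of _ "Node l r"] exI[of _ r] exI[of _ l]) auto
    next
      case False
      obtain A a b where IH: "A \<in> subtrees r" "A = Node a b \<or> A = Node b a" "x \<in> cl a" "cl a \<inter> S = {x}"
        "cl b \<inter> S \<noteq> {}" "sibling x (the (restrict S r)) = restrict S b"
        "\<forall>w\<in>subtrees r. x \<in> cl w \<and> cl w \<inter> (S - {x}) \<noteq> {} \<longrightarrow> A \<in> subtrees w"
        using Node.IH(2)[OF dr xr Node.prems(3) False] by blast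
      obtain u where ru: "restrict S r = Some u" using False restrict_None by (metis Diff_subset disjoint_iff not_Some_eq subsetD)
      have "cl u = cl r \<inter> S" using restrict_cl ru by blast
      then have ux: "u \<noteq> Leaf x" using False by auto
      have sib: "sibling x (the (restrict S (Node l r))) = restrict S b"
        using lS
      proof
        assume "restrict S l = None"
        then show ?thesis using ru IH(6) by simp
      next
        assume "\<exists>v. restrict S l = Some v \<and> v \<noteq> Leaf x \<and> x \<notin> cl v"
        then obtain v where "restrict S l = Some v" "v \<noteq> Leaf x" "x \<notin> cl v" by blast
        moreover have "sibling x v = None" using \<open>x \<notin> cl v\<close> sibling_None_iff by metis
        ultimately show ?thesis using ru IH(6) ux by (auto split: option.splits)
      qed
      have "\<forall>w\<in>subtrees (Node l r). x \<in> cl w \<and> cl w \<inter> (S - {x}) \<noteq> {} \<longrightarrow> A \<in> subtrees w"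
      proof (intro ballI impI)
        fix w assume w: "w \<in> subtrees (Node l r)" "x \<in> cl w \<and> cl w \<inter> (S - {x}) \<noteq> {}"
        have "w \<notin> subtrees l" using subtree_cl xl w(2) by blast
        then have "w = Node l r \<or> w \<in> subtrees r" using w(1) by auto
        then show "A \<in> subtrees w"
        proof
          assume "w = Node l r" then show ?thesis using IH(1) by auto
        qed (use IH(7) w(2) in blast)
      qed
      then show ?thesis using IH sib by (intro exI[of _ A] exI[of _ a] exI[of _ b]) auto
    qed
  qed
qed


section \<open>oidx\<close>

lemma mu_in: "mu \<sigma> t \<in> \<sigma> ` cl t"
  unfolding mu_def using cl_ne by (intro Min_in) auto

lemma mu_le: "y \<in> cl t \<Longrightarrow> mu \<sigma> t \<le> \<sigma> y"
  unfolding mu_def by (intro Min_le) auto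

lemma oidx_Node:
  assumes "distinct (leaves (Node a b))" "inj_on \<sigma> (cl (Node a b))"
  shows "\<exists>q y z. oidx \<sigma> (Node a b) = - int q \<and> y \<in> cl (Node a b) \<and> \<sigma> y = q \<and>
     z \<in> cl (Node a b) \<and> \<sigma> z < q \<and> q = max (mu \<sigma> a) (mu \<sigma> b)"
proof -
  obtain ya where ya: "ya \<in> cl a" "\<sigma> ya = mu \<sigma> a" using mu_in by (metis imageE)
  obtain yb where yb: "yb \<in> cl b" "\<sigma> yb = mu \<sigma> b" using mu_in by (metis imageE)
  have "ya \<noteq> yb" using assms(1) ya yb by auto
  have ne: "\<sigma> ya \<noteq> \<sigma> yb" by (rule inj_on_contraD[OF assms(2) \<open>ya \<noteq> yb\<close>]) (use ya yb in auto)
  have o: "oidx \<sigma> (Node a b) = - int (max (mu \<sigma> a) (mu \<sigma> b))" by simp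
  show ?thesis
  proof (cases "\<sigma> ya < \<sigma> yb")
    case True
    then have "max (mu \<sigma> a) (mu \<sigma> b) = \<sigma> yb" using ya yb by simp
    then show ?thesis using o ya yb True
      by (intro exI[of _ "max (mu \<sigma> a) (mu \<sigma> b)"] exI[of _ yb] exI[of _ ya]) simp
  next
    case False
    then have lt: "\<sigma> yb < \<sigma> ya" using ne by simp
    then have "max (mu \<sigma> a) (mu \<sigma> b) = \<sigma> ya" using ya yb by simp
    then show ?thesis using o ya yb lt
      by (intro exI[of _ "max (mu \<sigma> a) (mu \<sigma> b)"] exI[of _ ya] exI[of _ yb]) simp
  qed
qed

lemma oidx_elem: "inj_on \<sigma> (cl u) \<Longrightarrow> distinct (leaves u) \<Longrightarrow>
   \<exists>y\<in>cl u. int (\<sigma> y) = \<bar>oidx \<sigma> u\<bar>"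
proof (cases u)
  case (Leaf x) then show ?thesis by simp
next
  case (Node a b)
  assume "inj_on \<sigma> (cl u)" "distinct (leaves u)"
  then show ?thesis using oidx_Node[of a b \<sigma>] Node by fastforce
qed

lemma oidx_inj:
  assumes d: "distinct (leaves t)" and inj: "inj_on \<sigma> (cl t)"
    and z: "z1 \<in> subtrees t" "z2 \<in> subtrees t" and eq: "oidx \<sigma> z1 = oidx \<sigma> z2"
  shows "z1 = z2"
proof -
  have dz: "distinct (leaves z1)" "distinct (leaves z2)" using d z distinct_subtree by blast+
  have iz: "inj_on \<sigma> (cl z1)" "inj_on \<sigma> (cl z2)" using inj z subtree_cl inj_on_subset by metis+
  show ?thesis
  proof (cases z1)
    case (Leaf y1)
    show ?thesis
    proof (cases z2)
      case (Leaf y2)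
      then have "\<sigma> y1 = \<sigma> y2" using eq \<open>z1 = Leaf y1\<close> by simp
      moreover have "y1 \<in> cl t" "y2 \<in> cl t" using z Leaf \<open>z1 = Leaf y1\<close> subtree_cl by fastforce+
      ultimately show ?thesis using inj Leaf \<open>z1 = Leaf y1\<close> by (auto dest: inj_onD)
    next
      case (Node c d)
      then show ?thesis using oidx_Node[of c d \<sigma>] dz iz eq Leaf by auto
    qed
  next
    case (Node a b)
    note N1 = this
    show ?thesis
    proof (cases z2)
      case (Leaf y2)
      then show ?thesis using oidx_Node[of a b \<sigma>] dz iz eq Node by auto
    next
      case (Node c d)
      note N2 = this
      obtain q y z where q: "oidx \<sigma> z1 = - int q" "y \<in> cl z1" "\<sigma> y = q" "z \<in> cl z1" "\<sigma> z < q"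
          "q = max (mu \<sigma> a) (mu \<sigma> b)"
        using oidx_Node[of a b \<sigma>] dz iz N1 by auto
      obtain q' y' z' where q': "oidx \<sigma> z2 = - int q'" "y' \<in> cl z2" "\<sigma> y' = q'" "z' \<in> cl z2" "\<sigma> z' < q'"
          "q' = max (mu \<sigma> c) (mu \<sigma> d)"
        using oidx_Node[of c d \<sigma>] dz iz N2 by auto
      have "q = q'" using q q' eq by simp
      have "y \<in> cl t" "y' \<in> cl t" using q(2) q'(2) z subtree_cl by blast+
      then have "y = y'" using inj q(3) q'(3) \<open>q = q'\<close> by (auto dest: inj_onD)
      have key: "False" if kk: "w1 \<in> subtrees w2" "w1 \<noteq> w2" "w1 = Node e f" "w2 = Node g h"
        "w1 \<in> subtrees t" "w2 \<in> subtrees t"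
        "oidx \<sigma> w1 = oidx \<sigma> w2" for w1 w2 e f g h
      proof -
        have dw: "distinct (leaves w1)" "distinct (leaves w2)" using d kk distinct_subtree by blast+
        have iw: "inj_on \<sigma> (cl w1)" "inj_on \<sigma> (cl w2)" using inj kk subtree_cl inj_on_subset by metis+
        obtain p u v where p: "oidx \<sigma> w1 = - int p" "u \<in> cl w1" "\<sigma> u = p" "v \<in> cl w1" "\<sigma> v < p"
          using oidx_Node[of e f \<sigma>] dw iw kk(3) by auto
        obtain p' u' where p': "oidx \<sigma> w2 = - int p'" "u' \<in> cl w2" "\<sigma> u' = p'"
          "p' = max (mu \<sigma> g) (mu \<sigma> h)"
          using oidx_Node[of g h \<sigma>] dw iw kk(4) by auto
        have "p = p'" using p p' kk(7) by simp
        have "cl w1 \<subseteq> cl w2" using subtree_cl kk(1) by blast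
        then have "u = u'" using iw(2) p(2,3) p'(2,3) \<open>p = p'\<close> by (auto dest: inj_onD)
        have gh: "cl g \<inter> cl h = {}" using dw kk(4) by auto
        have "w1 \<in> subtrees g \<or> w1 \<in> subtrees h" using kk(1,2,4) by auto
        then show False
        proof
          assume a: "w1 \<in> subtrees g"
          then have "cl w1 \<subseteq> cl g" using subtree_cl by blast
          then have "mu \<sigma> g < p" using mu_le[of v g \<sigma>] p by force
          then have "mu \<sigma> h = p" using p' \<open>p = p'\<close> by (simp add: max_def split: if_splits)
          then obtain u2 where "u2 \<in> cl h" "\<sigma> u2 = p" using mu_in by (metis imageE)
          then have "u2 = u" using iw(2) p(3) \<open>cl w1 \<subseteq> cl w2\<close> p(2) kk(4)
            by (auto dest: inj_onD)
          then show False using \<open>u2 \<in> cl h\<close> \<open>cl w1 \<subseteq> cl g\<close> p(2) gh by blast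
        next
          assume a: "w1 \<in> subtrees h"
          then have "cl w1 \<subseteq> cl h" using subtree_cl by blast
          then have "mu \<sigma> h < p" using mu_le[of v h \<sigma>] p by force
          then have "mu \<sigma> g = p" using p' \<open>p = p'\<close> by (simp add: max_def split: if_splits)
          then obtain u2 where "u2 \<in> cl g" "\<sigma> u2 = p" using mu_in by (metis imageE)
          then have "u2 = u" using iw(2) p(3) \<open>cl w1 \<subseteq> cl w2\<close> p(2) kk(4)
            by (auto dest: inj_onD)
          then show False using \<open>u2 \<in> cl g\<close> \<open>cl w1 \<subseteq> cl h\<close> p(2) gh by blast
        qed
      qed
      have "cl z1 \<inter> cl z2 \<noteq> {}" using q(2) q'(2) \<open>y = y'\<close> by blast
      then have "z1 \<in> subtrees z2 \<or> z2 \<in> subtrees z1" using laminar d z by blast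
      then show ?thesis using key N1 N2 z eq by metis
    qed
  qed
qed

lemma disj_contra: "A \<subseteq> B \<Longrightarrow> A \<subseteq> C \<Longrightarrow> B \<inter> C = {} \<Longrightarrow> A \<noteq> {} \<Longrightarrow> False"
  by blast

section \<open>insertion\<close>

fun ins :: "'a \<Rightarrow> 'a btree \<Rightarrow> 'a btree \<Rightarrow> 'a btree" where
  "ins x z (Leaf y) = (if Leaf y = z then Node z (Leaf x) else Leaf y)"
| "ins x z (Node l r) = (if Node l r = z then Node z (Leaf x) else Node (ins x z l) (ins x z r))"

lemma ins_notin: "z \<notin> subtrees u \<Longrightarrow> ins x z u = u"
  by (induction u) auto

lemma ins_self: "ins x z z = Node z (Leaf x)"
  by (cases z) auto

lemma restrict_ins:
  assumes "distinct (leaves t)" "A \<in> subtrees t" "A = Node a b \<or> A = Node b a" "x \<in> cl a"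
    "cl a \<inter> insert x K = {x}" "cl b \<inter> K \<noteq> {}" "x \<notin> K"
  shows "\<exists>u z v. restrict K t = Some u \<and> restrict K b = Some z \<and>
     restrict (insert x K) t = Some v \<and> biso v (ins x z u)"
  using assms
proof (induction t)
  case (Leaf y) then show ?case using assms by auto
next
  case (Node l r)
  have dl: "distinct (leaves l)" and dr: "distinct (leaves r)" and dj: "cl l \<inter> cl r = {}"
    using Node.prems by auto
  have dA: "distinct (leaves A)" using Node.prems distinct_subtree by blast
  have ab: "cl a \<inter> cl b = {}" using dA Node.prems(3) by auto
  have xb: "x \<notin> cl b" using ab Node.prems(4) by blast
  have aK: "cl a \<inter> K = {}" using Node.prems(5,7) by auto
  obtain z where z: "restrict K b = Some z" using Node.prems(6) restrict_None by (metis not_Some_eq)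
  have clz: "cl z = cl b \<inter> K" using restrict_cl z by blast
  have bxK: "restrict (insert x K) b = Some z" using z restrict_cong[of b K "insert x K"] xb by auto
  show ?case
  proof (cases "A = Node l r")
    case True
    have rA: "restrict K A = Some z"
      using Node.prems(3) z restrict_None[of K a] aK by (auto split: option.splits)
    have ax: "restrict (insert x K) a = Some (Leaf x)" using restrict_single Node.prems(5) dA Node.prems(3)
      by (metis distinct_subtree self_subtree subtrees.simps(2) UnCI insertCI)
    have "restrict (insert x K) A = Some (Node (Leaf x) z) \<or> restrict (insert x K) A = Some (Node z (Leaf x))"
      using Node.prems(3) ax bxK by auto
    moreover have "biso (Node (Leaf x) z) (Node z (Leaf x))" by simp
    ultimately show ?thesis using True rA z ins_self[of x z] by (metis biso_refl)
  next
    case False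
    then have "A \<in> subtrees l \<or> A \<in> subtrees r" using Node.prems(2) by auto
    then show ?thesis
    proof
      assume Al: "A \<in> subtrees l"
      have clA: "cl A \<subseteq> cl l" using subtree_cl Al by blast
      obtain u v where IH: "restrict K l = Some u" "restrict (insert x K) l = Some v" "biso v (ins x z u)"
        using Node.IH(1)[OF dl Al Node.prems(3-7)] z by auto
      have xr: "x \<notin> cl r" using clA Node.prems(3,4) dj by auto
      have rr: "restrict (insert x K) r = restrict K r" using restrict_cong[of r K "insert x K"] xr by auto
      show ?thesis
      proof (cases "restrict K r")
        case None
        then show ?thesis using IH rr z by simp
      next
        case (Some w)
        have clw: "cl w = cl r \<inter> K" using restrict_cl Some by blast
        have "cl w \<noteq> {}" by (rule cl_ne)
        have clzl: "cl z \<subseteq> cl l" using clz clA Node.prems(3) by auto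
        have "z \<notin> subtrees w"
        proof
          assume "z \<in> subtrees w"
          then have "cl z \<subseteq> cl w" using subtree_cl by blast
          then show False using disj_contra[of "cl z" "cl l" "cl r"] clzl clw dj cl_ne[of z] by blast
        qed
        then have iw: "ins x z w = w" by (rule ins_notin)
        have "Node u w \<noteq> z"
        proof
          assume "Node u w = z"
          then have "cl w \<subseteq> cl z" by auto
          then show False using disj_contra[of "cl w" "cl l" "cl r"] clzl clw dj \<open>cl w \<noteq> {}\<close> by blast
        qed
        then have "ins x z (Node u w) = Node (ins x z u) w" using iw by simp
        moreover have "restrict K (Node l r) = Some (Node u w)" using IH Some by simp
        moreover have "restrict (insert x K) (Node l r) = Some (Node v w)" using IH Some rr by simp
        moreover have "biso (Node v w) (Node (ins x z u) w)" using IH by simp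
        ultimately show ?thesis using z by metis
      qed
    next
      assume Ar: "A \<in> subtrees r"
      have clA: "cl A \<subseteq> cl r" using subtree_cl Ar by blast
      obtain u v where IH: "restrict K r = Some u" "restrict (insert x K) r = Some v" "biso v (ins x z u)"
        using Node.IH(2)[OF dr Ar Node.prems(3-7)] z by auto
      have xl: "x \<notin> cl l" using clA Node.prems(3,4) dj by auto
      have rl: "restrict (insert x K) l = restrict K l" using restrict_cong[of l K "insert x K"] xl by auto
      show ?thesis
      proof (cases "restrict K l")
        case None
        then show ?thesis using IH rl z by simp
      next
        case (Some w)
        have clw: "cl w = cl l \<inter> K" using restrict_cl Some by blast
        have "cl w \<noteq> {}" by (rule cl_ne)
        have clzr: "cl z \<subseteq> cl r" using clz clA Node.prems(3) by auto
        have "z \<notin> subtrees w"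
        proof
          assume "z \<in> subtrees w"
          then have "cl z \<subseteq> cl w" using subtree_cl by blast
          then show False using disj_contra[of "cl z" "cl r" "cl l"] clzr clw dj cl_ne[of z] by blast
        qed
        then have iw: "ins x z w = w" by (rule ins_notin)
        have "Node w u \<noteq> z"
        proof
          assume "Node w u = z"
          then have "cl w \<subseteq> cl z" by auto
          then show False using disj_contra[of "cl w" "cl r" "cl l"] clzr clw dj \<open>cl w \<noteq> {}\<close> by blast
        qed
        then have "ins x z (Node w u) = Node w (ins x z u)" using iw by simp
        moreover have "restrict K (Node l r) = Some (Node w u)" using IH Some by simp
        moreover have "restrict (insert x K) (Node l r) = Some (Node w v)" using IH Some rl by simp
        moreover have "biso (Node w v) (Node w (ins x z u))" using IH by simp
        ultimately show ?thesis using z by metis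
      qed
    qed
  qed
qed



lemma split_children_unique:
  assumes "A = Node a b \<or> A = Node b a" "A = Node a' b' \<or> A = Node b' a'" "x \<in> cl a" "x \<in> cl a'"
    "distinct (leaves A)"
  shows "a = a' \<and> b = b'"
proof -
  have dj: "cl a \<inter> cl b = {}" using assms(1,5) by auto
  show ?thesis using assms(1,2) assms(3,4) dj by auto
qed

locale setting =
  fixes \<rho> :: 'a and L :: "'a set" and Ts :: "'a btree set" and \<sigma> :: "'a \<Rightarrow> nat"
  assumes finL: "finite L" and rhoL: "\<rho> \<in> L" and trees: "\<forall>t\<in>Ts. is_tree \<rho> L t"
    and lord: "leaf_ordering \<rho> L \<sigma>"
begin

definition n :: nat where "n = card (L - {\<rho>})"

definition Si :: "nat \<Rightarrow> 'a set" where "Si i = {x \<in> L - {\<rho>}. \<sigma> x \<le> i}"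

abbreviation l :: "nat \<Rightarrow> 'a" where "l i \<equiv> lo \<rho> L \<sigma> i"

lemma bij: "bij_betw \<sigma> (L - {\<rho>}) {0..<n}"
  using lord unfolding leaf_ordering_def n_def by simp

lemma inj: "inj_on \<sigma> (L - {\<rho>})"
  using bij bij_betw_imp_inj_on by blast

lemma sig_lt: "x \<in> L - {\<rho>} \<Longrightarrow> \<sigma> x < n"
  using bij bij_betwE by fastforce

lemma lo_in: "i < n \<Longrightarrow> l i \<in> L - {\<rho>} \<and> \<sigma> (l i) = i"
proof -
  assume "i < n"
  then have "i \<in> \<sigma> ` (L - {\<rho>})" using bij bij_betw_imp_surj_on by fastforce
  then have "inv_into (L - {\<rho>}) \<sigma> i \<in> L - {\<rho>}" by (rule inv_into_into)
  moreover have "\<sigma> (inv_into (L - {\<rho>}) \<sigma> i) = i" using \<open>i \<in> _\<close> by (rule f_inv_into_f)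
  ultimately show ?thesis unfolding lo_def by blast
qed

lemma lo_sig: "x \<in> L - {\<rho>} \<Longrightarrow> l (\<sigma> x) = x"
  unfolding lo_def using inj by (simp add: inv_into_f_f)

lemma Si_sub: "Si i \<subseteq> L - {\<rho>}"
  unfolding Si_def by auto

lemma l_in_Si: "i < n \<Longrightarrow> l i \<in> Si i"
  using lo_in unfolding Si_def by auto

lemma lo_img: "i < n \<Longrightarrow> lo \<rho> L \<sigma> ` {0..i} = Si i"
proof
  assume i: "i < n"
  show "lo \<rho> L \<sigma> ` {0..i} \<subseteq> Si i"
    using lo_in i unfolding Si_def by fastforce
  show "Si i \<subseteq> lo \<rho> L \<sigma> ` {0..i}"
  proof
    fix x assume "x \<in> Si i"
    then have "x \<in> L - {\<rho>}" "\<sigma> x \<le> i" unfolding Si_def by auto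
    then show "x \<in> lo \<rho> L \<sigma> ` {0..i}" using lo_sig by (metis atLeastAtMost_iff image_eqI le0)
  qed
qed

lemma Si_mono: "i \<le> j \<Longrightarrow> Si i \<subseteq> Si j"
  unfolding Si_def by auto

lemma Si_Suc: "Suc i < n \<Longrightarrow> Si (Suc i) = insert (l (Suc i)) (Si i)"
proof
  assume a: "Suc i < n"
  show "Si (Suc i) \<subseteq> insert (l (Suc i)) (Si i)"
  proof
    fix x assume "x \<in> Si (Suc i)"
    then have x: "x \<in> L - {\<rho>}" "\<sigma> x \<le> Suc i" unfolding Si_def by auto
    show "x \<in> insert (l (Suc i)) (Si i)"
    proof (cases "\<sigma> x = Suc i")
      case True then show ?thesis using lo_sig x by force
    next
      case False then show ?thesis using x unfolding Si_def by auto
    qed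
  qed
  show "insert (l (Suc i)) (Si i) \<subseteq> Si (Suc i)"
    using l_in_Si[OF a] Si_mono[of i "Suc i"] by auto
qed

lemma l_notin_prev: "i < n \<Longrightarrow> j < i \<Longrightarrow> l i \<notin> Si j"
  using lo_in unfolding Si_def by auto

lemma Si_prev: "1 \<le> i \<Longrightarrow> i < n \<Longrightarrow> Si (i - 1) = Si i - {l i}"
proof -
  assume i: "1 \<le> i" "i < n"
  then have e: "Suc (i - 1) = i" by simp
  have 1: "Si i = insert (l i) (Si (i - 1))" using Si_Suc[of "i - 1"] e i by simp
  have 2: "l i \<notin> Si (i - 1)" using l_notin_prev[of i "i - 1"] i by simp
  show ?thesis using 1 2 by blast
qed

lemma Si_last: "1 \<le> n \<Longrightarrow> Si (n - 1) = L - {\<rho>}"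
  unfolding Si_def using sig_lt by fastforce

lemma Si_sig: "x \<in> Si i \<Longrightarrow> \<sigma> x \<le> i"
  unfolding Si_def by auto

lemma l0_Si: "0 < n \<Longrightarrow> l 0 \<in> Si i"
  using lo_in unfolding Si_def by auto

lemma tree_facts: "t \<in> Ts \<Longrightarrow> distinct (leaves t) \<and> cl t = L - {\<rho>}"
  using trees unfolding is_tree_def by auto

lemma inj_cl: "t \<in> Ts \<Longrightarrow> inj_on \<sigma> (cl t)"
  using tree_facts inj by auto

lemma inj_sub: "t \<in> Ts \<Longrightarrow> w \<in> subtrees t \<Longrightarrow> inj_on \<sigma> (cl w)"
  using inj_cl subtree_cl inj_on_subset by metis

definition split :: "'a btree \<Rightarrow> nat \<Rightarrow> 'a btree \<Rightarrow> 'a btree \<Rightarrow> 'a btree \<Rightarrow> bool" where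
  "split t i A a b \<longleftrightarrow> A \<in> subtrees t \<and> (A = Node a b \<or> A = Node b a) \<and> l i \<in> cl a \<and>
     cl a \<inter> Si i = {l i} \<and> cl b \<inter> Si (i - 1) \<noteq> {} \<and>
     (\<forall>w\<in>subtrees t. l i \<in> cl w \<and> cl w \<inter> Si (i - 1) \<noteq> {} \<longrightarrow> A \<in> subtrees w)"

lemma split_unique:
  assumes t: "t \<in> Ts" and s1: "split t i A a b" and s2: "split t i A' a' b'"
  shows "A = A' \<and> a = a' \<and> b = b'"
proof -
  have d: "distinct (leaves t)" using tree_facts t by blast
  have A: "A \<in> subtrees t" "A' \<in> subtrees t" using s1 s2 unfolding split_def by auto
  have "l i \<in> cl A" "cl A \<inter> Si (i - 1) \<noteq> {}" using s1 unfolding split_def by auto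
  then have 1: "A' \<in> subtrees A" using s2 A unfolding split_def by blast
  have "l i \<in> cl A'" "cl A' \<inter> Si (i - 1) \<noteq> {}" using s2 unfolding split_def by auto
  then have 2: "A \<in> subtrees A'" using s1 A unfolding split_def by blast
  have "A = A'" using 1 2 subtree_antisym by blast
  moreover have "distinct (leaves A)" using d A distinct_subtree by blast
  ultimately show ?thesis using split_children_unique[of A a b a' b' "l i"] s1 s2 unfolding split_def by auto
qed

lemma ola_split:
  assumes t: "t \<in> Ts" and i: "1 \<le> i" "i < n"
  shows "\<exists>A a b s. split t i A a b \<and> restrict (Si (i - 1)) b = Some s \<and> ola \<rho> L \<sigma> t i = oidx \<sigma> s"
proof -
  have d: "distinct (leaves t)" and clt: "cl t = L - {\<rho>}" using tree_facts t by auto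
  have x: "l i \<in> cl t" "l i \<in> Si i" using lo_in l_in_Si i clt by auto
  have n0: "0 < n" using i by simp
  have a1: "l 0 \<in> cl t" using lo_in[OF n0] clt by simp
  have a2: "l 0 \<in> Si i" using l0_Si[OF n0] by simp
  have a3: "l 0 \<noteq> l i" using lo_in[OF n0] lo_in[OF i(2)] i(1) by (metis not_one_le_zero)
  have "l 0 \<in> cl t \<inter> (Si i - {l i})" using a1 a2 a3 by blast
  then have ne: "cl t \<inter> (Si i - {l i}) \<noteq> {}" by blast
  obtain A a b where sc: "A \<in> subtrees t" "A = Node a b \<or> A = Node b a" "l i \<in> cl a" "cl a \<inter> Si i = {l i}"
     "cl b \<inter> Si i \<noteq> {}" "sibling (l i) (the (restrict (Si i) t)) = restrict (Si i) b"
     "\<forall>w\<in>subtrees t. l i \<in> cl w \<and> cl w \<inter> (Si i - {l i}) \<noteq> {} \<longrightarrow> A \<in> subtrees w"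
    using sib_char[OF d x ne] by blast
  have dA: "distinct (leaves A)" using d sc(1) distinct_subtree by blast
  have "l i \<notin> cl b" using dA sc(2,3) by auto
  then have cb: "cl b \<inter> Si i = cl b \<inter> Si (i - 1)" using Si_prev i by auto
  then have rb: "restrict (Si i) b = restrict (Si (i - 1)) b" using restrict_cong by blast
  obtain s where s: "restrict (Si (i - 1)) b = Some s" using sc(5) cb restrict_None by (metis not_Some_eq)
  have "split t i A a b" unfolding split_def using sc cb Si_prev[OF i] by auto
  moreover have "ola \<rho> L \<sigma> t i = oidx \<sigma> s"
    unfolding ola_def using sc(6) rb s lo_img[OF i(2)] by simp
  ultimately show ?thesis using s by blast
qed

lemma ola_of_split:
  assumes t: "t \<in> Ts" and i: "1 \<le> i" "i < n" and sp: "split t i A a b"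
    and s: "restrict (Si (i - 1)) b = Some s"
  shows "ola \<rho> L \<sigma> t i = oidx \<sigma> s"
  using ola_split[OF t i] split_unique[OF t sp] s by force

end


lemma hull_ex:
  assumes d: "distinct (leaves t)" and X: "X \<subseteq> cl t" "X \<noteq> {}"
  shows "\<exists>h\<in>subtrees t. X \<subseteq> cl h \<and> (\<forall>w\<in>subtrees t. X \<subseteq> cl w \<longrightarrow> h \<in> subtrees w)"
proof -
  let ?P = "\<lambda>w. w \<in> subtrees t \<and> X \<subseteq> cl w"
  have "?P t" using X by simp
  then obtain h where h: "?P h" "\<forall>w. ?P w \<longrightarrow> length (leaves h) \<le> length (leaves w)"
    using ex_has_least_nat[of ?P t "\<lambda>w. length (leaves w)"] by blast
  have "\<forall>w\<in>subtrees t. X \<subseteq> cl w \<longrightarrow> h \<in> subtrees w"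
  proof (intro ballI impI)
    fix w assume w: "w \<in> subtrees t" "X \<subseteq> cl w"
    have "cl h \<inter> cl w \<noteq> {}" using h(1) w(2) X(2) by blast
    then have "h \<in> subtrees w \<or> w \<in> subtrees h" using laminar[OF d] h(1) w(1) by blast
    then show "h \<in> subtrees w"
    proof
      assume "w \<in> subtrees h"
      moreover have "\<not> length (leaves w) < length (leaves h)" using h(2) w by (simp add: not_less)
      ultimately have "w = h" using subtree_len by blast
      then show ?thesis by simp
    qed
  qed
  then show ?thesis using h(1) by blast
qed

context setting
begin

definition Hu :: "'a btree \<Rightarrow> 'a set \<Rightarrow> 'a set" where
  "Hu t X = (if \<rho> \<in> X then UNIV else \<Inter> {cl w | w. w \<in> subtrees t \<and> X \<subseteq> cl w})"

lemma Hu_sub: "\<rho> \<notin> X \<Longrightarrow> w \<in> subtrees t \<Longrightarrow> X \<subseteq> cl w \<Longrightarrow> Hu t X \<subseteq> cl w"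
  unfolding Hu_def by auto

lemma Hu_hull:
  assumes "\<rho> \<notin> X" "h \<in> subtrees t" "X \<subseteq> cl h" "\<forall>w\<in>subtrees t. X \<subseteq> cl w \<longrightarrow> h \<in> subtrees w"
  shows "Hu t X = cl h"
proof
  show "Hu t X \<subseteq> cl h" using Hu_sub assms by blast
  show "cl h \<subseteq> Hu t X" unfolding Hu_def using assms subtree_cl by fastforce
qed

lemma X_Hu: "X \<subseteq> Hu t X"
  unfolding Hu_def by auto

lemma no_rho_sub: "t \<in> Ts \<Longrightarrow> w \<in> subtrees t \<Longrightarrow> \<rho> \<notin> cl w"
  using tree_facts subtree_cl by fastforce

lemma cl_sub_L: "t \<in> Ts \<Longrightarrow> w \<in> subtrees t \<Longrightarrow> cl w \<subseteq> L - {\<rho>}"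
  using tree_facts subtree_cl by fastforce

lemma hull_Ts:
  assumes t: "t \<in> Ts" and X: "X \<subseteq> L - {\<rho>}" "X \<noteq> {}"
  shows "\<exists>h\<in>subtrees t. X \<subseteq> cl h \<and> (\<forall>w\<in>subtrees t. X \<subseteq> cl w \<longrightarrow> h \<in> subtrees w) \<and> Hu t X = cl h"
proof -
  have d: "distinct (leaves t)" and c: "cl t = L - {\<rho>}" using tree_facts t by auto
  have Xt: "X \<subseteq> cl t" using X c by simp
  from hull_ex[OF d Xt X(2)]
  obtain h where h: "h \<in> subtrees t" "X \<subseteq> cl h" "\<forall>w\<in>subtrees t. X \<subseteq> cl w \<longrightarrow> h \<in> subtrees w"
    by blast
  have "\<rho> \<notin> X" using X by blast
  then show ?thesis using h Hu_hull by blast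
qed

lemma panc_lvert: "panc (Some a) (lvert \<rho> x) \<longleftrightarrow> x \<noteq> \<rho> \<and> x \<in> cl a"
  unfolding lvert_def using leaf_in_subtrees[of x a] by auto

lemma pverts_eq: "pverts t = insert None (Some ` subtrees t)"
  unfolding pverts_def by simp

lemma span_char:
  assumes t: "t \<in> Ts" and X: "X \<subseteq> L" "X - {\<rho>} \<noteq> {}"
  shows "span \<rho> t X = (if \<rho> \<in> X then {None} else {}) \<union>
           Some ` {w \<in> subtrees t. cl w \<inter> X \<noteq> {} \<and> cl w \<subseteq> Hu t X}"
proof (cases "\<rho> \<in> X")
  case True
  have anc: "(\<forall>x\<in>X. panc u (lvert \<rho> x)) \<longleftrightarrow> u = None" for u
  proof
    assume "\<forall>x\<in>X. panc u (lvert \<rho> x)"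
    then have "panc u (lvert \<rho> \<rho>)" using True by blast
    then show "u = None" unfolding lvert_def by (cases u) auto
  qed simp
  have "span \<rho> t X = {v \<in> pverts t. \<exists>x\<in>X. panc v (lvert \<rho> x)}"
    unfolding span_def using anc by auto
  also have "\<dots> = {None} \<union> Some ` {w \<in> subtrees t. cl w \<inter> X \<noteq> {}}"
  proof -
    have "\<exists>x\<in>X. panc None (lvert \<rho> x)" using True by auto
    moreover have "(\<exists>x\<in>X. panc (Some w) (lvert \<rho> x)) \<longleftrightarrow> cl w \<inter> X \<noteq> {}" if "w \<in> subtrees t" for w
      using panc_lvert no_rho_sub[OF t that] by blast
    ultimately show ?thesis unfolding pverts_eq by auto
  qed
  finally show ?thesis using True unfolding Hu_def by simp
next
  case False
  have XL: "X \<subseteq> L - {\<rho>}" "X \<noteq> {}" using X False by auto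
  obtain h where h: "h \<in> subtrees t" "X \<subseteq> cl h" "\<forall>w\<in>subtrees t. X \<subseteq> cl w \<longrightarrow> h \<in> subtrees w" "Hu t X = cl h"
    using hull_Ts[OF t XL] by blast
  have d: "distinct (leaves t)" using tree_facts t by blast
  have ancS: "(\<forall>x\<in>X. panc (Some w) (lvert \<rho> x)) \<longleftrightarrow> X \<subseteq> cl w" for w
    using panc_lvert False by blast
  have none: "None \<notin> span \<rho> t X"
  proof
    assume "None \<in> span \<rho> t X"
    then have "panc (Some h) None" unfolding span_def pverts_eq using ancS h(2) h(1) by blast
    then show False by simp
  qed
  have some: "Some w \<in> span \<rho> t X \<longleftrightarrow> w \<in> subtrees t \<and> cl w \<inter> X \<noteq> {} \<and> cl w \<subseteq> Hu t X" for w
  proof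
    assume a: "Some w \<in> span \<rho> t X"
    then have w: "w \<in> subtrees t" "\<exists>x\<in>X. panc (Some w) (lvert \<rho> x)"
      "\<forall>u\<in>pverts t. (\<forall>x\<in>X. panc u (lvert \<rho> x)) \<longrightarrow> panc u (Some w)"
      unfolding span_def pverts_eq by auto
    have "cl w \<inter> X \<noteq> {}" using w(2) panc_lvert by blast
    moreover have "panc (Some h) (Some w)" using w(3) ancS h(1,2) unfolding pverts_eq by blast
    then have "cl w \<subseteq> cl h" using subtree_cl by simp
    ultimately show "w \<in> subtrees t \<and> cl w \<inter> X \<noteq> {} \<and> cl w \<subseteq> Hu t X" using w(1) h(4) by simp
  next
    assume a: "w \<in> subtrees t \<and> cl w \<inter> X \<noteq> {} \<and> cl w \<subseteq> Hu t X"
    have 1: "\<exists>x\<in>X. panc (Some w) (lvert \<rho> x)" using a panc_lvert False by blast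
    have 2: "panc u (Some w)" if u: "u \<in> pverts t" "\<forall>x\<in>X. panc u (lvert \<rho> x)" for u
    proof (cases u)
      case None then show ?thesis by simp
    next
      case (Some w')
      then have "w' \<in> subtrees t" "X \<subseteq> cl w'" using u ancS unfolding pverts_eq by auto
      then have "Hu t X \<subseteq> cl w'" using Hu_sub False by blast
      then have "cl w \<subseteq> cl w'" using a by blast
      then have "w \<in> subtrees w'" using cl_sub_subtree[OF d] a \<open>w' \<in> subtrees t\<close> by blast
      then show ?thesis using Some by simp
    qed
    show "Some w \<in> span \<rho> t X" unfolding span_def pverts_eq using a 1 2 unfolding pverts_eq by blast
  qed
  show ?thesis
  proof (rule set_eqI)
    fix v show "v \<in> span \<rho> t X \<longleftrightarrow> v \<in> (if \<rho> \<in> X then {None} else {}) \<union>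
           Some ` {w \<in> subtrees t. cl w \<inter> X \<noteq> {} \<and> cl w \<subseteq> Hu t X}"
      using none some False by (cases v) auto
  qed
qed

lemma sroot_rho:
  assumes t: "t \<in> Ts" and r: "\<rho> \<in> X"
  shows "sroot \<rho> t X = None"
proof -
  have anc: "(\<forall>x\<in>X. panc u (lvert \<rho> x)) \<longleftrightarrow> u = None" for u
  proof
    assume "\<forall>x\<in>X. panc u (lvert \<rho> x)"
    then have "panc u (lvert \<rho> \<rho>)" using r by blast
    then show "u = None" unfolding lvert_def by (cases u) auto
  qed simp
  show ?thesis unfolding sroot_def
  proof (rule the_equality)
    show "None \<in> pverts t \<and> (\<forall>x\<in>X. panc None (lvert \<rho> x)) \<and>
      (\<forall>w\<in>pverts t. (\<forall>x\<in>X. panc w (lvert \<rho> x)) \<longrightarrow> panc w None)"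
      using anc unfolding pverts_eq by auto
  next
    fix v assume "v \<in> pverts t \<and> (\<forall>x\<in>X. panc v (lvert \<rho> x)) \<and>
      (\<forall>w\<in>pverts t. (\<forall>x\<in>X. panc w (lvert \<rho> x)) \<longrightarrow> panc w v)"
    then show "v = None" using anc by blast
  qed
qed

lemma sroot_norho:
  assumes t: "t \<in> Ts" and X: "X \<subseteq> L" "X \<noteq> {}" and r: "\<rho> \<notin> X"
  shows "\<exists>h. sroot \<rho> t X = Some h \<and> h \<in> subtrees t \<and> cl h = Hu t X \<and> X \<subseteq> cl h"
proof -
  have XL: "X \<subseteq> L - {\<rho>}" "X \<noteq> {}" using X r by auto
  obtain h where h: "h \<in> subtrees t" "X \<subseteq> cl h" "\<forall>w\<in>subtrees t. X \<subseteq> cl w \<longrightarrow> h \<in> subtrees w" "Hu t X = cl h"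
    using hull_Ts[OF t XL] by blast
  have ancS: "(\<forall>x\<in>X. panc (Some w) (lvert \<rho> x)) \<longleftrightarrow> X \<subseteq> cl w" for w
    using panc_lvert r by blast
  have "sroot \<rho> t X = Some h" unfolding sroot_def
  proof (rule the_equality)
    show "Some h \<in> pverts t \<and> (\<forall>x\<in>X. panc (Some h) (lvert \<rho> x)) \<and>
      (\<forall>w\<in>pverts t. (\<forall>x\<in>X. panc w (lvert \<rho> x)) \<longrightarrow> panc w (Some h))"
    proof (intro conjI)
      show "Some h \<in> pverts t" using h(1) unfolding pverts_eq by simp
      show "\<forall>x\<in>X. panc (Some h) (lvert \<rho> x)" using ancS h(2) by blast
    next
      show "\<forall>w\<in>pverts t. (\<forall>x\<in>X. panc w (lvert \<rho> x)) \<longrightarrow> panc w (Some h)"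
      proof (intro ballI impI)
      fix w assume w: "w \<in> pverts t" "\<forall>x\<in>X. panc w (lvert \<rho> x)"
      show "panc w (Some h)"
      proof (cases w)
        case None then show ?thesis by simp
      next
        case (Some w')
        then show ?thesis using w ancS h(3) unfolding pverts_eq by auto
      qed
      qed
    qed
  next
    fix v assume v: "v \<in> pverts t \<and> (\<forall>x\<in>X. panc v (lvert \<rho> x)) \<and>
      (\<forall>w\<in>pverts t. (\<forall>x\<in>X. panc w (lvert \<rho> x)) \<longrightarrow> panc w v)"
    have "Some h \<in> pverts t" using h(1) unfolding pverts_eq by simp
    then have "panc (Some h) v" using v ancS h(2) by blast
    then obtain w' where w': "v = Some w'" "w' \<in> subtrees h" by (cases v) auto
    then have "w' \<in> subtrees t" using h(1) subtrees_trans by blast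
    moreover have "X \<subseteq> cl w'" using v w'(1) ancS by blast
    ultimately have "h \<in> subtrees w'" using h(3) by blast
    then show "v = Some h" using w' subtree_antisym by blast
  qed
  then show ?thesis using h by auto
qed

end


lemma not_sub_other: "distinct (leaves (Node l r)) \<Longrightarrow> z \<in> subtrees l \<Longrightarrow> z \<notin> subtrees r"
proof
  assume "distinct (leaves (Node l r))" "z \<in> subtrees l" "z \<in> subtrees r"
  then have "cl z \<subseteq> cl l" "cl z \<subseteq> cl r" "cl l \<inter> cl r = {}" using subtree_cl by auto
  then show False using disj_contra cl_ne by metis
qed

lemma ins_biso:
  "biso u1 u2 \<Longrightarrow> distinct (leaves u1) \<Longrightarrow> inj_on \<sigma> (cl u1) \<Longrightarrow> z1 \<in> subtrees u1 \<Longrightarrow>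
   z2 \<in> subtrees u2 \<Longrightarrow> oidx \<sigma> z1 = oidx \<sigma> z2 \<Longrightarrow> biso (ins x z1 u1) (ins x z2 u2)"
proof (induction u1 u2 arbitrary: z1 z2 rule: biso.induct)
  case (1 a b)
  then show ?case by auto
next
  case (2 l r l' r')
  let ?u1 = "Node l r" and ?u2 = "Node l' r'"
  have d2: "distinct (leaves ?u2)" using biso_distinct "2.prems"(1,2) by blast
  have i2: "inj_on \<sigma> (cl ?u2)" using biso_cl "2.prems"(1,3) by metis
  have o12: "oidx \<sigma> ?u1 = oidx \<sigma> ?u2" using biso_oidx "2.prems"(1) by blast
  have dl: "distinct (leaves l)" "distinct (leaves r)" using "2.prems"(2) by auto
  have il: "inj_on \<sigma> (cl l)" "inj_on \<sigma> (cl r)" using "2.prems"(3) inj_on_subset by fastforce+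
  have h0: "(biso l l' \<and> biso r r') \<or> (biso l r' \<and> biso r l')" using "2.prems"(1) by simp
  show ?case
  proof (cases "z1 = ?u1")
    case True
    then have "oidx \<sigma> z2 = oidx \<sigma> ?u2" using o12 "2.prems"(6) by simp
    then have "z2 = ?u2" using oidx_inj[OF d2 i2 "2.prems"(5)] by simp
    then show ?thesis using True ins_self "2.prems"(1) by (metis biso.simps(2) biso_refl)
  next
    case False
    have "z2 \<noteq> ?u2"
    proof
      assume "z2 = ?u2"
      then have "oidx \<sigma> z1 = oidx \<sigma> ?u1" using o12 "2.prems"(6) by simp
      then show False using oidx_inj[OF "2.prems"(2,3,4)] False by simp
    qed
    then have e: "ins x z1 ?u1 = Node (ins x z1 l) (ins x z1 r)" "ins x z2 ?u2 = Node (ins x z2 l') (ins x z2 r')"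
      using False by auto
    have loc: "z2 \<in> subtrees v'" if lc: "z1 \<in> subtrees v" "biso v v'" "v' \<in> subtrees ?u2" for v v'
    proof -
      obtain z1' where z1': "z1' \<in> subtrees v'" "biso z1 z1'" using biso_subtree lc(1,2) by blast
      have "oidx \<sigma> z1' = oidx \<sigma> z2" using biso_oidx z1'(2) "2.prems"(6) by metis
      moreover have "z1' \<in> subtrees ?u2" using z1'(1) lc(3) subtrees_trans by blast
      ultimately have "z1' = z2" using oidx_inj[OF d2 i2 _ "2.prems"(5)] by blast
      then show ?thesis using z1' by simp
    qed
    have zz: "z1 \<in> subtrees l \<or> z1 \<in> subtrees r" using "2.prems"(4) False by auto
    from h0 show ?thesis
    proof
      assume bb: "biso l l' \<and> biso r r'"
      from zz show ?thesis
      proof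
        assume z1: "z1 \<in> subtrees l"
        have z2: "z2 \<in> subtrees l'" using loc[OF z1] bb by simp
        have "ins x z1 r = r" using ins_notin not_sub_other "2.prems"(2) z1 by metis
        moreover have "ins x z2 r' = r'" using ins_notin not_sub_other d2 z2 by metis
        moreover have "biso (ins x z1 l) (ins x z2 l')"
          using "2.IH"(1)[of z1 z2] bb dl il z1 z2 "2.prems"(6) by blast
        ultimately show ?thesis using e bb by simp
      next
        assume z1: "z1 \<in> subtrees r"
        have z2: "z2 \<in> subtrees r'" using loc[OF z1] bb by simp
        have "ins x z1 l = l" using ins_notin not_sub_other[of r l] "2.prems"(2) z1 by (metis distinct_append leaves.simps(2) inf_commute)
        moreover have "ins x z2 l' = l'" using ins_notin not_sub_other[of r' l'] d2 z2 by (metis distinct_append leaves.simps(2) inf_commute)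
        moreover have "biso (ins x z1 r) (ins x z2 r')"
          using "2.IH"(2)[of z1 z2] bb dl il z1 z2 "2.prems"(6) by blast
        ultimately show ?thesis using e bb by simp
      qed
    next
      assume bb: "biso l r' \<and> biso r l'"
      from zz show ?thesis
      proof
        assume z1: "z1 \<in> subtrees l"
        have z2: "z2 \<in> subtrees r'" using loc[OF z1] bb by simp
        have "ins x z1 r = r" using ins_notin not_sub_other "2.prems"(2) z1 by metis
        moreover have "ins x z2 l' = l'" using ins_notin not_sub_other[of r' l'] d2 z2 by (metis distinct_append leaves.simps(2) inf_commute)
        moreover have "biso (ins x z1 l) (ins x z2 r')"
          using "2.IH"(3)[of z1 z2] bb dl il z1 z2 "2.prems"(6) by blast
        ultimately show ?thesis using e bb by simp
      next
        assume z1: "z1 \<in> subtrees r"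
        have z2: "z2 \<in> subtrees l'" using loc[OF z1] bb by simp
        have "ins x z1 l = l" using ins_notin not_sub_other[of r l] "2.prems"(2) z1 by (metis distinct_append leaves.simps(2) inf_commute)
        moreover have "ins x z2 r' = r'" using ins_notin not_sub_other d2 z2 by metis
        moreover have "biso (ins x z1 r) (ins x z2 l')"
          using "2.IH"(4)[of z1 z2] bb dl il z1 z2 "2.prems"(6) by blast
        ultimately show ?thesis using e bb by simp
      qed
    qed
  qed
qed auto


context setting
begin

lemma split_sub: "split t i A a b \<Longrightarrow> b \<in> subtrees t \<and> a \<in> subtrees t \<and> A \<in> subtrees t"
proof -
  assume sp: "split t i A a b"
  then have A: "A \<in> subtrees t" "A = Node a b \<or> A = Node b a" unfolding split_def by auto
  then have "a \<in> subtrees A" "b \<in> subtrees A" by auto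
  then show ?thesis using A(1) subtrees_trans by blast
qed

lemma split_s_facts:
  assumes t: "t \<in> Ts" and sp: "split t i A a b" and s: "restrict (Si (i - 1)) b = Some s"
  shows "distinct (leaves s) \<and> inj_on \<sigma> (cl s) \<and> cl s = cl b \<inter> Si (i - 1)"
proof -
  have "b \<in> subtrees t" using split_sub sp by blast
  then have db: "distinct (leaves b)" using tree_facts t distinct_subtree by blast
  have c: "cl s = cl b \<inter> Si (i - 1)" using restrict_cl s by blast
  have "cl s \<subseteq> L - {\<rho>}" using c Si_sub by blast
  then have "inj_on \<sigma> (cl s)" using inj inj_on_subset by blast
  then show ?thesis using restrict_distinct[OF s db] c by blast
qed

lemma el_split:
  assumes t: "t \<in> Ts" and i: "1 \<le> i" "i < n" and sp: "split t i A a b"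
    and s: "restrict (Si (i - 1)) b = Some s"
  shows "l (nat \<bar>oidx \<sigma> s\<bar>) \<in> cl b \<inter> Si (i - 1) \<and> nat \<bar>oidx \<sigma> s\<bar> < i"
proof -
  have f: "distinct (leaves s)" "inj_on \<sigma> (cl s)" "cl s = cl b \<inter> Si (i - 1)"
    using split_s_facts[OF t sp s] by auto
  obtain y where y: "y \<in> cl s" "int (\<sigma> y) = \<bar>oidx \<sigma> s\<bar>" using oidx_elem[OF f(2,1)] by blast
  have e: "nat \<bar>oidx \<sigma> s\<bar> = \<sigma> y" using y(2) by simp
  have yS: "y \<in> Si (i - 1)" using y(1) f(3) by blast
  then have "y \<in> L - {\<rho>}" using Si_sub by blast
  then have "l (\<sigma> y) = y" using lo_sig by blast
  moreover have "\<sigma> y < i" using Si_sig[OF yS] i by simp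
  ultimately show ?thesis using e y(1) f(3) by simp
qed

lemma idx_nonneg:
  assumes t: "t \<in> Ts" and i: "1 \<le> i" "i < n" and sp: "split t i A a b"
    and s: "restrict (Si (i - 1)) b = Some s" and c: "oidx \<sigma> s \<ge> 0"
  shows "cl b \<inter> Si (i - 1) = {l (nat (oidx \<sigma> s))}"
proof -
  have f: "distinct (leaves s)" "inj_on \<sigma> (cl s)" "cl s = cl b \<inter> Si (i - 1)"
    using split_s_facts[OF t sp s] by auto
  obtain y where sy: "s = Leaf y"
  proof (cases s)
    case (Node u1 u2)
    then show ?thesis using oidx_Node[of u1 u2 \<sigma>] f c by auto
  qed
  then have "y \<in> Si (i - 1)" using f(3) by auto
  then have "y \<in> L - {\<rho>}" using Si_sub by blast
  then have "l (\<sigma> y) = y" using lo_sig by blast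
  then show ?thesis using f(3) sy by simp
qed

lemma idx_neg:
  assumes t: "t \<in> Ts" and i: "1 \<le> i" "i < n" and sp: "split t i A a b"
    and s: "restrict (Si (i - 1)) b = Some s" and c: "oidx \<sigma> s < 0"
  shows "1 \<le> nat (- oidx \<sigma> s) \<and> nat (- oidx \<sigma> s) < i \<and>
    (\<exists>w wa wb. w \<in> subtrees b \<and> (w = Node wa wb \<or> w = Node wb wa) \<and> cl b \<inter> Si (i - 1) \<subseteq> cl w \<and>
      l (nat (- oidx \<sigma> s)) \<in> cl wa \<and> (\<forall>y\<in>cl wa \<inter> Si (i - 1). nat (- oidx \<sigma> s) \<le> \<sigma> y) \<and>
      split t (nat (- oidx \<sigma> s)) w wa wb)"
proof -
  define q where "q = nat (- oidx \<sigma> s)"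
  have f: "distinct (leaves s)" "inj_on \<sigma> (cl s)" "cl s = cl b \<inter> Si (i - 1)"
    using split_s_facts[OF t sp s] by auto
  obtain u1 u2 where su: "s = Node u1 u2"
    using c by (cases s) auto
  obtain wa0 wb0 where w0: "Node wa0 wb0 \<in> subtrees b" "restrict (Si (i - 1)) wa0 = Some u1"
    "restrict (Si (i - 1)) wb0 = Some u2" "cl b \<inter> Si (i - 1) \<subseteq> cl (Node wa0 wb0)"
    using restrict_Node s su by blast
  have bt: "b \<in> subtrees t" using split_sub sp by blast
  have w0t: "Node wa0 wb0 \<in> subtrees t" using w0(1) bt subtrees_trans by blast
  have dw0: "distinct (leaves (Node wa0 wb0))" using w0t tree_facts t distinct_subtree by blast
  have qd: "q = max (mu \<sigma> u1) (mu \<sigma> u2)" unfolding q_def using su by simp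
  have main: "1 \<le> q \<and> q < i \<and>
    (\<exists>w wa wb. w \<in> subtrees b \<and> (w = Node wa wb \<or> w = Node wb wa) \<and> cl b \<inter> Si (i - 1) \<subseteq> cl w \<and>
      l q \<in> cl wa \<and> (\<forall>y\<in>cl wa \<inter> Si (i - 1). q \<le> \<sigma> y) \<and> split t q w wa wb)"
    if mm: "Node wa0 wb0 = Node wa wb \<or> Node wa0 wb0 = Node wb wa"
       "restrict (Si (i - 1)) wa = Some ua" "restrict (Si (i - 1)) wb = Some ub"
       "mu \<sigma> ub < mu \<sigma> ua" "q = mu \<sigma> ua" for wa wb ua ub
  proof -
    have cua: "cl ua = cl wa \<inter> Si (i - 1)" "cl ub = cl wb \<inter> Si (i - 1)" using restrict_cl mm(2,3) by blast+
    obtain ya where ya: "ya \<in> cl ua" "\<sigma> ya = mu \<sigma> ua" using mu_in by (metis imageE)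
    obtain yb where yb: "yb \<in> cl ub" "\<sigma> yb = mu \<sigma> ub" using mu_in by (metis imageE)
    have yaS: "ya \<in> Si (i - 1)" "ya \<in> cl wa" using ya cua by auto
    have ybS: "yb \<in> Si (i - 1)" "yb \<in> cl wb" using yb cua by auto
    have lq: "l q = ya" using lo_sig yaS(1) Si_sub ya(2) mm(5) by (metis subsetD)
    have qi: "q < i" using Si_sig[OF yaS(1)] ya(2) mm(5) i by simp
    have q1: "1 \<le> q" using mm(4,5) by simp
    have geq: "\<forall>y\<in>cl wa \<inter> Si (i - 1). q \<le> \<sigma> y"
    proof
      fix y assume "y \<in> cl wa \<inter> Si (i - 1)"
      then have "y \<in> cl ua" using cua(1) by simp
      then show "q \<le> \<sigma> y" using mu_le mm(5) by metis
    qed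
    have wab: "cl wa \<inter> cl wb = {}" using dw0 mm(1) by auto
    have wt: "Node wa0 wb0 \<in> subtrees t" by (rule w0t)
    have qn: "q < n" using qi i by simp
    have sp2: "split t q (Node wa0 wb0) wa wb"
      unfolding split_def
    proof (intro conjI)
      show "Node wa0 wb0 \<in> subtrees t" by (rule wt)
      show "Node wa0 wb0 = Node wa wb \<or> Node wa0 wb0 = Node wb wa" by (rule mm(1))
      show "l q \<in> cl wa" using lq yaS by simp
      show "cl wa \<inter> Si q = {l q}"
      proof
        show "cl wa \<inter> Si q \<subseteq> {l q}"
        proof
          fix y assume y: "y \<in> cl wa \<inter> Si q"
          have "q \<le> i - 1" using qi by simp
          then have "y \<in> Si (i - 1)" using Si_mono[of q "i - 1"] y by blast
          then have "q \<le> \<sigma> y" using geq y by blast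
          moreover have "\<sigma> y \<le> q" using Si_sig y by blast
          ultimately have "\<sigma> y = q" by simp
          moreover have "y \<in> L - {\<rho>}" using y Si_sub by blast
          ultimately show "y \<in> {l q}" using lo_sig by force
        qed
        show "{l q} \<subseteq> cl wa \<inter> Si q" using lq yaS l_in_Si[OF qn] by simp
      qed
      show "cl wb \<inter> Si (q - 1) \<noteq> {}"
      proof -
        have "yb \<in> Si (q - 1)" using ybS(1) Si_sub yb(2) mm(4,5) unfolding Si_def by auto
        then show ?thesis using ybS(2) by blast
      qed
      show "\<forall>w\<in>subtrees t. l q \<in> cl w \<and> cl w \<inter> Si (q - 1) \<noteq> {} \<longrightarrow> Node wa0 wb0 \<in> subtrees w"
      proof (intro ballI impI)
        fix w' assume w': "w' \<in> subtrees t" "l q \<in> cl w' \<and> cl w' \<inter> Si (q - 1) \<noteq> {}"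
        have "l q \<in> cl (Node wa0 wb0)" using lq yaS mm(1) by auto
        then have "cl w' \<inter> cl (Node wa0 wb0) \<noteq> {}" using w'(2) by blast
        then have "w' \<in> subtrees (Node wa0 wb0) \<or> Node wa0 wb0 \<in> subtrees w'"
          using laminar tree_facts t w'(1) wt by blast
        then show "Node wa0 wb0 \<in> subtrees w'"
        proof
          assume a: "w' \<in> subtrees (Node wa0 wb0)"
          show ?thesis
          proof (rule ccontr)
            assume na: "Node wa0 wb0 \<notin> subtrees w'"
            then have "w' \<noteq> Node wa0 wb0" by auto
            then have "w' \<in> subtrees wa \<or> w' \<in> subtrees wb" using a mm(1) by auto
            then show False
            proof
              assume "w' \<in> subtrees wb"
              then have "l q \<in> cl wb" using w'(2) subtree_cl by blast
              then show False using wab lq yaS by blast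
            next
              assume "w' \<in> subtrees wa"
              then have cw: "cl w' \<subseteq> cl wa" using subtree_cl by blast
              obtain y where y: "y \<in> cl w'" "y \<in> Si (q - 1)" using w'(2) by blast
              have "q - 1 \<le> i - 1" using qi by simp
              then have "y \<in> Si (i - 1)" using y(2) Si_mono[of "q - 1" "i - 1"] by blast
              then have "q \<le> \<sigma> y" using geq y cw by blast
              moreover have "\<sigma> y \<le> q - 1" using Si_sig y(2) by blast
              ultimately show False using q1 by simp
            qed
          qed
        qed
      qed
    qed
    show ?thesis using q1 qi w0 mm(1) lq yaS geq sp2 by metis
  qed
  obtain y1 where y1: "y1 \<in> cl u1" "\<sigma> y1 = mu \<sigma> u1" using mu_in by (metis imageE)
  obtain y2 where y2: "y2 \<in> cl u2" "\<sigma> y2 = mu \<sigma> u2" using mu_in by (metis imageE)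
  have "y1 \<noteq> y2" using f(1) su y1 y2 by auto
  then have "mu \<sigma> u1 \<noteq> mu \<sigma> u2" using y1 y2 f(2) su inj_on_contraD by fastforce
  then have "(mu \<sigma> u2 < mu \<sigma> u1 \<and> q = mu \<sigma> u1) \<or> (mu \<sigma> u1 < mu \<sigma> u2 \<and> q = mu \<sigma> u2)"
    using qd by linarith
  then have "1 \<le> q \<and> q < i \<and>
    (\<exists>w wa wb. w \<in> subtrees b \<and> (w = Node wa wb \<or> w = Node wb wa) \<and> cl b \<inter> Si (i - 1) \<subseteq> cl w \<and>
      l q \<in> cl wa \<and> (\<forall>y\<in>cl wa \<inter> Si (i - 1). q \<le> \<sigma> y) \<and> split t q w wa wb)"
  proof
    assume "mu \<sigma> u2 < mu \<sigma> u1 \<and> q = mu \<sigma> u1"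
    then show ?thesis using main[of wa0 wb0 u1 u2] w0 by blast
  next
    assume "mu \<sigma> u1 < mu \<sigma> u2 \<and> q = mu \<sigma> u2"
    then show ?thesis using main[of wb0 wa0 u2 u1] w0 by blast
  qed
  then show ?thesis unfolding q_def .
qed

end


lemma restrict_subtree_mono:
  "w \<in> subtrees t \<Longrightarrow> restrict K t = Some u \<Longrightarrow> restrict K w = Some z \<Longrightarrow> z \<in> subtrees u"
proof (induction t arbitrary: u)
  case (Leaf y) then show ?case by auto
next
  case (Node l r)
  have cw: "cl w \<inter> K \<noteq> {}" using Node.prems(3) restrict_None by (metis option.distinct(1))
  show ?case
  proof (cases "w = Node l r")
    case True then show ?thesis using Node.prems by simp
  next
    case False
    then have "w \<in> subtrees l \<or> w \<in> subtrees r" using Node.prems(1) by auto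
    then show ?thesis
    proof
      assume wl: "w \<in> subtrees l"
      then have "cl l \<inter> K \<noteq> {}" using cw subtree_cl by blast
      then obtain ul where ul: "restrict K l = Some ul" using restrict_None by (metis not_Some_eq)
      have "z \<in> subtrees ul" using Node.IH(1)[OF wl ul Node.prems(3)] .
      moreover have "u = ul \<or> (\<exists>ur. u = Node ul ur)" using Node.prems(2) ul by (auto split: option.splits)
      ultimately show ?thesis by auto
    next
      assume wr: "w \<in> subtrees r"
      then have "cl r \<inter> K \<noteq> {}" using cw subtree_cl by blast
      then obtain ur where ur: "restrict K r = Some ur" using restrict_None by (metis not_Some_eq)
      have "z \<in> subtrees ur" using Node.IH(2)[OF wr ur Node.prems(3)] .
      moreover have "u = ur \<or> (\<exists>ul. u = Node ul ur)" using Node.prems(2) ur by (auto split: option.splits)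
      ultimately show ?thesis by auto
    qed
  qed
qed

declare mismatch_upto.simps(2)[simp del]

locale settingA = setting +
  fixes t0 assumes t0: "t0 \<in> Ts"
begin

abbreviation M :: "nat \<Rightarrow> nat set" where "M i \<equiv> mismatch_upto \<rho> L Ts \<sigma> i"

abbreviation ol :: "'a btree \<Rightarrow> nat \<Rightarrow> int" where "ol t i \<equiv> ola \<rho> L \<sigma> t i"

definition par :: "nat \<Rightarrow> nat" where "par j = nat \<bar>ol t0 j\<bar>"

definition cnd :: "nat \<Rightarrow> bool" where
  "cnd i \<longleftrightarrow> (\<exists>t\<in>Ts. \<exists>t'\<in>Ts. ol t (Suc i) \<noteq> ol t' (Suc i)) \<or>
         (\<exists>j\<in>M i. \<forall>t\<in>Ts. ol t (Suc i) = - int j)"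

lemma M_Suc_eq: "M (Suc i) = (if cnd i then insert (Suc i) (M i) else M i)"
  by (simp only: mismatch_upto.simps cnd_def)

lemma M_sub: "M i \<subseteq> {1..i}"
proof (induction i)
  case 0 then show ?case by simp
next
  case (Suc i)
  have "M (Suc i) \<subseteq> insert (Suc i) (M i)" using M_Suc_eq[of i] by (cases "cnd i") auto
  moreover have "insert (Suc i) (M i) \<subseteq> {1..Suc i}" using Suc by auto
  ultimately show ?case by (rule order_trans)
qed

lemma M_step: "M i \<subseteq> M (Suc i)"
  using M_Suc_eq[of i] by (cases "cnd i") auto

lemma M_mono: "i \<le> j \<Longrightarrow> M i \<subseteq> M j"
proof (induction j)
  case 0 then show ?case by simp
next
  case (Suc j)
  show ?case
  proof (cases "i = Suc j")
    case True then show ?thesis by simp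
  next
    case False
    then have "i \<le> j" using Suc.prems by simp
    then show ?thesis using Suc.IH M_step[of j] by blast
  qed
qed

lemma M_Suc_notin: "Suc i \<notin> M (Suc i) \<Longrightarrow> M (Suc i) = M i \<and>
   (\<forall>t\<in>Ts. \<forall>t'\<in>Ts. ol t (Suc i) = ol t' (Suc i)) \<and>
   (\<forall>j\<in>M i. \<not> (\<forall>t\<in>Ts. ol t (Suc i) = - int j))"
proof -
  assume a: "Suc i \<notin> M (Suc i)"
  then have "\<not> cnd i" using M_Suc_eq[of i] by (cases "cnd i") auto
  moreover then have "M (Suc i) = M i" using M_Suc_eq[of i] by simp
  ultimately show ?thesis unfolding cnd_def by blast
qed

lemma M_Suc_in: "Suc i \<in> M (Suc i) \<Longrightarrow> M (Suc i) = insert (Suc i) (M i) \<and> Suc i \<notin> M i"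
proof -
  assume a: "Suc i \<in> M (Suc i)"
  have "Suc i \<notin> M i" using M_sub[of i] by auto
  then have "cnd i" using a M_Suc_eq[of i] by (cases "cnd i") auto
  then show ?thesis using M_Suc_eq[of i] \<open>Suc i \<notin> M i\<close> by simp
qed

lemma notM_agree: "1 \<le> j \<Longrightarrow> j \<le> i \<Longrightarrow> j \<notin> M i \<Longrightarrow> t \<in> Ts \<Longrightarrow> ol t j = ol t0 j"
proof -
  assume j: "1 \<le> j" "j \<le> i" "j \<notin> M i" "t \<in> Ts"
  obtain j' where j': "j = Suc j'" using j(1) by (cases j) auto
  have "j \<notin> M j" using M_mono[OF j(2)] j(3) by blast
  then show ?thesis using M_Suc_notin[of j'] j' j(4) t0 by blast
qed

definition Inv :: "nat \<Rightarrow> 'a set set \<Rightarrow> bool" where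
  "Inv i P \<longleftrightarrow> finite P \<and> (\<forall>X\<in>P. X \<noteq> {}) \<and> (\<forall>X\<in>P. \<forall>Y\<in>P. X \<noteq> Y \<longrightarrow> X \<inter> Y = {}) \<and>
     \<Union>P = insert \<rho> (Si i) \<and> card P = card (M i) + 1 \<and> (\<exists>X\<in>P. \<rho> \<in> X \<and> l 0 \<in> X) \<and>
     (\<forall>j. 1 \<le> j \<and> j \<le> i \<and> j \<notin> M i \<longrightarrow> (\<exists>X\<in>P. l j \<in> X \<and> l (par j) \<in> X)) \<and>
     (\<forall>X\<in>P. \<forall>t1\<in>Ts. \<forall>t2\<in>Ts. rel_option biso (restrict X t1) (restrict X t2)) \<and>
     (\<forall>X\<in>P. \<forall>Y\<in>P. X \<noteq> Y \<longrightarrow> (\<forall>t\<in>Ts. \<forall>w\<in>subtrees t.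
        \<not> (cl w \<inter> X \<noteq> {} \<and> cl w \<inter> Y \<noteq> {} \<and> cl w \<inter> Si i \<subseteq> Hu t X \<inter> Hu t Y))) \<and>
     (\<forall>X\<in>P. \<rho> \<notin> X \<longrightarrow> (\<forall>t\<in>Ts. \<forall>y\<in>Hu t X \<inter> Si i. Min (\<sigma> ` X) \<le> \<sigma> y))"

lemma n_pos: "0 < n"
proof -
  have "cl t0 = L - {\<rho>}" using tree_facts t0 by blast
  then have "L - {\<rho>} \<noteq> {}" using cl_ne by metis
  then show ?thesis unfolding n_def using finL by (simp add: card_gt_0_iff)
qed

lemma Si0: "Si 0 = {l 0}"
proof -
  have "l 0 \<in> Si 0" using l_in_Si n_pos by blast
  moreover have "x \<in> Si 0 \<Longrightarrow> x = l 0" for x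
    using lo_sig Si_sig Si_sub by (metis le_zero_eq subsetD)
  ultimately show ?thesis by blast
qed

lemma Inv_base: "Inv 0 {{\<rho>, l 0}}"
proof -
  have r: "restrict {\<rho>, l 0} t = Some (Leaf (l 0))" if "t \<in> Ts" for t
  proof -
    have "cl t = L - {\<rho>}" "distinct (leaves t)" using tree_facts that by auto
    moreover have "l 0 \<in> L - {\<rho>}" using lo_in n_pos by blast
    ultimately have "cl t \<inter> {\<rho>, l 0} = {l 0}" by blast
    then show ?thesis using restrict_single[OF \<open>distinct (leaves t)\<close>] by blast
  qed
  show ?thesis unfolding Inv_def using r Si0 by auto
qed

end


context settingA
begin

lemma InvD1: "Inv i P \<Longrightarrow> (finite P)"
  unfolding Inv_def by (elim conjE) assumption

lemma InvD2: "Inv i P \<Longrightarrow> (\<forall>X\<in>P. X \<noteq> {})"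
  unfolding Inv_def by (elim conjE) assumption

lemma InvD3: "Inv i P \<Longrightarrow> (\<forall>X\<in>P. \<forall>Y\<in>P. X \<noteq> Y \<longrightarrow> X \<inter> Y = {})"
  unfolding Inv_def by (elim conjE) assumption

lemma InvD4: "Inv i P \<Longrightarrow> (\<Union>P = insert \<rho> (Si i))"
  unfolding Inv_def by (elim conjE) assumption

lemma InvD5: "Inv i P \<Longrightarrow> (card P = card (M i) + 1)"
  unfolding Inv_def by (elim conjE) assumption

lemma InvD6: "Inv i P \<Longrightarrow> (\<exists>X\<in>P. \<rho> \<in> X \<and> l 0 \<in> X)"
  unfolding Inv_def by (elim conjE) assumption

lemma InvD7: "Inv i P \<Longrightarrow> (\<forall>j. 1 \<le> j \<and> j \<le> i \<and> j \<notin> M i \<longrightarrow> (\<exists>X\<in>P. l j \<in> X \<and> l (par j) \<in> X))"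
  unfolding Inv_def by (elim conjE) assumption

lemma InvD8: "Inv i P \<Longrightarrow> (\<forall>X\<in>P. \<forall>t1\<in>Ts. \<forall>t2\<in>Ts. rel_option biso (restrict X t1) (restrict X t2))"
  unfolding Inv_def by (elim conjE) assumption

lemma InvD9: "Inv i P \<Longrightarrow> (\<forall>X\<in>P. \<forall>Y\<in>P. X \<noteq> Y \<longrightarrow> (\<forall>t\<in>Ts. \<forall>w\<in>subtrees t.
        \<not> (cl w \<inter> X \<noteq> {} \<and> cl w \<inter> Y \<noteq> {} \<and> cl w \<inter> Si i \<subseteq> Hu t X \<inter> Hu t Y)))"
  unfolding Inv_def by (elim conjE) assumption

lemma InvD10: "Inv i P \<Longrightarrow> (\<forall>X\<in>P. \<rho> \<notin> X \<longrightarrow> (\<forall>t\<in>Ts. \<forall>y\<in>Hu t X \<inter> Si i. Min (\<sigma> ` X) \<le> \<sigma> y))"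
  unfolding Inv_def by (elim conjE) assumption

lemmas InvD = InvD1 InvD2 InvD3 InvD4 InvD5 InvD6 InvD7 InvD8 InvD9 InvD10

lemma Inv_parts: "Inv i P \<Longrightarrow> X \<in> P \<Longrightarrow> X \<subseteq> insert \<rho> (Si i)"
  using InvD(4) by blast

lemma Inv_same: "Inv i P \<Longrightarrow> X \<in> P \<Longrightarrow> Y \<in> P \<Longrightarrow> y \<in> X \<Longrightarrow> y \<in> Y \<Longrightarrow> X = Y"
  using InvD(3) by blast

lemma keyA:
  assumes inv: "Inv i P" and k: "Suc i < n" and nm: "Suc i \<notin> M (Suc i)" and t: "t \<in> Ts"
    and sp: "split t (Suc i) A a b" and s: "restrict (Si i) b = Some s"
    and X0: "X0 \<in> P" "l (par (Suc i)) \<in> X0"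
  shows "(\<forall>w'\<in>subtrees t. X0 - {\<rho>} \<subseteq> cl w' \<longrightarrow> cl b \<inter> Si i \<subseteq> cl w') \<and>
         (\<exists>z. restrict X0 b = Some z \<and> oidx \<sigma> z = ol t0 (Suc i)) \<and>
         l (par (Suc i)) \<in> cl b \<inter> Si i"
proof -
  have k1: "1 \<le> Suc i" by simp
  have si: "Si (Suc i - 1) = Si i" by simp
  have s': "restrict (Si (Suc i - 1)) b = Some s" using s by simp
  have agree: "ol t (Suc i) = ol t0 (Suc i)" using notM_agree[OF k1 le_refl nm t] .
  have c: "ol t (Suc i) = oidx \<sigma> s" using ola_of_split[OF t k1 k sp s'] .
  define c where "c = oidx \<sigma> s"
  have pc: "par (Suc i) = nat \<bar>c\<bar>" unfolding par_def c_def using agree c by simp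
  have el: "l (par (Suc i)) \<in> cl b \<inter> Si i" "par (Suc i) < Suc i"
    using el_split[OF t k1 k sp s'] pc unfolding c_def by auto
  have bt: "b \<in> subtrees t" using split_sub sp by blast
  have db: "distinct (leaves b)" using bt tree_facts t distinct_subtree by blast
  have rb: "\<rho> \<notin> cl b" using no_rho_sub[OF t bt] .
  have X0s: "X0 \<subseteq> insert \<rho> (Si i)" using Inv_parts[OF inv X0(1)] .
  have lpL: "l (par (Suc i)) \<in> L - {\<rho>}" using el(1) Si_sub by blast
  show ?thesis
  proof (cases "c \<ge> 0")
    case True
    have cb: "cl b \<inter> Si i = {l (nat c)}" using idx_nonneg[OF t k1 k sp s'] True unfolding c_def by simp
    have pn: "par (Suc i) = nat c" using pc True by simp
    have A: "\<forall>w'\<in>subtrees t. X0 - {\<rho>} \<subseteq> cl w' \<longrightarrow> cl b \<inter> Si i \<subseteq> cl w'"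
      using cb pn X0(2) lpL by auto
    have s1: "cl b \<inter> X0 \<subseteq> cl b \<inter> Si i" using X0s rb by blast
    have s2: "l (nat c) \<in> cl b \<inter> X0" using el(1) X0(2) pn by simp
    have "cl b \<inter> X0 = {l (nat c)}" using s1 s2 cb by blast
    then have rz: "restrict X0 b = Some (Leaf (l (nat c)))" using restrict_single[OF db] by blast
    have "nat c < n" using el(2) pn k by simp
    then have "oidx \<sigma> (Leaf (l (nat c))) = c" using lo_in True by simp
    then show ?thesis using A rz el(1) agree c unfolding c_def by auto
  next
    case False
    then have cn: "oidx \<sigma> s < 0" unfolding c_def by simp
    define q where "q = nat (- c)"
    have qp: "par (Suc i) = q" using pc False unfolding q_def by simp
    obtain w wa wb where W: "1 \<le> q" "q < Suc i" "w \<in> subtrees b" "w = Node wa wb \<or> w = Node wb wa"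
        "cl b \<inter> Si i \<subseteq> cl w" "l q \<in> cl wa" "\<forall>y\<in>cl wa \<inter> Si i. q \<le> \<sigma> y" "split t q w wa wb"
      using idx_neg[OF t k1 k sp s' cn] unfolding q_def c_def by auto
    have qn: "q < n" using W(2) k by simp
    have cq: "c = - int q" unfolding q_def using False by simp
    have qM: "q \<notin> M i"
    proof
      assume "q \<in> M i"
      moreover have "\<forall>t\<in>Ts. ol t (Suc i) = - int q"
        using notM_agree[OF k1 le_refl nm] agree c cq unfolding c_def by simp
      ultimately show False using M_Suc_notin[OF nm] by blast
    qed
    have qi: "q \<le> i" using W(2) by simp
    obtain X where X: "X \<in> P" "l q \<in> X" "l (par q) \<in> X"
      using InvD(7)[OF inv] qM W(1) qi by blast
    have "X = X0" using Inv_same[OF inv X(1) X0(1) X(2)] X0(2) qp by simp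
    have agq: "ol t q = ol t0 q" using notM_agree[OF W(1) qi qM t] .
    have "cl wb \<inter> Si (q - 1) \<noteq> {}" using W(8) unfolding split_def by blast
    then obtain sq where sq: "restrict (Si (q - 1)) wb = Some sq" using restrict_None by (metis not_Some_eq)
    have oq: "ol t q = oidx \<sigma> sq" using ola_of_split[OF t W(1) qn W(8) sq] .
    have elq: "l (nat \<bar>oidx \<sigma> sq\<bar>) \<in> cl wb \<inter> Si (q - 1)" using el_split[OF t W(1) qn W(8) sq] by blast
    define yb where "yb = l (par q)"
    have yb: "yb \<in> cl wb" "yb \<in> Si (q - 1)" "yb \<in> X0"
      using elq oq agq X \<open>X = X0\<close> unfolding yb_def par_def by auto
    have ybq: "\<sigma> yb < q" using Si_sig[OF yb(2)] W(1) by simp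
    have wt: "w \<in> subtrees t" using W(3) bt subtrees_trans by blast
    have dw: "distinct (leaves w)" using wt tree_facts t distinct_subtree by blast
    have wab: "cl wa \<inter> cl wb = {}" using dw W(4) by auto
    have lqX: "l q \<in> X0" using X \<open>X = X0\<close> by simp
    have lqL: "l q \<in> L - {\<rho>}" using lo_in qn by blast
    have ybL: "yb \<in> L - {\<rho>}" using yb(2) Si_sub by blast
    have A: "\<forall>w'\<in>subtrees t. X0 - {\<rho>} \<subseteq> cl w' \<longrightarrow> cl b \<inter> Si i \<subseteq> cl w'"
    proof (intro ballI impI)
      fix w' assume w': "w' \<in> subtrees t" "X0 - {\<rho>} \<subseteq> cl w'"
      have in': "l q \<in> cl w'" "yb \<in> cl w'" using w'(2) lqX yb(3) lqL ybL by auto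
      have "l q \<in> cl w" using W(4,6) by auto
      then have "cl w \<inter> cl w' \<noteq> {}" using in' by blast
      then have "w \<in> subtrees w' \<or> w' \<in> subtrees w" using laminar tree_facts t wt w'(1) by blast
      then show "cl b \<inter> Si i \<subseteq> cl w'"
      proof
        assume "w \<in> subtrees w'"
        then show ?thesis using W(5) subtree_cl by blast
      next
        assume a: "w' \<in> subtrees w"
        show ?thesis
        proof (cases "w' = w")
          case True then show ?thesis using W(5) by simp
        next
          case False
          then have "w' \<in> subtrees wa \<or> w' \<in> subtrees wb" using a W(4) by auto
          then show ?thesis
          proof
            assume "w' \<in> subtrees wa"
            then have "yb \<in> cl wa" using in' subtree_cl by blast
            then show ?thesis using yb(1) wab by blast
          next
            assume "w' \<in> subtrees wb"
            then have "l q \<in> cl wb" using in' subtree_cl by blast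
            then show ?thesis using W(6) wab by blast
          qed
        qed
      qed
    qed
    have "cl b \<inter> X0 \<subseteq> cl w" using W(5) X0s rb by blast
    then have rbw: "restrict X0 b = restrict X0 w" using restrict_sub[OF db W(3)] by blast
    have "cl wa \<inter> X0 \<noteq> {}" using W(6) lqX by blast
    then obtain ua where ua: "restrict X0 wa = Some ua" using restrict_None by (metis not_Some_eq)
    have "cl wb \<inter> X0 \<noteq> {}" using yb by blast
    then obtain ub where ub: "restrict X0 wb = Some ub" using restrict_None by (metis not_Some_eq)
    have cua: "cl ua = cl wa \<inter> X0" "cl ub = cl wb \<inter> X0" using restrict_cl ua ub by blast+
    have rwa: "\<rho> \<notin> cl wa" using no_rho_sub t wt W(4) by (metis UnCI subsetD subtree_cl leaves.simps(2) set_append)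
    have mua: "mu \<sigma> ua = q"
    proof (rule antisym)
      show "mu \<sigma> ua \<le> q" using mu_le[of "l q" ua \<sigma>] cua(1) W(6) lqX lo_in qn by auto
      obtain y where y: "y \<in> cl ua" "\<sigma> y = mu \<sigma> ua" using mu_in by (metis imageE)
      then have "y \<in> cl wa \<inter> Si i" using cua(1) X0s rwa by blast
      then show "q \<le> mu \<sigma> ua" using W(7) y(2) by metis
    qed
    have mub: "mu \<sigma> ub < q" using mu_le[of yb ub \<sigma>] cua(2) yb ybq by auto
    have "restrict X0 w = Some (Node ua ub) \<or> restrict X0 w = Some (Node ub ua)"
      using W(4) ua ub by auto
    moreover have "oidx \<sigma> (Node ua ub) = c" "oidx \<sigma> (Node ub ua) = c"
      using mua mub cq by auto
    ultimately have "\<exists>z. restrict X0 b = Some z \<and> oidx \<sigma> z = c" using rbw by auto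
    then show ?thesis using A el(1) agree c unfolding c_def by simp
  qed
qed

end


context settingA
begin

lemma InvI:
  assumes "finite P" "\<forall>X\<in>P. X \<noteq> {}" "\<forall>X\<in>P. \<forall>Y\<in>P. X \<noteq> Y \<longrightarrow> X \<inter> Y = {}"
     "\<Union>P = insert \<rho> (Si i)" "card P = card (M i) + 1" "\<exists>X\<in>P. \<rho> \<in> X \<and> l 0 \<in> X"
     "\<forall>j. 1 \<le> j \<and> j \<le> i \<and> j \<notin> M i \<longrightarrow> (\<exists>X\<in>P. l j \<in> X \<and> l (par j) \<in> X)"
     "\<forall>X\<in>P. \<forall>t1\<in>Ts. \<forall>t2\<in>Ts. rel_option biso (restrict X t1) (restrict X t2)"
     "\<forall>X\<in>P. \<forall>Y\<in>P. X \<noteq> Y \<longrightarrow> (\<forall>t\<in>Ts. \<forall>w\<in>subtrees t.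
        \<not> (cl w \<inter> X \<noteq> {} \<and> cl w \<inter> Y \<noteq> {} \<and> cl w \<inter> Si i \<subseteq> Hu t X \<inter> Hu t Y))"
     "\<forall>X\<in>P. \<rho> \<notin> X \<longrightarrow> (\<forall>t\<in>Ts. \<forall>y\<in>Hu t X \<inter> Si i. Min (\<sigma> ` X) \<le> \<sigma> y)"
  shows "Inv i P"
  apply (insert assms)
  apply (unfold Inv_def)
  apply (intro conjI)
  apply assumption+
  done

lemma Hu_intro: "\<rho> \<notin> X \<Longrightarrow> (\<And>w. w \<in> subtrees t \<Longrightarrow> X \<subseteq> cl w \<Longrightarrow> y \<in> cl w) \<Longrightarrow> y \<in> Hu t X"
  unfolding Hu_def by auto

lemma split_at:
  assumes "t \<in> Ts" "Suc i < n"
  shows "\<exists>A a b s. split t (Suc i) A a b \<and> restrict (Si i) b = Some s \<and> ol t (Suc i) = oidx \<sigma> s"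
proof -
  have "1 \<le> Suc i" by simp
  from ola_split[OF assms(1) this assms(2)] show ?thesis by (simp only: diff_Suc_1)
qed

lemma Hu_single:
  assumes t: "t \<in> Ts" and x: "x \<in> L - {\<rho>}"
  shows "Hu t {x} = {x}"
proof -
  have "x \<in> cl t" using x tree_facts[OF t] by simp
  then have lt: "Leaf x \<in> subtrees t" using leaf_in_subtrees[of x t] by simp
  have rx: "\<rho> \<notin> {x}" using x by auto
  have xs: "{x} \<subseteq> cl (Leaf x)" by simp
  have "Hu t {x} \<subseteq> cl (Leaf x)" using Hu_sub[OF rx lt xs] .
  then have "Hu t {x} \<subseteq> {x}" by simp
  then show ?thesis using X_Hu[of "{x}" t] by blast
qed

lemma Inv_step_nomis:
  assumes inv: "Inv i P" and k: "Suc i < n" and nm: "Suc i \<notin> M (Suc i)"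
  shows "\<exists>P'. Inv (Suc i) P'"
proof -
  define x where "x = l (Suc i)"
  define p where "p = par (Suc i)"
  have xL: "x \<in> L - {\<rho>}" "\<sigma> x = Suc i" using lo_in k unfolding x_def by auto
  have xS: "x \<notin> Si i" using l_notin_prev[OF k] unfolding x_def by simp
  have SS: "Si (Suc i) = insert x (Si i)" using Si_Suc[OF k] unfolding x_def by simp
  have MM: "M (Suc i) = M i" using M_Suc_notin[OF nm] by blast
  have UP: "\<Union>P = insert \<rho> (Si i)" using InvD4[OF inv] .
  have xnot: "\<forall>Y\<in>P. x \<notin> Y" using UP xL xS by blast
  obtain A a b s where sp0: "split t0 (Suc i) A a b" "restrict (Si i) b = Some s" "ol t0 (Suc i) = oidx \<sigma> s"
    using split_at[OF t0 k] by blast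
  have "l (nat \<bar>oidx \<sigma> s\<bar>) \<in> cl b \<inter> Si i" using el_split[OF t0 _ k sp0(1)] sp0(2) by simp
  then have lpS: "l p \<in> Si i" using sp0(3) unfolding p_def par_def by simp
  then obtain X0 where X0: "X0 \<in> P" "l p \<in> X0" using UP by blast
  have X0s: "X0 \<subseteq> insert \<rho> (Si i)" using Inv_parts[OF inv X0(1)] .
  have xX0: "x \<notin> X0" using xnot X0 by blast
  define N where "N = insert x X0"
  define P' where "P' = insert N (P - {X0})"
  have finP: "finite P" using InvD1[OF inv] .
  have NP: "N \<notin> P" using xnot unfolding N_def by blast
  have NX0: "N \<noteq> X0" using xX0 unfolding N_def by blast
  have data: "\<exists>A a b z. split t (Suc i) A a b \<and> restrict X0 b = Some z \<and> oidx \<sigma> z = ol t0 (Suc i) \<and>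
      (\<forall>w'\<in>subtrees t. X0 - {\<rho>} \<subseteq> cl w' \<longrightarrow> cl b \<inter> Si i \<subseteq> cl w') \<and> l p \<in> cl b \<inter> Si i"
    if t: "t \<in> Ts" for t
  proof -
    obtain A a b s where sp: "split t (Suc i) A a b" "restrict (Si i) b = Some s"
      using split_at[OF t k] by blast
    show ?thesis using keyA[OF inv k nm t sp X0(1)] X0(2) sp(1) unfolding p_def by blast
  qed
  have H1: "Hu t N \<inter> Si i \<subseteq> Hu t X0" if t: "t \<in> Ts" for t
  proof (cases "\<rho> \<in> X0")
    case True then show ?thesis unfolding Hu_def by simp
  next
    case False
    then have rN: "\<rho> \<notin> N" using xL unfolding N_def by auto
    obtain A a b z where D: "split t (Suc i) A a b" "restrict X0 b = Some z"
      "\<forall>w'\<in>subtrees t. X0 - {\<rho>} \<subseteq> cl w' \<longrightarrow> cl b \<inter> Si i \<subseteq> cl w'" "l p \<in> cl b \<inter> Si i"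
      using data[OF t] by blast
    have At: "A \<in> subtrees t" and Aab: "A = Node a b \<or> A = Node b a" and xa: "x \<in> cl a"
      and caS: "cl a \<inter> Si (Suc i) = {x}"
      using D(1) unfolding split_def x_def by auto
    have dA: "distinct (leaves A)" using At tree_facts t distinct_subtree by blast
    have ab: "cl a \<inter> cl b = {}" using dA Aab by auto
    have clA: "cl A = cl a \<union> cl b" using Aab by auto
    show ?thesis
    proof
      fix y assume y: "y \<in> Hu t N \<inter> Si i"
      show "y \<in> Hu t X0"
      proof (rule Hu_intro[OF False])
        fix w' assume w'0: "w' \<in> subtrees t" "X0 \<subseteq> cl w'"
        then have w': "w' \<in> subtrees t \<and> X0 \<subseteq> cl w'" by blast
        show "y \<in> cl w'"
        proof (cases "x \<in> cl w'")
          case True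
          then have "N \<subseteq> cl w'" using w' unfolding N_def by blast
          then have "Hu t N \<subseteq> cl w'" using Hu_sub[OF rN] w' by blast
          then show ?thesis using y by blast
        next
          case False
          have cbw: "cl b \<inter> Si i \<subseteq> cl w'" using D(3) w' by blast
          have "l p \<in> cl w'" using X0(2) w' by blast
          moreover have "l p \<in> cl A" using D(4) clA by blast
          ultimately have "cl A \<inter> cl w' \<noteq> {}" by blast
          then have "A \<in> subtrees w' \<or> w' \<in> subtrees A" using laminar tree_facts t At w' by blast
          moreover have "A \<notin> subtrees w'" using False xa clA subtree_cl by blast
          ultimately have wA: "w' \<in> subtrees A" by blast
          have "w' \<noteq> A" using False xa clA by blast
          then have "w' \<in> subtrees a \<or> w' \<in> subtrees b" using wA Aab by auto
          moreover have "w' \<notin> subtrees a" using subtree_cl D(4) ab \<open>l p \<in> cl w'\<close> by blast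
          ultimately have "w' \<in> subtrees b" by blast
          then have "X0 \<subseteq> cl b" using w' subtree_cl by blast
          then have "N \<subseteq> cl A" using xa clA unfolding N_def by blast
          then have "Hu t N \<subseteq> cl A" using Hu_sub[OF rN At] by blast
          then have "y \<in> cl A" using y by blast
          moreover have "y \<notin> cl a"
          proof
            assume ya: "y \<in> cl a"
            have "y \<in> Si (Suc i)" using y SS by blast
            then have "y \<in> cl a \<inter> Si (Suc i)" using ya by blast
            then have "y = x" using caS by blast
            then show False using y xS by blast
          qed
          ultimately have "y \<in> cl b \<inter> Si i" using clA y by blast
          then show ?thesis using cbw by blast
        qed
      qed
    qed
  qed
  have meet: "l p \<in> cl w" if t: "t \<in> Ts" and w: "w \<in> subtrees t" and xw: "x \<in> cl w"
    and Y: "Y \<in> P" "cl w \<inter> Y \<noteq> {}" for t w Y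
  proof -
    obtain A a b z where D: "split t (Suc i) A a b" "l p \<in> cl b \<inter> Si i"
      using data[OF t] by blast
    have "Y \<subseteq> insert \<rho> (Si i)" using Inv_parts[OF inv Y(1)] .
    moreover have "\<rho> \<notin> cl w" using no_rho_sub t w by blast
    ultimately have "cl w \<inter> Si (Suc i - 1) \<noteq> {}" using Y(2) by auto
    then have "A \<in> subtrees w" using D(1) w xw unfolding split_def x_def by blast
    moreover have "b \<in> subtrees A" using D(1) unfolding split_def by auto
    ultimately have "cl b \<subseteq> cl w" using subtree_cl subtrees_trans by blast
    then show ?thesis using D(2) by blast
  qed
  have G1: "finite P'" unfolding P'_def using finP by simp
  have G2: "\<forall>X\<in>P'. X \<noteq> {}" using InvD2[OF inv] unfolding P'_def N_def by auto
  have G3: "\<forall>X\<in>P'. \<forall>Y\<in>P'. X \<noteq> Y \<longrightarrow> X \<inter> Y = {}"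
  proof (intro ballI impI)
    fix X Y assume XY: "X \<in> P'" "Y \<in> P'" "X \<noteq> Y"
    have D: "\<forall>X\<in>P. \<forall>Y\<in>P. X \<noteq> Y \<longrightarrow> X \<inter> Y = {}" using InvD3[OF inv] .
    show "X \<inter> Y = {}"
    proof (cases "X = N")
      case True
      then have "Y \<in> P" "Y \<noteq> X0" using XY unfolding P'_def by auto
      then show ?thesis using True D X0(1) xnot unfolding N_def by blast
    next
      case False
      then have X: "X \<in> P" "X \<noteq> X0" using XY unfolding P'_def by auto
      show ?thesis
      proof (cases "Y = N")
        case True
        then show ?thesis using X D X0(1) xnot unfolding N_def by blast
      next
        case False
        then have "Y \<in> P" using XY unfolding P'_def by auto
        then show ?thesis using X D XY(3) by blast
      qed
    qed
  qed
  have G4: "\<Union>P' = insert \<rho> (Si (Suc i))"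
  proof -
    have "\<Union>P' = N \<union> \<Union>(P - {X0})" unfolding P'_def by simp
    also have "\<dots> = insert x (X0 \<union> \<Union>(P - {X0}))" unfolding N_def by simp
    also have "X0 \<union> \<Union>(P - {X0}) = \<Union>P" using X0(1) by blast
    finally show ?thesis using UP SS by (simp add: insert_commute)
  qed
  have G5: "card P' = card (M (Suc i)) + 1"
  proof -
    have "card P' = card (P - {X0}) + 1" unfolding P'_def using NP finP by simp
    also have "\<dots> = card P" using X0(1) finP card_Diff1_less
      by (metis Suc_eq_plus1 card_Suc_Diff1)
    finally show ?thesis using InvD5[OF inv] MM by simp
  qed
  have G6: "\<exists>X\<in>P'. \<rho> \<in> X \<and> l 0 \<in> X"
  proof -
    obtain X where X: "X \<in> P" "\<rho> \<in> X" "l 0 \<in> X" using InvD6[OF inv] by blast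
    show ?thesis
    proof (cases "X = X0")
      case True then show ?thesis using X unfolding P'_def N_def by auto
    next
      case False then show ?thesis using X unfolding P'_def by auto
    qed
  qed
  have G7: "\<forall>j. 1 \<le> j \<and> j \<le> Suc i \<and> j \<notin> M (Suc i) \<longrightarrow> (\<exists>X\<in>P'. l j \<in> X \<and> l (par j) \<in> X)"
  proof (intro allI impI)
    fix j assume j: "1 \<le> j \<and> j \<le> Suc i \<and> j \<notin> M (Suc i)"
    show "\<exists>X\<in>P'. l j \<in> X \<and> l (par j) \<in> X"
    proof (cases "j = Suc i")
      case True
      then show ?thesis using X0(2) unfolding P'_def N_def x_def p_def by auto
    next
      case False
      then have "j \<le> i" "j \<notin> M i" using j MM by auto
      then obtain X where X: "X \<in> P" "l j \<in> X" "l (par j) \<in> X" using InvD7[OF inv] j by blast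
      show ?thesis
      proof (cases "X = X0")
        case True then show ?thesis using X unfolding P'_def N_def by auto
      next
        case False then show ?thesis using X unfolding P'_def by auto
      qed
    qed
  qed
  have isoN: "rel_option biso (restrict N t1) (restrict N t2)" if t12: "t1 \<in> Ts" "t2 \<in> Ts" for t1 t2
  proof -
    have one: "\<exists>u z v. restrict X0 t = Some u \<and> restrict N t = Some v \<and>
        biso v (ins x z u) \<and> oidx \<sigma> z = ol t0 (Suc i) \<and> z \<in> subtrees u" if t: "t \<in> Ts" for t
    proof -
      obtain A a b z where D: "split t (Suc i) A a b" "restrict X0 b = Some z" "oidx \<sigma> z = ol t0 (Suc i)"
        "l p \<in> cl b \<inter> Si i"
        using data[OF t] by blast
      have At: "A \<in> subtrees t" and Aab: "A = Node a b \<or> A = Node b a" and xa: "x \<in> cl a"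
        and caS: "cl a \<inter> Si (Suc i) = {x}"
        using D(1) unfolding split_def x_def by auto
      have at: "a \<in> subtrees t" using split_sub D(1) by blast
      have "\<rho> \<notin> cl a" using no_rho_sub t at by blast
      then have ca: "cl a \<inter> insert x X0 = {x}" using caS X0s xa SS by blast
      have cb: "cl b \<inter> X0 \<noteq> {}" using D(4) X0(2) by blast
      obtain u z' v where R: "restrict X0 t = Some u" "restrict X0 b = Some z'"
          "restrict (insert x X0) t = Some v" "biso v (ins x z' u)"
        using restrict_ins[OF _ At Aab xa ca cb xX0] tree_facts t by blast
      have "z' = z" using R(2) D(2) by simp
      have bt: "b \<in> subtrees t" using split_sub D(1) by blast
      have "z \<in> subtrees u" using restrict_subtree_mono[OF bt R(1) D(2)] .
      then show ?thesis using R D(3) \<open>z' = z\<close> unfolding N_def by blast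
    qed
    obtain u1 z1 v1 where R1: "restrict X0 t1 = Some u1" "restrict N t1 = Some v1" "biso v1 (ins x z1 u1)"
        "oidx \<sigma> z1 = ol t0 (Suc i)" "z1 \<in> subtrees u1"
      using one[OF t12(1)] by blast
    obtain u2 z2 v2 where R2: "restrict X0 t2 = Some u2" "restrict N t2 = Some v2" "biso v2 (ins x z2 u2)"
        "oidx \<sigma> z2 = ol t0 (Suc i)" "z2 \<in> subtrees u2"
      using one[OF t12(2)] by blast
    have "rel_option biso (restrict X0 t1) (restrict X0 t2)" using InvD8[OF inv] X0(1) t12 by blast
    then have bu: "biso u1 u2" using R1(1) R2(1) by simp
    have du: "distinct (leaves u1)" using restrict_distinct[OF R1(1)] tree_facts t12(1) by blast
    have "cl u1 \<subseteq> L - {\<rho>}" using restrict_cl[OF R1(1)] tree_facts t12(1) by blast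
    then have iu: "inj_on \<sigma> (cl u1)" using inj inj_on_subset by blast
    have "biso (ins x z1 u1) (ins x z2 u2)" using ins_biso[OF bu du iu R1(5) R2(5)] R1(4) R2(4) by simp
    then have "biso v1 v2" using R1(3) R2(3) biso_trans biso_sym by metis
    then show ?thesis using R1(2) R2(2) by simp
  qed
  have G8: "\<forall>X\<in>P'. \<forall>t1\<in>Ts. \<forall>t2\<in>Ts. rel_option biso (restrict X t1) (restrict X t2)"
    using InvD8[OF inv] isoN unfolding P'_def by auto
  define f where "f X = (if X = N then X0 else X)" for X
  have fP: "f X \<in> P" if "X \<in> P'" for X using that X0(1) unfolding f_def P'_def by auto
  have finj: "f X \<noteq> f Y" if "X \<in> P'" "Y \<in> P'" "X \<noteq> Y" for X Y
    using that NP unfolding f_def P'_def by auto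
  have G9: "\<forall>X\<in>P'. \<forall>Y\<in>P'. X \<noteq> Y \<longrightarrow> (\<forall>t\<in>Ts. \<forall>w\<in>subtrees t.
        \<not> (cl w \<inter> X \<noteq> {} \<and> cl w \<inter> Y \<noteq> {} \<and> cl w \<inter> Si (Suc i) \<subseteq> Hu t X \<inter> Hu t Y))"
  proof (intro ballI impI notI)
    fix X Y t w assume XY: "X \<in> P'" "Y \<in> P'" "X \<noteq> Y" and t: "t \<in> Ts" and w: "w \<in> subtrees t"
      and H: "cl w \<inter> X \<noteq> {} \<and> cl w \<inter> Y \<noteq> {} \<and> cl w \<inter> Si (Suc i) \<subseteq> Hu t X \<inter> Hu t Y"
    have tr: "cl w \<inter> f Z \<noteq> {} \<and> cl w \<inter> Si i \<subseteq> Hu t (f Z)"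
      if Z: "Z \<in> P'" "Z' \<in> P'" "Z \<noteq> Z'" "cl w \<inter> Z \<noteq> {}" "cl w \<inter> Z' \<noteq> {}"
        "cl w \<inter> Si (Suc i) \<subseteq> Hu t Z" for Z Z'
    proof (cases "Z = N")
      case True
      have "Z' \<in> P" using Z(2,3) True unfolding P'_def by auto
      have m: "cl w \<inter> X0 \<noteq> {}"
      proof (cases "x \<in> cl w")
        case True
        then show ?thesis using meet[OF t w True \<open>Z' \<in> P\<close> Z(5)] X0(2) by blast
      next
        case False then show ?thesis using Z(4) \<open>Z = N\<close> unfolding N_def by blast
      qed
      have "cl w \<inter> Si i \<subseteq> Hu t N \<inter> Si i" using Z(6) True SS by blast
      then have "cl w \<inter> Si i \<subseteq> Hu t X0" using H1[OF t] by blast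
      then show ?thesis using m True unfolding f_def by simp
    next
      case False
      then show ?thesis using Z(4,6) SS unfolding f_def by auto
    qed
    have a: "cl w \<inter> f X \<noteq> {} \<and> cl w \<inter> Si i \<subseteq> Hu t (f X)" using tr[of X Y] XY H by blast
    have b: "cl w \<inter> f Y \<noteq> {} \<and> cl w \<inter> Si i \<subseteq> Hu t (f Y)" using tr[of Y X] XY H by blast
    have q1: "f X \<noteq> f Y \<longrightarrow> (\<forall>t\<in>Ts. \<forall>w\<in>subtrees t.
        \<not> (cl w \<inter> f X \<noteq> {} \<and> cl w \<inter> f Y \<noteq> {} \<and> cl w \<inter> Si i \<subseteq> Hu t (f X) \<inter> Hu t (f Y)))"
      using bspec[OF bspec[OF InvD9[OF inv] fP[OF XY(1)]] fP[OF XY(2)]] .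
    have q2: "\<not> (cl w \<inter> f X \<noteq> {} \<and> cl w \<inter> f Y \<noteq> {} \<and> cl w \<inter> Si i \<subseteq> Hu t (f X) \<inter> Hu t (f Y))"
      using bspec[OF bspec[OF mp[OF q1 finj[OF XY]] t] w] .
    show False using q2 a b by blast
  qed
  have G10: "\<forall>X\<in>P'. \<rho> \<notin> X \<longrightarrow> (\<forall>t\<in>Ts. \<forall>y\<in>Hu t X \<inter> Si (Suc i). Min (\<sigma> ` X) \<le> \<sigma> y)"
  proof (intro ballI impI)
    fix X t y assume X: "X \<in> P'" "\<rho> \<notin> X" and t: "t \<in> Ts" and y: "y \<in> Hu t X \<inter> Si (Suc i)"
    have "X \<subseteq> \<Union>P'" using X(1) by blast
    then have X1: "X \<subseteq> insert \<rho> (Si (Suc i))" using G4 by simp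
    have X2: "insert \<rho> (Si (Suc i)) \<subseteq> L" using Si_sub[of "Suc i"] rhoL by blast
    have "X \<subseteq> L" using subset_trans[OF X1 X2] .
    then have finX: "finite X" using finL finite_subset by blast
    show "Min (\<sigma> ` X) \<le> \<sigma> y"
    proof (cases "X = N")
      case True
      then have rX0: "\<rho> \<notin> X0" using X(2) unfolding N_def by simp
      show ?thesis
      proof (cases "y = x")
        case True
        then show ?thesis using \<open>X = N\<close> finX unfolding N_def by simp
      next
        case False
        then have yS: "y \<in> Si i" using y SS by blast
        then have "y \<in> Hu t X0" using H1[OF t] y \<open>X = N\<close> by blast
        then have "Min (\<sigma> ` X0) \<le> \<sigma> y" using InvD10[OF inv] X0(1) rX0 t yS by blast
        moreover have "Min (\<sigma> ` X) \<le> Min (\<sigma> ` X0)"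
          using Min_antimono[of "\<sigma> ` X0" "\<sigma> ` X"] finX InvD2[OF inv] X0(1) \<open>X = N\<close>
          unfolding N_def by (simp add: image_mono subset_insertI)
        ultimately show ?thesis by simp
      qed
    next
      case False
      then have XP: "X \<in> P" using X(1) unfolding P'_def by auto
      show ?thesis
      proof (cases "y = x")
        case True
        obtain z where z: "z \<in> X" using InvD2[OF inv] XP by blast
        then have "z \<in> Si i" using Inv_parts[OF inv XP] X(2) by blast
        then have "\<sigma> z \<le> i" using Si_sig by blast
        moreover have "Min (\<sigma> ` X) \<le> \<sigma> z" using z finX by simp
        ultimately show ?thesis using True xL by simp
      next
        case False
        then have "y \<in> Si i" using y SS by blast
        then show ?thesis using InvD10[OF inv] XP X(2) t y by blast
      qed
    qed
  qed
  have "Inv (Suc i) P'" using InvI[OF G1 G2 G3 G4 G5 G6 G7 G8 G9 G10] .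
  then show ?thesis by blast
qed

end


context settingA
begin

lemma Inv_step_mis:
  assumes inv: "Inv i P" and k: "Suc i < n" and mm: "Suc i \<in> M (Suc i)"
  shows "\<exists>P'. Inv (Suc i) P'"
proof -
  define x where "x = l (Suc i)"
  have xL: "x \<in> L - {\<rho>}" "\<sigma> x = Suc i" using lo_in k unfolding x_def by auto
  have xS: "x \<notin> Si i" using l_notin_prev[OF k] unfolding x_def by simp
  have SS: "Si (Suc i) = insert x (Si i)" using Si_Suc[OF k] unfolding x_def by simp
  have MM: "M (Suc i) = insert (Suc i) (M i)" "Suc i \<notin> M i" using M_Suc_in[OF mm] by auto
  have UP: "\<Union>P = insert \<rho> (Si i)" using InvD4[OF inv] .
  have xnot: "\<forall>Y\<in>P. x \<notin> Y" using UP xL xS by blast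
  have finP: "finite P" using InvD1[OF inv] .
  define P' where "P' = insert {x} P"
  have xP: "{x} \<notin> P" using xnot by blast
  have Hx: "Hu t {x} = {x}" if "t \<in> Ts" for t using Hu_single[OF that xL(1)] .
  have meetS: "cl w \<inter> Si i \<noteq> {}" if t: "t \<in> Ts" and w: "w \<in> subtrees t" and Y: "Y \<in> P" "cl w \<inter> Y \<noteq> {}"
    for t w Y
  proof -
    have "Y \<subseteq> insert \<rho> (Si i)" using Inv_parts[OF inv Y(1)] .
    moreover have "\<rho> \<notin> cl w" using no_rho_sub t w by blast
    ultimately show ?thesis using Y(2) by blast
  qed
  have G1: "finite P'" unfolding P'_def using finP by simp
  have G2: "\<forall>X\<in>P'. X \<noteq> {}" using InvD2[OF inv] unfolding P'_def by auto
  have G3: "\<forall>X\<in>P'. \<forall>Y\<in>P'. X \<noteq> Y \<longrightarrow> X \<inter> Y = {}"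
    using InvD3[OF inv] xnot unfolding P'_def by blast
  have G4: "\<Union>P' = insert \<rho> (Si (Suc i))" unfolding P'_def using UP SS by (simp add: insert_commute)
  have G5: "card P' = card (M (Suc i)) + 1"
  proof -
    have fM: "finite (M i)" using M_sub finite_subset by blast
    have "card P' = card P + 1" unfolding P'_def using xP finP by simp
    moreover have "card (M (Suc i)) = card (M i) + 1" using MM fM by simp
    ultimately show ?thesis using InvD5[OF inv] by simp
  qed
  have G6: "\<exists>X\<in>P'. \<rho> \<in> X \<and> l 0 \<in> X" using InvD6[OF inv] unfolding P'_def by blast
  have G7: "\<forall>j. 1 \<le> j \<and> j \<le> Suc i \<and> j \<notin> M (Suc i) \<longrightarrow> (\<exists>X\<in>P'. l j \<in> X \<and> l (par j) \<in> X)"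
  proof (intro allI impI)
    fix j assume j: "1 \<le> j \<and> j \<le> Suc i \<and> j \<notin> M (Suc i)"
    then have "j \<le> i" "j \<notin> M i" using MM by auto
    then show "\<exists>X\<in>P'. l j \<in> X \<and> l (par j) \<in> X" using InvD7[OF inv] j unfolding P'_def by blast
  qed
  have rx: "restrict {x} t = Some (Leaf x)" if t: "t \<in> Ts" for t
  proof -
    have "cl t \<inter> {x} = {x}" using tree_facts[OF t] xL by auto
    moreover have "distinct (leaves t)" using tree_facts[OF t] by blast
    ultimately show ?thesis using restrict_single by metis
  qed
  have G8: "\<forall>X\<in>P'. \<forall>t1\<in>Ts. \<forall>t2\<in>Ts. rel_option biso (restrict X t1) (restrict X t2)"
    using InvD8[OF inv] rx unfolding P'_def by auto
  have G9: "\<forall>X\<in>P'. \<forall>Y\<in>P'. X \<noteq> Y \<longrightarrow> (\<forall>t\<in>Ts. \<forall>w\<in>subtrees t.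
        \<not> (cl w \<inter> X \<noteq> {} \<and> cl w \<inter> Y \<noteq> {} \<and> cl w \<inter> Si (Suc i) \<subseteq> Hu t X \<inter> Hu t Y))"
  proof (intro ballI impI notI)
    fix X Y t w assume XY: "X \<in> P'" "Y \<in> P'" "X \<noteq> Y" and t: "t \<in> Ts" and w: "w \<in> subtrees t"
      and H: "cl w \<inter> X \<noteq> {} \<and> cl w \<inter> Y \<noteq> {} \<and> cl w \<inter> Si (Suc i) \<subseteq> Hu t X \<inter> Hu t Y"
    have single: False if Z: "Z \<in> P" "cl w \<inter> Z \<noteq> {}" "cl w \<inter> Si (Suc i) \<subseteq> {x}" for Z
    proof -
      obtain y where y: "y \<in> cl w" "y \<in> Si i" using meetS[OF t w Z(1,2)] by blast
      then have "y \<in> Si (Suc i)" using SS by blast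
      then have "y = x" using Z(3) y(1) by blast
      then show False using y(2) xS by blast
    qed
    show False
    proof (cases "X = {x}")
      case True
      then have "Y \<in> P" using XY unfolding P'_def by auto
      then show False using single[of Y] H True Hx[OF t] by blast
    next
      case False
      then have XP: "X \<in> P" using XY unfolding P'_def by auto
      show False
      proof (cases "Y = {x}")
        case True
        then show False using single[OF XP] H Hx[OF t] by blast
      next
        case False
        then have YP: "Y \<in> P" using XY unfolding P'_def by auto
        have q1: "X \<noteq> Y \<longrightarrow> (\<forall>t\<in>Ts. \<forall>w\<in>subtrees t.
            \<not> (cl w \<inter> X \<noteq> {} \<and> cl w \<inter> Y \<noteq> {} \<and> cl w \<inter> Si i \<subseteq> Hu t X \<inter> Hu t Y))"
          using bspec[OF bspec[OF InvD9[OF inv] XP] YP] .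
        have q2: "\<not> (cl w \<inter> X \<noteq> {} \<and> cl w \<inter> Y \<noteq> {} \<and> cl w \<inter> Si i \<subseteq> Hu t X \<inter> Hu t Y)"
          using bspec[OF bspec[OF mp[OF q1 XY(3)] t] w] .
        show False using q2 H SS by blast
      qed
    qed
  qed
  have G10: "\<forall>X\<in>P'. \<rho> \<notin> X \<longrightarrow> (\<forall>t\<in>Ts. \<forall>y\<in>Hu t X \<inter> Si (Suc i). Min (\<sigma> ` X) \<le> \<sigma> y)"
  proof (intro ballI impI)
    fix X t y assume X: "X \<in> P'" "\<rho> \<notin> X" and t: "t \<in> Ts" and y: "y \<in> Hu t X \<inter> Si (Suc i)"
    show "Min (\<sigma> ` X) \<le> \<sigma> y"
    proof (cases "X = {x}")
      case True
      then show ?thesis using y Hx[OF t] by simp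
    next
      case False
      then have XP: "X \<in> P" using X(1) unfolding P'_def by auto
      have X1: "X \<subseteq> insert \<rho> (Si i)" using Inv_parts[OF inv XP] .
      have X2: "insert \<rho> (Si i) \<subseteq> L" using Si_sub[of i] rhoL by blast
      have finX: "finite X" using finite_subset[OF subset_trans[OF X1 X2] finL] .
      show ?thesis
      proof (cases "y = x")
        case True
        obtain z where z: "z \<in> X" using InvD2[OF inv] XP by blast
        then have "z \<in> Si i" using X1 X(2) by blast
        then have "\<sigma> z \<le> i" using Si_sig by blast
        moreover have "Min (\<sigma> ` X) \<le> \<sigma> z" using z finX by simp
        ultimately show ?thesis using True xL by simp
      next
        case False
        then have "y \<in> Si i" using y SS by blast
        then show ?thesis using InvD10[OF inv] XP X(2) t y by blast
      qed
    qed
  qed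
  have "Inv (Suc i) P'" using InvI[OF G1 G2 G3 G4 G5 G6 G7 G8 G9 G10] .
  then show ?thesis by blast
qed

lemma Inv_exists: "i < n \<Longrightarrow> \<exists>P. Inv i P"
proof (induction i)
  case 0 then show ?case using Inv_base by blast
next
  case (Suc i)
  then obtain P where "Inv i P" by auto
  then show ?case using Inv_step_mis Inv_step_nomis Suc.prems by blast
qed

end


context setting
begin

definition mk :: "'a set \<Rightarrow> 'a btree \<Rightarrow> 'a ftree" where
  "mk X u = (if \<rho> \<in> X then Planted (Some u) else Unplanted u)"

lemma comp_facts:
  assumes t: "t \<in> Ts" and X: "X \<subseteq> L" "X - {\<rho>} \<noteq> {}"
  shows "\<exists>u. restrict X t = Some u \<and> cl u = X - {\<rho>} \<and> distinct (leaves u) \<and>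
     prestrict \<rho> X t = Some (mk X u) \<and> flabels \<rho> (mk X u) = X \<and> fwf \<rho> (mk X u)"
proof -
  have c: "cl t = L - {\<rho>}" "distinct (leaves t)" using tree_facts t by auto
  have "cl t \<inter> X = X - {\<rho>}"
  proof
    show "cl t \<inter> X \<subseteq> X - {\<rho>}" unfolding c(1) by (rule subsetI) simp
    show "X - {\<rho>} \<subseteq> cl t \<inter> X" unfolding c(1) using X(1) by (intro subsetI) auto
  qed
  then have "cl t \<inter> X \<noteq> {}" using X by simp
  then obtain u where u: "restrict X t = Some u" using restrict_None by (metis not_Some_eq)
  have cu: "cl u = X - {\<rho>}" using restrict_cl[OF u] \<open>cl t \<inter> X = X - {\<rho>}\<close> by simp
  have du: "distinct (leaves u)" using restrict_distinct[OF u c(2)] .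
  have p: "prestrict \<rho> X t = Some (mk X u)" unfolding prestrict_def mk_def using u by simp
  have f: "flabels \<rho> (mk X u) = X" unfolding mk_def using cu by auto
  have w: "fwf \<rho> (mk X u)" unfolding mk_def using du cu by auto
  show ?thesis using u cu du p f w by blast
qed

lemma fiso_mk: "biso u1 u2 \<Longrightarrow> fiso (mk X u1) (mk X u2)"
  unfolding mk_def by simp

end

context settingA
begin

lemma dirA: "\<exists>F. acyclic_agreement_forest \<rho> L Ts F \<and> card F = card (M (n - 1)) + 1"
proof -
  have n1: "n - 1 < n" using n_pos by simp
  obtain P where inv: "Inv (n - 1) P" using Inv_exists[OF n1] by blast
  have SL: "Si (n - 1) = L - {\<rho>}" using Si_last n_pos by simp
  have UP: "\<Union>P = L" using InvD4[OF inv] SL insert_Diff[OF rhoL] by simp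
  have finP: "finite P" using InvD1[OF inv] .
  obtain X\<rho> where Xr: "X\<rho> \<in> P" "\<rho> \<in> X\<rho>" "l 0 \<in> X\<rho>" using InvD6[OF inv] by blast
  have l0: "l 0 \<in> L - {\<rho>}" "\<sigma> (l 0) = 0" using lo_in n_pos by auto
  have XL: "X \<subseteq> L" if "X \<in> P" for X using UP that by blast
  have Xne: "X - {\<rho>} \<noteq> {}" if X: "X \<in> P" for X
  proof (cases "\<rho> \<in> X")
    case True
    have "X = X\<rho>" by (rule Inv_same[OF inv X Xr(1) True Xr(2)])
    then show ?thesis using Xr(3) l0 by blast
  next
    case False then show ?thesis using InvD2[OF inv] X by blast
  qed
  define u0 where "u0 X = the (restrict X t0)" for X
  define C where "C X = mk X (u0 X)" for X
  have CF: "restrict X t0 = Some (u0 X) \<and> cl (u0 X) = X - {\<rho>} \<and> prestrict \<rho> X t0 = Some (C X) \<and>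
      flabels \<rho> (C X) = X \<and> fwf \<rho> (C X)" if X: "X \<in> P" for X
  proof -
    obtain u where u: "restrict X t0 = Some u" "cl u = X - {\<rho>}" "distinct (leaves u)"
      "prestrict \<rho> X t0 = Some (mk X u)" "flabels \<rho> (mk X u) = X" "fwf \<rho> (mk X u)"
      using comp_facts[OF t0 XL[OF X] Xne[OF X]] by blast
    then show ?thesis unfolding C_def u0_def by simp
  qed
  have Cinj: "inj_on C P"
  proof (rule inj_onI)
    fix X Y assume "X \<in> P" "Y \<in> P" "C X = C Y"
    then show "X = Y" using CF by metis
  qed
  define F where "F = C ` P"
  have cardF: "card F = card P" unfolding F_def using card_image[OF Cinj] .
  have isf: "is_forest \<rho> F"
    unfolding is_forest_def
  proof (intro conjI ballI impI)
    show "finite F" unfolding F_def using finP by simp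
  next
    fix D assume "D \<in> F" then show "fwf \<rho> D" unfolding F_def using CF by auto
  next
    fix D D' assume D: "D \<in> F" "D' \<in> F" "D \<noteq> D'"
    then obtain X Y where XY: "X \<in> P" "Y \<in> P" "D = C X" "D' = C Y" unfolding F_def by auto
    then have "X \<noteq> Y" using D(3) by auto
    then show "flabels \<rho> D \<inter> flabels \<rho> D' = {}" using InvD3[OF inv] XY CF by metis
  qed
  have agr: "agrees_with \<rho> L F t" if t: "t \<in> Ts" for t
    unfolding agrees_with_def
  proof (intro conjI ballI impI)
    fix D assume "D \<in> F"
    then obtain X where X: "X \<in> P" "D = C X" unfolding F_def by auto
    obtain u where u: "restrict X t = Some u" "prestrict \<rho> X t = Some (mk X u)"
      using comp_facts[OF t XL[OF X(1)] Xne[OF X(1)]] by blast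
    have "rel_option biso (restrict X t) (restrict X t0)" using InvD8[OF inv] X(1) t t0 by blast
    then have "biso u (u0 X)" using u(1) CF[OF X(1)] by simp
    then have "fiso (mk X u) (C X)" unfolding C_def by (rule fiso_mk)
    then show "\<exists>X'. prestrict \<rho> (flabels \<rho> D) t = Some X' \<and> fiso X' D"
      using u(2) CF[OF X(1)] X(2) by auto
  next
    fix D D' assume D: "D \<in> F" "D' \<in> F" "D \<noteq> D'"
    then obtain X Y where XY: "X \<in> P" "Y \<in> P" "D = C X" "D' = C Y" unfolding F_def by auto
    then have XY2: "X \<noteq> Y" using D(3) by auto
    have fl: "flabels \<rho> D = X" "flabels \<rho> D' = Y" using CF XY by auto
    have sX: "span \<rho> t X = (if \<rho> \<in> X then {None} else {}) \<union>
           Some ` {w \<in> subtrees t. cl w \<inter> X \<noteq> {} \<and> cl w \<subseteq> Hu t X}"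
      using span_char[OF t XL[OF XY(1)] Xne[OF XY(1)]] .
    have sY: "span \<rho> t Y = (if \<rho> \<in> Y then {None} else {}) \<union>
           Some ` {w \<in> subtrees t. cl w \<inter> Y \<noteq> {} \<and> cl w \<subseteq> Hu t Y}"
      using span_char[OF t XL[OF XY(2)] Xne[OF XY(2)]] .
    have nr: "\<not> (\<rho> \<in> X \<and> \<rho> \<in> Y)" using InvD3[OF inv] XY(1,2) XY2 by blast
    have q1: "X \<noteq> Y \<longrightarrow> (\<forall>t\<in>Ts. \<forall>w\<in>subtrees t.
        \<not> (cl w \<inter> X \<noteq> {} \<and> cl w \<inter> Y \<noteq> {} \<and> cl w \<inter> Si (n - 1) \<subseteq> Hu t X \<inter> Hu t Y))"
      using bspec[OF bspec[OF InvD9[OF inv] XY(1)] XY(2)] .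
    have q2: "\<not> (cl w \<inter> X \<noteq> {} \<and> cl w \<inter> Y \<noteq> {} \<and> cl w \<inter> Si (n - 1) \<subseteq> Hu t X \<inter> Hu t Y)"
      if w: "w \<in> subtrees t" for w
      using bspec[OF bspec[OF mp[OF q1 XY2] t] w] .
    have q3: "\<not> (cl w \<inter> X \<noteq> {} \<and> cl w \<inter> Y \<noteq> {} \<and> cl w \<subseteq> Hu t X \<inter> Hu t Y)"
      if w: "w \<in> subtrees t" for w
    proof -
      have "cl w \<inter> Si (n - 1) = cl w" using cl_sub_L[OF t w] SL by blast
      then show ?thesis using q2[OF w] by simp
    qed
    show "span \<rho> t (flabels \<rho> D) \<inter> span \<rho> t (flabels \<rho> D') = {}"
      unfolding fl sX sY using nr q3 by auto
  next
    show "(\<Union>D\<in>F. flabels \<rho> D) = L"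
    proof -
      have "(\<Union>D\<in>F. flabels \<rho> D) = (\<Union>X\<in>P. flabels \<rho> (C X))" unfolding F_def by simp
      also have "\<dots> = (\<Union>X\<in>P. X)" using CF by simp
      finally show ?thesis using UP by simp
    qed
  qed
  define rk where "rk D = Min (\<sigma> ` (flabels \<rho> D - {\<rho>}))" for D
  have rkX: "rk (C X) = Min (\<sigma> ` (X - {\<rho>}))" if "X \<in> P" for X using CF[OF that] unfolding rk_def by simp
  have finX: "finite X" if "X \<in> P" for X using finite_subset[OF XL[OF that] finL] .
  have rk_attained: "\<exists>y\<in>X - {\<rho>}. \<sigma> y = rk (C X)" if X: "X \<in> P" for X
  proof -
    have f: "finite (\<sigma> ` (X - {\<rho>}))" using finX[OF X] by simp
    have ne: "\<sigma> ` (X - {\<rho>}) \<noteq> {}" using Xne[OF X] by simp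
    have "Min (\<sigma> ` (X - {\<rho>})) \<in> \<sigma> ` (X - {\<rho>})" using Min_in[OF f ne] .
    then show ?thesis using rkX[OF X] by auto
  qed
  have edge: "rk D < rk D'" if e: "(D, D') \<in> inheritance_graph \<rho> Ts F" for D D'
  proof -
    obtain t where E: "D \<in> F" "D' \<in> F" "D \<noteq> D'" "t \<in> Ts"
        "panc (sroot \<rho> t (flabels \<rho> D)) (sroot \<rho> t (flabels \<rho> D'))"
      using e unfolding inheritance_graph_def by blast
    then obtain X Y where XY: "X \<in> P" "Y \<in> P" "D = C X" "D' = C Y" unfolding F_def by auto
    then have XY2: "X \<noteq> Y" using E(3) by auto
    have fl: "flabels \<rho> D = X" "flabels \<rho> D' = Y" using CF XY by auto
    have dj: "X \<inter> Y = {}" using InvD3[OF inv] XY(1,2) XY2 by blast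
    obtain y where y: "y \<in> Y - {\<rho>}" "\<sigma> y = rk D'" using rk_attained[OF XY(2)] XY(4) by blast
    obtain x where x: "x \<in> X - {\<rho>}" "\<sigma> x = rk D" using rk_attained[OF XY(1)] XY(3) by blast
    have xy: "\<sigma> x \<noteq> \<sigma> y"
    proof
      assume "\<sigma> x = \<sigma> y"
      moreover have "x \<in> L - {\<rho>}" "y \<in> L - {\<rho>}" using x y XL XY by blast+
      ultimately have "x = y" using inj inj_onD by metis
      then show False using x y dj by blast
    qed
    show ?thesis
    proof (cases "\<rho> \<in> Y")
      case True
      then have "\<rho> \<notin> X" using dj by blast
      then obtain h where h: "sroot \<rho> t X = Some h"
        using sroot_norho[OF E(4) XL[OF XY(1)]] InvD2[OF inv] XY(1) by blast
      have "sroot \<rho> t Y = None" using sroot_rho[OF E(4) True] .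
      then show ?thesis using E(5) h fl by simp
    next
      case False
      show ?thesis
      proof (cases "\<rho> \<in> X")
        case True
        have "X = X\<rho>" by (rule Inv_same[OF inv XY(1) Xr(1) True Xr(2)])
        then have "l 0 \<in> X - {\<rho>}" using Xr(3) l0 by blast
        then have "rk D \<le> 0" using rkX[OF XY(1)] XY(3) finX[OF XY(1)] l0(2)
          by (metis Min_le finite_Diff finite_imageI image_eqI)
        moreover have "\<sigma> y \<noteq> 0"
        proof
          assume "\<sigma> y = 0"
          then have "y = l 0" using lo_sig y XL XY(2) by (metis Diff_iff subsetD)
          then show False using dj y \<open>l 0 \<in> X - {\<rho>}\<close> by blast
        qed
        ultimately show ?thesis using y by simp
      next
        case rX: False
        obtain hX where hX: "sroot \<rho> t X = Some hX" "hX \<in> subtrees t" "cl hX = Hu t X"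
          using sroot_norho[OF E(4) XL[OF XY(1)]] InvD2[OF inv] XY(1) rX by blast
        obtain hY where hY: "sroot \<rho> t Y = Some hY" "Y \<subseteq> cl hY"
          using sroot_norho[OF E(4) XL[OF XY(2)]] InvD2[OF inv] XY(2) False by blast
        have "hY \<in> subtrees hX" using E(5) hX hY fl by simp
        then have "cl hY \<subseteq> cl hX" using subtree_cl by blast
        then have "y \<in> Hu t X" using hX(3) hY(2) y by blast
        moreover have "y \<in> Si (n - 1)" using y XL XY(2) SL by blast
        ultimately have "Min (\<sigma> ` X) \<le> \<sigma> y" using InvD10[OF inv] XY(1) rX E(4) by blast
        moreover have "X - {\<rho>} = X" using rX by simp
        ultimately have "rk D \<le> rk D'" using rkX[OF XY(1)] XY(3) y(2) by simp
        then show ?thesis using xy x y by simp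
      qed
    qed
  qed
  have acyc: "acyclic (inheritance_graph \<rho> Ts F)"
  proof -
    have "inheritance_graph \<rho> Ts F \<subseteq> inv_image less_than rk" using edge by auto
    moreover have "acyclic (inv_image less_than rk)" using wf_acyclic wf_inv_image wf_less_than by blast
    ultimately show ?thesis using acyclic_subset by blast
  qed
  have "acyclic_agreement_forest \<rho> L Ts F"
    unfolding acyclic_agreement_forest_def agreement_forest_def using isf agr acyc by blast
  then show ?thesis using cardF InvD5[OF inv] by auto
qed

end


lemma restrict_Some: "x \<in> cl t \<Longrightarrow> x \<in> K \<Longrightarrow> \<exists>u. restrict K t = Some u"
  using restrict_None[of K t] by (cases "restrict K t") auto

definition compo :: "'a \<Rightarrow> 'a ftree set \<Rightarrow> 'a \<Rightarrow> 'a ftree" where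
  "compo \<rho> F x = (THE C. C \<in> F \<and> x \<in> flabels \<rho> C)"

lemma compo_prop:
  assumes "acyclic_agreement_forest \<rho> L Ts F" "t \<in> Ts" "x \<in> L"
  shows "compo \<rho> F x \<in> F \<and> x \<in> flabels \<rho> (compo \<rho> F x)"
proof -
  have U: "(\<Union>C\<in>F. flabels \<rho> C) = L" using assms(1,2)
    unfolding acyclic_agreement_forest_def agreement_forest_def agrees_with_def by blast
  have D: "\<forall>C\<in>F. \<forall>C'\<in>F. C \<noteq> C' \<longrightarrow> flabels \<rho> C \<inter> flabels \<rho> C' = {}" using assms(1)
    unfolding acyclic_agreement_forest_def agreement_forest_def is_forest_def by blast
  obtain C where C: "C \<in> F" "x \<in> flabels \<rho> C" using U assms(3) by blast
  have "compo \<rho> F x = C" unfolding compo_def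
    by (rule the_equality) (use C D in blast)+
  then show ?thesis using C by simp
qed

lemma compo_unique:
  assumes "acyclic_agreement_forest \<rho> L Ts F" "C \<in> F" "x \<in> flabels \<rho> C"
  shows "compo \<rho> F x = C"
proof -
  have D: "\<forall>C\<in>F. \<forall>C'\<in>F. C \<noteq> C' \<longrightarrow> flabels \<rho> C \<inter> flabels \<rho> C' = {}" using assms(1)
    unfolding acyclic_agreement_forest_def agreement_forest_def is_forest_def by blast
  show ?thesis unfolding compo_def
    by (rule the_equality) (use assms D in blast)+
qed

lemma fiso_restrict:
  assumes "prestrict \<rho> K t1 = Some X1" "fiso X1 C" "prestrict \<rho> K t2 = Some X2" "fiso X2 C"
  shows "rel_option biso (restrict K t1) (restrict K t2)"
proof (cases "\<rho> \<in> K")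
  case True
  then have X: "X1 = Planted (restrict K t1)" "X2 = Planted (restrict K t2)"
    using assms(1,3) unfolding prestrict_def by auto
  show ?thesis
  proof (cases C)
    case (Unplanted c) then show ?thesis using assms(2) X by simp
  next
    case (Planted oc)
    show ?thesis
    proof (cases oc)
      case None
      have "restrict K t1 = None" using assms(2) X Planted None by (cases "restrict K t1") auto
      moreover have "restrict K t2 = None" using assms(4) X Planted None by (cases "restrict K t2") auto
      ultimately show ?thesis by simp
    next
      case (Some c)
      obtain u1 where u1: "restrict K t1 = Some u1" "biso u1 c" using assms(2) X Planted Some
        by (cases "restrict K t1") auto
      obtain u2 where u2: "restrict K t2 = Some u2" "biso u2 c" using assms(4) X Planted Some
        by (cases "restrict K t2") auto
      have "biso u1 u2" using u1(2) u2(2) biso_sym biso_trans by blast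
      then show ?thesis using u1 u2 by simp
    qed
  qed
next
  case False
  obtain u1 where u1: "restrict K t1 = Some u1" "X1 = Unplanted u1"
    using assms(1) False unfolding prestrict_def by auto
  obtain u2 where u2: "restrict K t2 = Some u2" "X2 = Unplanted u2"
    using assms(3) False unfolding prestrict_def by auto
  obtain c where c: "C = Unplanted c" using assms(2) u1(2) by (cases C) auto
  have "biso u1 c" "biso u2 c" using assms(2,4) u1 u2 c by auto
  then have "biso u1 u2" using biso_sym biso_trans by blast
  then show ?thesis using u1 u2 by simp
qed


context settingA
begin

lemma dirB_core:
  assumes aaf: "acyclic_agreement_forest \<rho> L Ts F"
    and resp: "\<forall>x\<in>L - {\<rho>}. \<forall>y\<in>L - {\<rho>}. (compo \<rho> F x, compo \<rho> F y) \<in> inheritance_graph \<rho> Ts F \<longrightarrow> \<sigma> x < \<sigma> y"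
  shows "card (M (n - 1)) + 1 \<le> card F"
proof -
  define cp where "cp x = compo \<rho> F x" for x
  define K where "K x = flabels \<rho> (cp x)" for x
  define first where "first j \<longleftrightarrow> (\<forall>y\<in>K (l j) - {\<rho>}. j \<le> \<sigma> y)" for j
  have isf: "is_forest \<rho> F" and agr: "\<forall>t\<in>Ts. agrees_with \<rho> L F t"
    using aaf unfolding acyclic_agreement_forest_def agreement_forest_def by auto
  have finF: "finite F" using isf unfolding is_forest_def by blast
  have AG1: "\<exists>X. prestrict \<rho> (flabels \<rho> C) t = Some X \<and> fiso X C" if "t \<in> Ts" "C \<in> F" for t C
  proof -
    have "agrees_with \<rho> L F t" using agr that(1) by blast
    then show ?thesis unfolding agrees_with_def using that(2) by blast
  qed
  have AG2: "span \<rho> t (flabels \<rho> C) \<inter> span \<rho> t (flabels \<rho> C') = {}"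
    if "t \<in> Ts" "C \<in> F" "C' \<in> F" "C \<noteq> C'" for t C C'
  proof -
    have "agrees_with \<rho> L F t" using agr that(1) by blast
    then show ?thesis unfolding agrees_with_def using that(2-4) by blast
  qed
  have cpF: "cp x \<in> F" "x \<in> K x" if "x \<in> L" for x
    using compo_prop[OF aaf t0 that] unfolding cp_def K_def by auto
  have cpU: "cp x = C" if "C \<in> F" "x \<in> flabels \<rho> C" for x C
    using compo_unique[OF aaf that] unfolding cp_def .
  have UL: "(\<Union>C\<in>F. flabels \<rho> C) = L" using agr t0 unfolding agrees_with_def by blast
  have KL: "K x \<subseteq> L" if "x \<in> L" for x using UL cpF[OF that] unfolding K_def by blast
  have nonfirst: "Suc i \<notin> M (Suc i)"
    if k: "Suc i < n" and IH: "M i \<subseteq> {j. 1 \<le> j \<and> first j}" and nf: "\<not> first (Suc i)" for i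
  proof -
    define x where "x = l (Suc i)"
    have xL: "x \<in> L - {\<rho>}" "\<sigma> x = Suc i" using lo_in k unfolding x_def by auto
    have xS: "x \<notin> Si i" using l_notin_prev[OF k] unfolding x_def by simp
    have SS: "Si (Suc i) = insert x (Si i)" using Si_Suc[OF k] unfolding x_def by simp
    define Kx where "Kx = K x"
    have xK: "x \<in> Kx" "cp x \<in> F" using cpF xL unfolding Kx_def by auto
    have KxL: "Kx \<subseteq> L" using KL xL unfolding Kx_def by auto
    obtain p0 where p0: "p0 \<in> Kx - {\<rho>}" "\<sigma> p0 < Suc i"
      using nf unfolding first_def Kx_def x_def by (auto simp: not_le)
    have p0L: "p0 \<in> L - {\<rho>}" using p0 KxL by blast
    have p0S: "p0 \<in> Si i" using p0 p0L unfolding Si_def by auto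
    define S where "S = Kx \<inter> Si (Suc i)"
    have SX: "S - {x} = Kx \<inter> Si i" unfolding S_def using SS xS by blast
    have tree: "\<exists>A a b s. split t (Suc i) A a b \<and> restrict (Si i) b = Some s \<and> ol t (Suc i) = oidx \<sigma> s \<and>
        cl b \<inter> Si i \<subseteq> Kx \<and> sibling x (the (restrict S t)) = Some s" if t: "t \<in> Ts" for t
    proof -
      obtain A a b s where sp: "split t (Suc i) A a b" "restrict (Si i) b = Some s" "ol t (Suc i) = oidx \<sigma> s"
        using split_at[OF t k] by blast
      have d: "distinct (leaves t)" "cl t = L - {\<rho>}" using tree_facts t by auto
      have At: "A \<in> subtrees t" and Aab: "A = Node a b \<or> A = Node b a" and xa: "x \<in> cl a"
        and minA: "\<forall>w\<in>subtrees t. x \<in> cl w \<and> cl w \<inter> Si i \<noteq> {} \<longrightarrow> A \<in> subtrees w"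
        using sp(1) unfolding split_def x_def by auto
      have dA: "distinct (leaves A)" using At d distinct_subtree by blast
      have clA: "cl A = cl a \<union> cl b" using Aab by auto
      have ab: "cl a \<inter> cl b = {}" using dA Aab by auto
      have xb: "x \<notin> cl b" using ab xa by blast
      have bt: "b \<in> subtrees t" using split_sub sp(1) by blast
      have cbs: "cl s = cl b \<inter> Si i" using restrict_cl sp(2) by blast
      have AHu: "cl A \<subseteq> Hu t Kx"
      proof (cases "\<rho> \<in> Kx")
        case True then show ?thesis unfolding Hu_def by simp
      next
        case False
        show ?thesis
        proof
          fix z assume z: "z \<in> cl A"
          show "z \<in> Hu t Kx"
          proof (rule Hu_intro[OF False])
            fix w assume w: "w \<in> subtrees t" "Kx \<subseteq> cl w"
            have "x \<in> cl w" "p0 \<in> cl w" using w(2) xK p0 by auto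
            then have "A \<in> subtrees w" using minA w(1) p0S by blast
            then show "z \<in> cl w" using z subtree_cl by blast
          qed
        qed
      qed
      have spanA: "Some A \<in> span \<rho> t Kx"
      proof -
        have "Kx - {\<rho>} \<noteq> {}" using xK xL by blast
        moreover have "cl A \<inter> Kx \<noteq> {}" using xa xK clA by blast
        ultimately show ?thesis using span_char[OF t KxL] At AHu by auto
      qed
      have CL: "cl b \<inter> Si i \<subseteq> Kx"
      proof
        fix y assume y: "y \<in> cl b \<inter> Si i"
        show "y \<in> Kx"
        proof (rule ccontr)
          assume yK: "y \<notin> Kx"
          have yL: "y \<in> L - {\<rho>}" using y Si_sub by blast
          define Ky where "Ky = K y"
          have yKy: "y \<in> Ky" "cp y \<in> F" using cpF yL unfolding Ky_def by auto
          have KyL: "Ky \<subseteq> L" using KL yL unfolding Ky_def by auto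
          have cxy: "cp x \<noteq> cp y" using yK yKy unfolding Kx_def Ky_def K_def by auto
          have yA: "y \<in> cl A" using y clA by blast
          show False
          proof (cases "cl A \<subseteq> Hu t Ky")
            case True
            have "Ky - {\<rho>} \<noteq> {}" using yKy yL by blast
            moreover have "cl A \<inter> Ky \<noteq> {}" using yA yKy by blast
            ultimately have "Some A \<in> span \<rho> t Ky" using span_char[OF t KyL] At True by auto
            moreover have "span \<rho> t Kx \<inter> span \<rho> t Ky = {}"
              using AG2[OF t xK(2) yKy(2) cxy] unfolding Kx_def Ky_def K_def .
            ultimately show False using spanA by blast
          next
            case False
            then have rKy: "\<rho> \<notin> Ky" unfolding Hu_def by auto
            obtain z where z: "z \<in> cl A" "z \<notin> Hu t Ky" using False by blast
            then obtain w' where w': "w' \<in> subtrees t" "Ky \<subseteq> cl w'" "z \<notin> cl w'"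
              using rKy unfolding Hu_def by auto
            have "y \<in> cl w'" using w'(2) yKy by blast
            then have "cl A \<inter> cl w' \<noteq> {}" using yA by blast
            then have "A \<in> subtrees w' \<or> w' \<in> subtrees A" using laminar[OF d(1) At w'(1)] by blast
            moreover have "A \<notin> subtrees w'" using z w'(3) subtree_cl by blast
            ultimately have "w' \<in> subtrees A" by blast
            then have w'A: "cl w' \<subseteq> Hu t Kx" using subtree_cl AHu by blast
            obtain hY where hY: "sroot \<rho> t Ky = Some hY" "hY \<in> subtrees t" "cl hY = Hu t Ky"
              using sroot_norho[OF t KyL _ rKy] yKy by blast
            have hYs: "cl hY \<subseteq> Hu t Kx" using hY(3) Hu_sub[OF rKy w'(1,2)] w'A by blast
            have pan: "panc (sroot \<rho> t Kx) (sroot \<rho> t Ky)"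
            proof (cases "\<rho> \<in> Kx")
              case True
              then show ?thesis using sroot_rho[OF t True] by simp
            next
              case rKx: False
              obtain hX where hX: "sroot \<rho> t Kx = Some hX" "hX \<in> subtrees t" "cl hX = Hu t Kx"
                using sroot_norho[OF t KxL _ rKx] xK by blast
              have "hY \<in> subtrees hX" using cl_sub_subtree[OF d(1) hY(2) hX(2)] hYs hX(3) by blast
              then show ?thesis using hX(1) hY(1) by simp
            qed
            have "(cp x, cp y) \<in> inheritance_graph \<rho> Ts F"
              unfolding inheritance_graph_def using xK(2) yKy(2) cxy t pan unfolding Kx_def Ky_def K_def by blast
            then have "\<sigma> x < \<sigma> y" using resp xL yL unfolding cp_def by blast
            moreover have "\<sigma> y \<le> i" using Si_sig y by blast
            ultimately show False using xL by simp
          qed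
        qed
      qed
      have xS': "x \<in> S" unfolding S_def using xK SS by blast
      have p0t: "cl t \<inter> (S - {x}) \<noteq> {}" using p0 p0L p0S d(2) SX by blast
      obtain A' a' b' where sc: "A' \<in> subtrees t" "A' = Node a' b' \<or> A' = Node b' a'" "x \<in> cl a'"
        "cl a' \<inter> S = {x}" "cl b' \<inter> S \<noteq> {}" "sibling x (the (restrict S t)) = restrict S b'"
        "\<forall>w\<in>subtrees t. x \<in> cl w \<and> cl w \<inter> (S - {x}) \<noteq> {} \<longrightarrow> A' \<in> subtrees w"
        using sib_char[OF d(1) _ xS' p0t] d(2) xL by blast
      have dA': "distinct (leaves A')" using sc(1) d(1) distinct_subtree by blast
      have "cl a' \<inter> cl b' = {}" using dA' sc(2) by auto
      then have "cl b' \<inter> (S - {x}) \<noteq> {}" using sc(3,5) by blast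
      then have "cl A' \<inter> Si i \<noteq> {}" using sc(2) SX by auto
      moreover have "x \<in> cl A'" using sc(2,3) by auto
      ultimately have 1: "A \<in> subtrees A'" using minA sc(1) by blast
      have "cl s \<noteq> {}" by (rule cl_ne)
      then have "cl b \<inter> Si i \<noteq> {}" using cbs by simp
      then have "cl A \<inter> (S - {x}) \<noteq> {}" using CL SX clA by blast
      then have 2: "A' \<in> subtrees A" using sc(7) At xa clA by blast
      have "A = A'" using 1 2 subtree_antisym by blast
      then have "b' = b" using split_children_unique[OF Aab _ xa sc(3) dA] sc(2) by blast
      moreover have "cl b \<inter> S = cl b \<inter> Si i" unfolding S_def SS using CL xb by blast
      then have "restrict S b = restrict (Si i) b" using restrict_cong by blast
      ultimately have "sibling x (the (restrict S t)) = Some s" using sc(6) sp(2) by simp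
      then show ?thesis using sp CL by blast
    qed
    have isoS: "rel_option biso (restrict S t1) (restrict S t2)" if t12: "t1 \<in> Ts" "t2 \<in> Ts" for t1 t2
    proof -
      obtain X1 where X1: "prestrict \<rho> (flabels \<rho> (cp x)) t1 = Some X1" "fiso X1 (cp x)"
        using AG1[OF t12(1) xK(2)] by blast
      obtain X2 where X2: "prestrict \<rho> (flabels \<rho> (cp x)) t2 = Some X2" "fiso X2 (cp x)"
        using AG1[OF t12(2) xK(2)] by blast
      have r: "rel_option biso (restrict Kx t1) (restrict Kx t2)"
        using fiso_restrict[OF X1(1) X1(2) X2(1) X2(2)] unfolding Kx_def K_def .
      have "x \<in> cl t1" using tree_facts t12(1) xL by blast
      then obtain u1 where u1: "restrict Kx t1 = Some u1" using restrict_Some[OF _ xK(1)] by blast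
      have "x \<in> cl t2" using tree_facts t12(2) xL by blast
      then obtain u2 where u2: "restrict Kx t2 = Some u2" using restrict_Some[OF _ xK(1)] by blast
      have "biso u1 u2" using r u1 u2 by simp
      then have "rel_option biso (restrict (Si (Suc i)) u1) (restrict (Si (Suc i)) u2)"
        by (rule biso_restrict_rel)
      then show ?thesis using restrict_restrict[OF u1] restrict_restrict[OF u2] unfolding S_def by simp
    qed
    have agree: "ol t1 (Suc i) = ol t2 (Suc i)" if t12: "t1 \<in> Ts" "t2 \<in> Ts" for t1 t2
    proof -
      obtain A1 a1 b1 s1 where T1: "ol t1 (Suc i) = oidx \<sigma> s1" "sibling x (the (restrict S t1)) = Some s1"
        using tree[OF t12(1)] by blast
      obtain A2 a2 b2 s2 where T2: "ol t2 (Suc i) = oidx \<sigma> s2" "sibling x (the (restrict S t2)) = Some s2"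
        using tree[OF t12(2)] by blast
      have xS'': "x \<in> S" unfolding S_def using xK SS by blast
      have "x \<in> cl t1" using tree_facts t12(1) xL by blast
      then obtain U1 where U1: "restrict S t1 = Some U1" using restrict_Some[OF _ xS''] by blast
      have "x \<in> cl t2" using tree_facts t12(2) xL by blast
      then obtain U2 where U2: "restrict S t2 = Some U2" using restrict_Some[OF _ xS''] by blast
      have bU: "biso U1 U2" using isoS[OF t12] U1 U2 by simp
      have dU: "distinct (leaves U1)" using restrict_distinct[OF U1] tree_facts t12(1) by blast
      obtain s2' where "sibling x U2 = Some s2'" "biso s1 s2'" using sibling_biso[OF bU dU] T1(2) U1 by auto
      then have "biso s1 s2" using T2(2) U2 by simp
      then show ?thesis using T1(1) T2(1) biso_oidx by metis
    qed
    have notj: "\<not> (\<forall>t\<in>Ts. ol t (Suc i) = - int j)" if j: "j \<in> M i" for j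
    proof
      assume all: "\<forall>t\<in>Ts. ol t (Suc i) = - int j"
      obtain A a b s where T: "split t0 (Suc i) A a b" "restrict (Si i) b = Some s" "ol t0 (Suc i) = oidx \<sigma> s"
        "cl b \<inter> Si i \<subseteq> Kx"
        using tree[OF t0] by blast
      have j1: "1 \<le> j" "first j" using IH j by auto
      have os: "oidx \<sigma> s = - int j" using all t0 T(3) by simp
      have f: "distinct (leaves s)" "inj_on \<sigma> (cl s)" "cl s = cl b \<inter> Si i"
        using split_s_facts[OF t0 T(1)] T(2) by auto
      obtain u1 u2 where su: "s = Node u1 u2" using os j1(1) by (cases s) auto
      obtain q y z where Q: "oidx \<sigma> s = - int q" "y \<in> cl s" "\<sigma> y = q" "z \<in> cl s" "\<sigma> z < q"
        using oidx_Node[of u1 u2 \<sigma>] f su by auto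
      have "q = j" using Q(1) os by simp
      have yK: "y \<in> Kx" "z \<in> Kx" using Q(2,4) f(3) T(4) by auto
      have yL: "y \<in> L - {\<rho>}" "z \<in> L - {\<rho>}" using Q(2,4) f(3) Si_sub by blast+
      have "l j = y" using lo_sig yL(1) Q(3) \<open>q = j\<close> by blast
      then have "cp (l j) = cp x" using cpU[OF xK(2)] yK(1) unfolding Kx_def K_def by simp
      then have "K (l j) = Kx" unfolding K_def Kx_def by simp
      then have "j \<le> \<sigma> z" using j1(2) yK(2) yL(2) unfolding first_def by blast
      then show False using Q(5) \<open>q = j\<close> by simp
    qed
    have "\<not> cnd i" unfolding cnd_def using agree notj by blast
    then show ?thesis using M_Suc_eq[of i] M_sub[of i] by auto
  qed
  have Msub: "M i \<subseteq> {j. 1 \<le> j \<and> first j}" if "i < n" for i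
    using that
  proof (induction i)
    case 0 then show ?case by simp
  next
    case (Suc i)
    then have IH: "M i \<subseteq> {j. 1 \<le> j \<and> first j}" by simp
    show ?case
    proof (cases "first (Suc i)")
      case True
      have "M (Suc i) \<subseteq> insert (Suc i) (M i)" using M_Suc_eq[of i] by (cases "cnd i") auto
      then show ?thesis using IH True by auto
    next
      case False
      have "Suc i \<notin> M (Suc i)" using nonfirst[OF Suc.prems IH False] .
      then have "M (Suc i) = M i" using M_Suc_notin by blast
      then show ?thesis using IH by simp
    qed
  qed
  define FS where "FS = {j. 1 \<le> j \<and> j < n \<and> first j}"
  have MA: "M (n - 1) \<subseteq> {j. 1 \<le> j \<and> first j}" using Msub n_pos by simp
  have MFS: "M (n - 1) \<subseteq> FS"
  proof
    fix j assume j: "j \<in> M (n - 1)"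
    then have "j \<le> n - 1" using M_sub[of "n - 1"] by auto
    then have "j < n" using n_pos by simp
    then show "j \<in> FS" using MA j unfolding FS_def by blast
  qed
  have finFS: "finite FS" unfolding FS_def by simp
  have l0: "l 0 \<in> L - {\<rho>}" "\<sigma> (l 0) = 0" using lo_in n_pos by auto
  have hinj: "inj_on (\<lambda>j. cp (l j)) FS"
  proof (rule inj_onI)
    fix j j' assume jj: "j \<in> FS" "j' \<in> FS" "cp (l j) = cp (l j')"
    have lj: "l j \<in> L - {\<rho>}" "\<sigma> (l j) = j" "l j' \<in> L - {\<rho>}" "\<sigma> (l j') = j'"
      using lo_in jj(1,2) unfolding FS_def by auto
    have "l j \<in> K (l j')" "l j' \<in> K (l j)" using cpF lj jj(3) unfolding K_def by (metis Diff_iff)+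
    moreover have "\<forall>y\<in>K (l j) - {\<rho>}. j \<le> \<sigma> y" "\<forall>y\<in>K (l j') - {\<rho>}. j' \<le> \<sigma> y"
      using jj(1,2) unfolding FS_def first_def by auto
    ultimately have "j' \<le> \<sigma> (l j)" "j \<le> \<sigma> (l j')" using lj by blast+
    then have "j' \<le> j" "j \<le> j'" using lj by simp_all
    then show "j = j'" by simp
  qed
  have himg: "(\<lambda>j. cp (l j)) ` FS \<subseteq> F - {cp (l 0)}"
  proof
    fix C assume "C \<in> (\<lambda>j. cp (l j)) ` FS"
    then obtain j where j: "j \<in> FS" "C = cp (l j)" by blast
    have lj: "l j \<in> L - {\<rho>}" using lo_in j(1) unfolding FS_def by auto
    have "C \<in> F" using cpF lj j(2) by blast
    moreover have "C \<noteq> cp (l 0)"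
    proof
      assume "C = cp (l 0)"
      then have "l 0 \<in> K (l j)" using cpF l0 j(2) unfolding K_def by (metis Diff_iff)
      moreover have "\<forall>y\<in>K (l j) - {\<rho>}. j \<le> \<sigma> y" using j(1) unfolding FS_def first_def by auto
      ultimately have "j \<le> \<sigma> (l 0)" using l0 by blast
      then have "j \<le> 0" using l0 by simp
      then show False using j(1) unfolding FS_def by simp
    qed
    ultimately show "C \<in> F - {cp (l 0)}" by blast
  qed
  have "card (M (n - 1)) \<le> card FS" using card_mono[OF finFS MFS] .
  also have "\<dots> = card ((\<lambda>j. cp (l j)) ` FS)" using card_image[OF hinj] by simp
  also have "\<dots> \<le> card (F - {cp (l 0)})" using card_mono[OF _ himg] finF by simp
  also have "\<dots> = card F - 1" using cpF l0 finF by simp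
  finally have "card (M (n - 1)) \<le> card F - 1" .
  moreover have "card F \<ge> 1" using cpF l0 finF card_0_eq[OF finF] by fastforce
  ultimately show ?thesis by simp
qed

end


lemma rank_mono:
  assumes "finite A" "x \<in> A" "y \<in> A" "(k :: 'a \<Rightarrow> nat) x < k y"
  shows "card {z\<in>A. k z < k x} < card {z\<in>A. k z < k y}"
proof (rule psubset_card_mono)
  show "finite {z\<in>A. k z < k y}" using assms(1) by simp
  show "{z\<in>A. k z < k x} \<subset> {z\<in>A. k z < k y}"
  proof
    show "{z\<in>A. k z < k x} \<subseteq> {z\<in>A. k z < k y}" using assms(4) by auto
    show "{z\<in>A. k z < k x} \<noteq> {z\<in>A. k z < k y}" using assms(2,4) by blast
  qed
qed

lemma rank_bij:
  assumes fin: "finite A" and inj: "inj_on (k :: 'a \<Rightarrow> nat) A"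
  shows "bij_betw (\<lambda>x. card {z\<in>A. k z < k x}) A {0..<card A}"
proof -
  let ?r = "\<lambda>x. card {z\<in>A. k z < k x}"
  have ri: "inj_on ?r A"
  proof (rule inj_onI)
    fix x y assume xy: "x \<in> A" "y \<in> A" "?r x = ?r y"
    show "x = y"
    proof (rule ccontr)
      assume "x \<noteq> y"
      then have "k x \<noteq> k y" using inj xy inj_onD by metis
      then have "k x < k y \<or> k y < k x" by linarith
      then show False using rank_mono[OF fin xy(1) xy(2), of k] rank_mono[OF fin xy(2) xy(1), of k] xy(3) by auto
    qed
  qed
  have rs: "?r ` A \<subseteq> {0..<card A}"
  proof
    fix r assume "r \<in> ?r ` A"
    then obtain x where x: "x \<in> A" "r = ?r x" by blast
    have "{z\<in>A. k z < k x} \<subset> A" using x(1) by blast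
    then have "?r x < card A" using psubset_card_mono fin by blast
    then show "r \<in> {0..<card A}" using x by simp
  qed
  have "card (?r ` A) = card {0..<card A}" using card_image[OF ri] by simp
  then have "?r ` A = {0..<card A}" using card_subset_eq[OF _ rs] by simp
  then show ?thesis using ri unfolding bij_betw_def by blast
qed

lemma dirB:
  assumes finL: "finite L" and rhoL: "\<rho> \<in> L" and trees: "\<forall>t\<in>Ts. is_tree \<rho> L t" and t0: "t0 \<in> Ts"
    and aaf: "acyclic_agreement_forest \<rho> L Ts F"
  shows "\<exists>\<sigma>. leaf_ordering \<rho> L \<sigma> \<and> corrected_ola_dist \<rho> L Ts \<sigma> + 1 \<le> card F"
proof -
  define G where "G = inheritance_graph \<rho> Ts F"
  have acG: "acyclic G" using aaf unfolding acyclic_agreement_forest_def G_def by blast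
  have finF: "finite F" using aaf unfolding acyclic_agreement_forest_def agreement_forest_def is_forest_def by blast
  have GF: "G \<subseteq> F \<times> F" unfolding G_def inheritance_graph_def by auto
  define f where "f C = card {D\<in>F. (D, C) \<in> G\<^sup>+}" for C
  have fmono: "f C < f C'" if e: "(C, C') \<in> G" for C C'
  proof -
    have CF: "C \<in> F" using e GF by blast
    show ?thesis unfolding f_def
    proof (rule psubset_card_mono)
      show "finite {D\<in>F. (D, C') \<in> G\<^sup>+}" using finF by simp
      show "{D\<in>F. (D, C) \<in> G\<^sup>+} \<subset> {D\<in>F. (D, C') \<in> G\<^sup>+}"
      proof
        show "{D\<in>F. (D, C) \<in> G\<^sup>+} \<subseteq> {D\<in>F. (D, C') \<in> G\<^sup>+}" using e trancl_into_trancl by fastforce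
        have "C \<in> {D\<in>F. (D, C') \<in> G\<^sup>+}" using e CF by auto
        moreover have "C \<notin> {D\<in>F. (D, C) \<in> G\<^sup>+}" using acG unfolding acyclic_def by blast
        ultimately show "{D\<in>F. (D, C) \<in> G\<^sup>+} \<noteq> {D\<in>F. (D, C') \<in> G\<^sup>+}" by blast
      qed
    qed
  qed
  define N where "N = card L"
  obtain g where g: "bij_betw g L {0..<N}" using ex_bij_betw_finite_nat[OF finL] unfolding N_def by blast
  have gl: "g x < N" if "x \<in> L" for x using g that bij_betwE by fastforce
  have gi: "inj_on g L" using g bij_betw_imp_inj_on by blast
  define key where "key x = f (compo \<rho> F x) * N + g x" for x
  have kinj: "inj_on key (L - {\<rho>})"
  proof (rule inj_onI)
    fix x y assume xy: "x \<in> L - {\<rho>}" "y \<in> L - {\<rho>}" "key x = key y"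
    have "key x mod N = g x" "key y mod N = g y" unfolding key_def using gl xy by auto
    then have "g x = g y" using xy(3) by simp
    then show "x = y" using gi xy inj_onD by (metis Diff_iff)
  qed
  have kmono: "key x < key y" if xy: "x \<in> L" "y \<in> L" "f (compo \<rho> F x) < f (compo \<rho> F y)" for x y
  proof -
    have "key x < (f (compo \<rho> F x) + 1) * N" unfolding key_def using gl[OF xy(1)] by simp
    also have "\<dots> \<le> f (compo \<rho> F y) * N" using xy(3) by (intro mult_right_mono) auto
    also have "\<dots> \<le> key y" unfolding key_def by simp
    finally show ?thesis .
  qed
  define \<sigma> where "\<sigma> x = card {z\<in>L - {\<rho>}. key z < key x}" for x
  have finL': "finite (L - {\<rho>})" using finL by simp
  have lord: "leaf_ordering \<rho> L \<sigma>"
    unfolding leaf_ordering_def \<sigma>_def using rank_bij[OF finL' kinj] .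
  have resp: "\<forall>x\<in>L - {\<rho>}. \<forall>y\<in>L - {\<rho>}. (compo \<rho> F x, compo \<rho> F y) \<in> inheritance_graph \<rho> Ts F \<longrightarrow> \<sigma> x < \<sigma> y"
  proof (intro ballI impI)
    fix x y assume xy: "x \<in> L - {\<rho>}" "y \<in> L - {\<rho>}" "(compo \<rho> F x, compo \<rho> F y) \<in> inheritance_graph \<rho> Ts F"
    have "key x < key y" using kmono fmono xy unfolding G_def by blast
    then show "\<sigma> x < \<sigma> y" unfolding \<sigma>_def using rank_mono[OF finL' xy(1,2)] by blast
  qed
  interpret S: settingA \<rho> L Ts \<sigma> t0
    by unfold_locales (use finL rhoL trees lord t0 in auto)
  have "card (S.M (S.n - 1)) + 1 \<le> card F" using S.dirB_core[OF aaf resp] .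
  moreover have "corrected_ola_dist \<rho> L Ts \<sigma> = card (S.M (S.n - 1))"
    unfolding corrected_ola_dist_def S.n_def by simp
  ultimately show ?thesis using lord by auto
qed


lemma mis_sub: "mismatch_upto \<rho> L Ts \<sigma> i \<subseteq> {1..i}"
proof (induction i)
  case 0 then show ?case by simp
next
  case (Suc i)
  have "mismatch_upto \<rho> L Ts \<sigma> (Suc i) \<subseteq> insert (Suc i) (mismatch_upto \<rho> L Ts \<sigma> i)"
    by (simp only: mismatch_upto.simps split: if_split) auto
  moreover have "insert (Suc i) (mismatch_upto \<rho> L Ts \<sigma> i) \<subseteq> {1..Suc i}" using Suc by auto
  ultimately show ?case by (rule order_trans)
qed

lemma cod_le: "corrected_ola_dist \<rho> L Ts \<sigma> \<le> card (L - {\<rho>})"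
proof -
  have "corrected_ola_dist \<rho> L Ts \<sigma> \<le> card {1..card (L - {\<rho>}) - 1}"
    unfolding corrected_ola_dist_def by (intro card_mono) (simp, rule mis_sub)
  then show ?thesis by simp
qed

lemma flabels_ne: "flabels \<rho> C \<noteq> {}"
proof (cases C)
  case (Unplanted c) then show ?thesis using cl_ne by simp
next
  case (Planted oc) then show ?thesis by (cases oc) auto
qed

lemma card_forest:
  assumes aaf: "acyclic_agreement_forest \<rho> L Ts F" and t: "t \<in> Ts" and finL: "finite L"
  shows "card F \<le> card L"
proof -
  have U: "(\<Union>C\<in>F. flabels \<rho> C) = L" using aaf t
    unfolding acyclic_agreement_forest_def agreement_forest_def agrees_with_def by blast
  have D: "\<forall>C\<in>F. \<forall>C'\<in>F. C \<noteq> C' \<longrightarrow> flabels \<rho> C \<inter> flabels \<rho> C' = {}" using aaf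
    unfolding acyclic_agreement_forest_def agreement_forest_def is_forest_def by blast
  define h where "h C = (SOME x. x \<in> flabels \<rho> C)" for C
  have hC: "h C \<in> flabels \<rho> C" for C
    unfolding h_def using flabels_ne[of \<rho> C] by (simp add: some_in_eq)
  have hi: "inj_on h F"
  proof (rule inj_onI)
    fix C C' assume CC: "C \<in> F" "C' \<in> F" "h C = h C'"
    show "C = C'"
    proof (rule ccontr)
      assume "C \<noteq> C'"
      then have "flabels \<rho> C \<inter> flabels \<rho> C' = {}" using D CC(1,2) by blast
      moreover have "h C \<in> flabels \<rho> C \<inter> flabels \<rho> C'" using hC[of C] hC[of C'] CC(3) by simp
      ultimately show False by blast
    qed
  qed
  have "h ` F \<subseteq> L" using hC U by blast
  then have "card (h ` F) \<le> card L" using card_mono finL by blast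
  then show ?thesis using card_image[OF hi] by simp
qed

theorem theorem1:
  fixes \<rho> :: 'a and L :: "'a set" and Ts :: "'a btree set"
  assumes "finite L" and "\<rho> \<in> L"
    and "finite Ts" and "card Ts > 1"
    and "\<forall>t\<in>Ts. is_tree \<rho> L t"
  shows "Min {corrected_ola_dist \<rho> L Ts \<sigma> | \<sigma>. leaf_ordering \<rho> L \<sigma>} = reticulation_number \<rho> L Ts"
proof -
  have "Ts \<noteq> {}" using assms(4) by auto
  then obtain t0 where t0: "t0 \<in> Ts" by blast
  define D where "D = {corrected_ola_dist \<rho> L Ts \<sigma> | \<sigma>. leaf_ordering \<rho> L \<sigma>}"
  define R where "R = {card F | F. acyclic_agreement_forest \<rho> L Ts F}"
  have dA: "\<exists>F. acyclic_agreement_forest \<rho> L Ts F \<and> card F = corrected_ola_dist \<rho> L Ts \<sigma> + 1"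
    if lo: "leaf_ordering \<rho> L \<sigma>" for \<sigma>
  proof -
    interpret S: settingA \<rho> L Ts \<sigma> t0
      by unfold_locales (use assms lo t0 in auto)
    show ?thesis using S.dirA unfolding corrected_ola_dist_def S.n_def by simp
  qed
  obtain \<sigma>0 where s0: "bij_betw \<sigma>0 (L - {\<rho>}) {0..<card (L - {\<rho>})}"
    using ex_bij_betw_finite_nat[of "L - {\<rho>}"] assms(1) by blast
  have lo0: "leaf_ordering \<rho> L \<sigma>0" unfolding leaf_ordering_def using s0 .
  have Dne: "D \<noteq> {}" unfolding D_def using lo0 by blast
  have Dfin: "finite D"
  proof -
    have "D \<subseteq> {..card (L - {\<rho>})}" unfolding D_def using cod_le by auto
    then show ?thesis using finite_subset by blast
  qed
  obtain F0 where F0: "acyclic_agreement_forest \<rho> L Ts F0" using dA[OF lo0] by blast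
  have Rne: "R \<noteq> {}" unfolding R_def using F0 by blast
  have Rfin: "finite R"
  proof -
    have "R \<subseteq> {..card L}" unfolding R_def using card_forest[OF _ t0 assms(1)] by auto
    then show ?thesis using finite_subset by blast
  qed
  have ge: "Min R - 1 \<le> Min D"
  proof -
    have "Min D \<in> D" using Min_in[OF Dfin Dne] .
    then obtain \<sigma> where s: "leaf_ordering \<rho> L \<sigma>" "Min D = corrected_ola_dist \<rho> L Ts \<sigma>" unfolding D_def by blast
    obtain F where F: "acyclic_agreement_forest \<rho> L Ts F" "card F = corrected_ola_dist \<rho> L Ts \<sigma> + 1"
      using dA[OF s(1)] by blast
    have "card F \<in> R" unfolding R_def using F(1) by blast
    then have "Min R \<le> card F" using Min_le[OF Rfin] by blast
    then show ?thesis using F(2) s(2) by simp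
  qed
  have le: "Min D \<le> Min R - 1"
  proof -
    have "Min R \<in> R" using Min_in[OF Rfin Rne] .
    then obtain F where F: "acyclic_agreement_forest \<rho> L Ts F" "Min R = card F" unfolding R_def by blast
    obtain \<sigma> where s: "leaf_ordering \<rho> L \<sigma>" "corrected_ola_dist \<rho> L Ts \<sigma> + 1 \<le> card F"
      using dirB[OF assms(1,2,5) t0 F(1)] by blast
    have "corrected_ola_dist \<rho> L Ts \<sigma> \<in> D" unfolding D_def using s(1) by blast
    then have "Min D \<le> corrected_ola_dist \<rho> L Ts \<sigma>" using Min_le[OF Dfin] by blast
    then show ?thesis using s(2) F(2) by simp
  qed
  have "Min D = Min R - 1" using ge le by simp
  then show ?thesis unfolding D_def R_def reticulation_number_def by simp
qed


end
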